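(* Let $\mathcal{A}$ be a non-negative self-adjoint operator on a Hilbert space $H$ with associated closed form $a$ and form domain $X$, and equip $X$ with the inner product $\langle u,v\rangle_X=\langle(\mathcal{A}^{1/2}+I)u,(\mathcal{A}^{1/2}+I)v\rangle_H$. Assume $\lambda\in\rho(\mathcal{A})$, $\mathcal{R}$ is a bounded linear functional on $(X,\langle\cdot,\cdot\rangle_X)$, and $u\in X$ solves $a(u,v)-\lambda\langle u,v\rangle_H=\mathcal{R}(v)$ for all $v\in X$. Then for some constant $C>0$ (independent of $\mathcal{A}$, $\lambda$, $\mathcal{R}$, $u$), $$\|u\|_X\le C\max\Big\{1,\frac{|\lambda+1|}{\operatorname{dist}(\lambda,\sigma(\mathcal{A}))}\Big\}\|\mathcal{R}\|_{X^*}.$$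
   Context: $\|\cdot\|_{X^*}$ denotes the dual norm with respect to $\langle\cdot,\cdot\rangle_X$; $(X,\langle\cdot,\cdot\rangle_X)$ is a Hilbert space. *)

theory Defs
  imports "HOL-Analysis.Analysis"
begin

section \<open>Complex Hilbert spaces (inner product linear in the SECOND argument)\<close>

class chilbert = ab_group_add +
  fixes cscale :: "complex \<Rightarrow> 'a \<Rightarrow> 'a"
    and hinner :: "'a \<Rightarrow> 'a \<Rightarrow> complex"
  assumes cscale_add_right: "cscale c (x + y) = cscale c x + cscale c y"
    and cscale_add_left: "cscale (c + d) x = cscale c x + cscale d x"
    and cscale_cscale: "cscale c (cscale d x) = cscale (c * d) x"
    and cscale_one: "cscale 1 x = x"
    and hinner_cnj: "hinner x y = cnj (hinner y x)"
    and hinner_add_right: "hinner x (y + z) = hinner x y + hinner x z"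
    and hinner_scale_right: "hinner x (cscale c y) = c * hinner x y"
    and hinner_nonneg: "0 \<le> Re (hinner x x)"
    and hinner_zero: "Re (hinner x x) = 0 \<Longrightarrow> x = 0"
    and hcomplete: "(\<forall>e::real>0. \<exists>N::nat. \<forall>m\<ge>N. \<forall>n\<ge>N. Re (hinner (f m - f n) (f m - f n)) < e)
        \<Longrightarrow> (\<exists>l. \<forall>e::real>0. \<exists>N. \<forall>n\<ge>N. Re (hinner (f n - l) (f n - l)) < e)"

definition hnorm :: "'a::chilbert \<Rightarrow> real" where
  "hnorm x = sqrt (Re (hinner x x))"

definition csubspace :: "'a::chilbert set \<Rightarrow> bool" where
  "csubspace S \<longleftrightarrow> 0 \<in> S \<and> (\<forall>x\<in>S. \<forall>y\<in>S. x + y \<in> S) \<and> (\<forall>c. \<forall>x\<in>S. cscale c x \<in> S)"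

definition dense_set :: "'a::chilbert set \<Rightarrow> bool" where
  "dense_set S \<longleftrightarrow> (\<forall>x. \<forall>e>0. \<exists>y\<in>S. hnorm (x - y) < e)"

section \<open>Unbounded operators, given as a domain D and a map T (values outside D irrelevant)\<close>

definition lin_op :: "'a::chilbert set \<Rightarrow> ('a \<Rightarrow> 'a) \<Rightarrow> bool" where
  "lin_op D T \<longleftrightarrow> csubspace D \<and> (\<forall>x\<in>D. \<forall>y\<in>D. T (x + y) = T x + T y)
     \<and> (\<forall>c. \<forall>x\<in>D. T (cscale c x) = cscale c (T x))"

definition adj_dom :: "'a::chilbert set \<Rightarrow> ('a \<Rightarrow> 'a) \<Rightarrow> 'a set" where
  "adj_dom D T = {y. \<exists>z. \<forall>x\<in>D. hinner (T x) y = hinner x z}"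

definition adj :: "'a::chilbert set \<Rightarrow> ('a \<Rightarrow> 'a) \<Rightarrow> 'a \<Rightarrow> 'a" where
  "adj D T y = (THE z. \<forall>x\<in>D. hinner (T x) y = hinner x z)"

definition self_adjoint :: "'a::chilbert set \<Rightarrow> ('a \<Rightarrow> 'a) \<Rightarrow> bool" where
  "self_adjoint D T \<longleftrightarrow> dense_set D \<and> lin_op D T \<and> adj_dom D T = D \<and> (\<forall>y\<in>D. adj D T y = T y)"

definition nonneg_op :: "'a::chilbert set \<Rightarrow> ('a \<Rightarrow> 'a) \<Rightarrow> bool" where
  "nonneg_op D T \<longleftrightarrow> (\<forall>x\<in>D. Im (hinner x (T x)) = 0 \<and> 0 \<le> Re (hinner x (T x)))"

definition resolvent_set :: "'a::chilbert set \<Rightarrow> ('a \<Rightarrow> 'a) \<Rightarrow> complex set" where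
  "resolvent_set D T = {lam. bij_betw (\<lambda>x. T x - cscale lam x) D UNIV
      \<and> (\<exists>K. \<forall>x\<in>D. hnorm x \<le> K * hnorm (T x - cscale lam x))}"

definition spectrum_op :: "'a::chilbert set \<Rightarrow> ('a \<Rightarrow> 'a) \<Rightarrow> complex set" where
  "spectrum_op D T = - resolvent_set D T"

definition op_sqrt :: "'a::chilbert set \<Rightarrow> ('a \<Rightarrow> 'a) \<Rightarrow> 'a set \<times> ('a \<Rightarrow> 'a)" where
  "op_sqrt D T = (THE (D', S). self_adjoint D' S \<and> nonneg_op D' S
      \<and> D = {x \<in> D'. S x \<in> D'} \<and> (\<forall>x\<in>D. S (S x) = T x) \<and> (\<forall>x. x \<notin> D' \<longrightarrow> S x = 0))"

definition Xnorm :: "'a::chilbert set \<Rightarrow> ('a \<Rightarrow> 'a) \<Rightarrow> 'a \<Rightarrow> real" where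
  "Xnorm D T u = hnorm (snd (op_sqrt D T) u + u)"

definition closed_form :: "'a::chilbert set \<Rightarrow> ('a \<Rightarrow> 'a \<Rightarrow> complex) \<Rightarrow> bool" where
  "closed_form X a \<longleftrightarrow> csubspace X \<and> dense_set X
    \<and> (\<forall>u\<in>X. \<forall>v\<in>X. \<forall>w\<in>X. a u (v + w) = a u v + a u w)
    \<and> (\<forall>c. \<forall>u\<in>X. \<forall>v\<in>X. a u (cscale c v) = c * a u v)
    \<and> (\<forall>u\<in>X. \<forall>v\<in>X. a v u = cnj (a u v))
    \<and> (\<forall>u\<in>X. 0 \<le> Re (a u u))
    \<and> (\<forall>f::nat \<Rightarrow> 'a. (\<forall>n. f n \<in> X) \<longrightarrow>
         (\<forall>e::real>0. \<exists>N::nat. \<forall>m\<ge>N. \<forall>n\<ge>N. Re (a (f m - f n) (f m - f n)) + Re (hinner (f m - f n) (f m - f n)) < e)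
         \<longrightarrow> (\<exists>l\<in>X. \<forall>e::real>0. \<exists>N::nat. \<forall>n\<ge>N. Re (a (f n - l) (f n - l)) + Re (hinner (f n - l) (f n - l)) < e))"

definition assoc_op :: "'a::chilbert set \<Rightarrow> ('a \<Rightarrow> 'a \<Rightarrow> complex) \<Rightarrow> 'a set \<Rightarrow> ('a \<Rightarrow> 'a) \<Rightarrow> bool" where
  "assoc_op X a D T \<longleftrightarrow> D = {u \<in> X. \<exists>f. \<forall>v\<in>X. a u v = hinner f v}
     \<and> (\<forall>u\<in>D. \<forall>v\<in>X. a u v = hinner (T u) v)"

definition bdd_lin_fun :: "'a::chilbert set \<Rightarrow> ('a \<Rightarrow> real) \<Rightarrow> ('a \<Rightarrow> complex) \<Rightarrow> bool" where
  "bdd_lin_fun X N R \<longleftrightarrow> (\<forall>u\<in>X. \<forall>v\<in>X. R (u + v) = R u + R v)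
     \<and> (\<forall>c. \<forall>u\<in>X. R (cscale c u) = c * R u)
     \<and> (\<exists>K. \<forall>u\<in>X. cmod (R u) \<le> K * N u)"

definition dual_norm :: "'a::chilbert set \<Rightarrow> ('a \<Rightarrow> real) \<Rightarrow> ('a \<Rightarrow> complex) \<Rightarrow> real" where
  "dual_norm X N R = Sup {cmod (R v) | v. v \<in> X \<and> N v \<le> 1}"

end

theory Submission
  imports Defs "HOL-Computational_Algebra.Formal_Power_Series"
begin


lemma cscale_zero_left[simp]: "cscale 0 x = 0"
proof -
  have "cscale (0+0) x = cscale 0 x + cscale 0 x" by (rule cscale_add_left)
  then show ?thesis by simp
qed

lemma cscale_zero_right[simp]: "cscale c 0 = 0"
proof -
  have "cscale c (0+0) = cscale c 0 + cscale c 0" by (rule cscale_add_right)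
  then show ?thesis by simp
qed

lemma cscale_minus_right: "cscale c (- x) = - cscale c x"
proof -
  have "cscale c (x + - x) = cscale c x + cscale c (-x)" by (rule cscale_add_right)
  then show ?thesis by (simp add: eq_neg_iff_add_eq_0 add.commute)
qed

lemma cscale_diff_right: "cscale c (x - y) = cscale c x - cscale c y"
  using cscale_add_right[of c x "-y"] by (simp add: cscale_minus_right)

lemma cscale_minus_left: "cscale (- c) x = - cscale c x"
proof -
  have "cscale (c + - c) x = cscale c x + cscale (-c) x" by (rule cscale_add_left)
  then show ?thesis by (simp add: eq_neg_iff_add_eq_0 add.commute)
qed

lemma cscale_diff_left: "cscale (c - d) x = cscale c x - cscale d x"
  using cscale_add_left[of c "-d" x] by (simp add: cscale_minus_left)

lemma cscale_minus_one: "cscale (-1) x = - x"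
  by (simp add: cscale_minus_left cscale_one)

lemma cscale_sum: "cscale c (sum f A) = sum (\<lambda>i. cscale c (f i)) A"
  by (induction A rule: infinite_finite_induct) (auto simp: cscale_add_right)

lemma cscale_sum_left: "cscale (sum f A) x = sum (\<lambda>i. cscale (f i) x) A"
  by (induction A rule: infinite_finite_induct) (auto simp: cscale_add_left)

lemma hinner_add_left: "hinner (x + y) z = hinner x z + hinner y z"
  by (metis hinner_cnj hinner_add_right complex_cnj_add)

lemma hinner_scale_left: "hinner (cscale c x) y = cnj c * hinner x y"
  by (metis hinner_cnj hinner_scale_right complex_cnj_mult)

lemma hinner_zero_right[simp]: "hinner x 0 = 0"
  using hinner_add_right[of x 0 0] by simp

lemma hinner_zero_left[simp]: "hinner 0 x = 0"
  using hinner_add_left[of 0 0 x] by simp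

lemma hinner_minus_right: "hinner x (- y) = - hinner x y"
proof -
  have "hinner x y + hinner x (- y) = 0" using hinner_add_right[of x y "-y"] by simp
  then show ?thesis by (simp add: add_eq_0_iff)
qed

lemma hinner_minus_left: "hinner (- x) y = - hinner x y"
proof -
  have "hinner x y + hinner (- x) y = 0" using hinner_add_left[of x "-x" y] by simp
  then show ?thesis by (simp add: add_eq_0_iff)
qed

lemma hinner_diff_right: "hinner x (y - z) = hinner x y - hinner x z"
  using hinner_add_right[of x y "-z"] by (simp add: hinner_minus_right)

lemma hinner_diff_left: "hinner (x - y) z = hinner x z - hinner y z"
  using hinner_add_left[of x "-y" z] by (simp add: hinner_minus_left)

lemma hinner_sum_right: "hinner x (sum f A) = sum (\<lambda>i. hinner x (f i)) A"
  by (induction A rule: infinite_finite_induct) (auto simp: hinner_add_right)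

lemma hinner_sum_left: "hinner (sum f A) x = sum (\<lambda>i. hinner (f i) x) A"
  by (induction A rule: infinite_finite_induct) (auto simp: hinner_add_left)

lemma hinner_self_Im: "Im (hinner x x) = 0"
proof -
  have "hinner x x = cnj (hinner x x)" by (rule hinner_cnj)
  then show ?thesis by (metis cnj.simps(2) neg_equal_zero)
qed

lemma hinner_self_eq: "hinner x x = complex_of_real (Re (hinner x x))"
  using hinner_self_Im by (simp add: complex_eq_iff)

lemma hinner_self_zero_iff: "hinner x x = 0 \<longleftrightarrow> x = 0"
  by (metis hinner_zero hinner_zero_right zero_complex.simps(1))

section \<open>Sesquilinear nonnegative forms on a subspace: Cauchy-Schwarz\<close>

locale sform =
  fixes X :: "'a::chilbert set" and b :: "'a \<Rightarrow> 'a \<Rightarrow> complex"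
  assumes sub: "csubspace X"
    and bsym: "\<And>u v. u \<in> X \<Longrightarrow> v \<in> X \<Longrightarrow> b v u = cnj (b u v)"
    and badd: "\<And>u v w. u \<in> X \<Longrightarrow> v \<in> X \<Longrightarrow> w \<in> X \<Longrightarrow> b u (v + w) = b u v + b u w"
    and bscale: "\<And>c u v. u \<in> X \<Longrightarrow> v \<in> X \<Longrightarrow> b u (cscale c v) = c * b u v"
    and bnonneg: "\<And>u. u \<in> X \<Longrightarrow> 0 \<le> Re (b u u)"
begin

lemma X0: "0 \<in> X" and Xadd: "x \<in> X \<Longrightarrow> y \<in> X \<Longrightarrow> x + y \<in> X"
  and Xscale: "x \<in> X \<Longrightarrow> cscale c x \<in> X"
  using sub unfolding csubspace_def by auto

lemma Xminus: "x \<in> X \<Longrightarrow> - x \<in> X"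
  using Xscale[of x "-1"] by (simp add: cscale_minus_one)

lemma Xdiff: "x \<in> X \<Longrightarrow> y \<in> X \<Longrightarrow> x - y \<in> X"
  using Xadd[of x "-y"] Xminus[of y] by simp

lemma badd_left: "u \<in> X \<Longrightarrow> v \<in> X \<Longrightarrow> w \<in> X \<Longrightarrow> b (u + v) w = b u w + b v w"
  using bsym badd Xadd by (metis complex_cnj_add)

lemma bscale_left: "u \<in> X \<Longrightarrow> v \<in> X \<Longrightarrow> b (cscale c u) v = cnj c * b u v"
  using bsym bscale Xscale by (metis complex_cnj_mult)

lemma bself_Im: "u \<in> X \<Longrightarrow> Im (b u u) = 0"
  using bsym[of u u] by (metis cnj.simps(2) neg_equal_zero)

lemma bself_real: "u \<in> X \<Longrightarrow> b u u = complex_of_real (Re (b u u))"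
  using bself_Im by (simp add: complex_eq_iff)

lemma bzero_right: "u \<in> X \<Longrightarrow> b u 0 = 0"
  using badd[of u 0 0] X0 by simp

lemma bminus_right: "u \<in> X \<Longrightarrow> v \<in> X \<Longrightarrow> b u (- v) = - b u v"
  using bscale[of u v "-1"] by (simp add: cscale_minus_one)

lemma bdiff_right: "u \<in> X \<Longrightarrow> v \<in> X \<Longrightarrow> w \<in> X \<Longrightarrow> b u (v - w) = b u v - b u w"
  using badd[of u v "-w"] bminus_right Xminus by simp

lemma bdiff_left: "u \<in> X \<Longrightarrow> v \<in> X \<Longrightarrow> w \<in> X \<Longrightarrow> b (u - v) w = b u w - b v w"
  using bsym bdiff_right Xdiff by (metis complex_cnj_diff)

lemma expand:
  assumes "x \<in> X" "y \<in> X"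
  shows "Re (b (x + cscale t y) (x + cscale t y)) = Re (b x x) + 2 * Re (t * b x y) + (cmod t)^2 * Re (b y y)"
proof -
  have yt: "cscale t y \<in> X" using assms Xscale by auto
  have "b (x + cscale t y) (x + cscale t y) = b x x + b x (cscale t y) + (b (cscale t y) x + b (cscale t y) (cscale t y))"
    using assms yt by (simp add: badd_left badd Xadd)
  also have "\<dots> = b x x + t * b x y + (cnj t * b y x + cnj t * (t * b y y))"
  proof -
    have "b (cscale t y) (cscale t y) = cnj t * b y (cscale t y)" using bscale_left assms yt by blast
    also have "\<dots> = cnj t * (t * b y y)" using bscale assms by simp
    finally show ?thesis using assms by (simp add: bscale bscale_left)
  qed
  also have "\<dots> = b x x + t * b x y + cnj (t * b x y) + (cnj t * t) * b y y"
    using assms bsym[of x y] by (simp add: algebra_simps)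
  finally have e: "b (x + cscale t y) (x + cscale t y) = b x x + t * b x y + cnj (t * b x y) + (cnj t * t) * b y y" .
  have "cnj t * t = complex_of_real ((cmod t)^2)"
    by (metis complex_norm_square mult.commute)
  then show ?thesis unfolding e using bself_real[OF assms(2)] by simp
qed

lemma cs: 
  assumes "x \<in> X" "y \<in> X"
  shows "(cmod (b x y))^2 \<le> Re (b x x) * Re (b y y)"
proof -
  define p where "p = cmod (b x y)"
  define B where "B = Re (b y y)"
  define A where "A = Re (b x x)"
  have q: "0 \<le> A - 2 * s * p^2 + s^2 * p^2 * B" for s :: real
  proof -
    define t where "t = - complex_of_real s * cnj (b x y)"
    have "0 \<le> Re (b (x + cscale t y) (x + cscale t y))" using bnonneg assms Xadd Xscale by auto
    also have "\<dots> = A + 2 * Re (t * b x y) + (cmod t)^2 * B" unfolding A_def B_def using expand assms by simp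
    also have "t * b x y = - complex_of_real (s * p^2)"
    proof -
      have "cnj (b x y) * b x y = complex_of_real (p^2)" using complex_norm_square[of "b x y"] by (simp add: p_def mult.commute)
      then show ?thesis unfolding t_def by (metis minus_mult_left mult.assoc of_real_mult)
    qed
    also have "cmod t = \<bar>s\<bar> * p" unfolding t_def p_def by (simp add: norm_mult)
    finally show ?thesis by (simp add: power_mult_distrib)
  qed
  have B0: "0 \<le> B" unfolding B_def using bnonneg assms by auto
  show ?thesis
  proof (cases "B = 0")
    case True
    have "p^2 = 0"
    proof (rule ccontr)
      assume "p^2 \<noteq> 0"
      then have pp: "p^2 > 0" by simp
      have "0 \<le> A - 2 * ((A+1) / p^2) * p^2" using q[of "(A+1)/p^2"] True by simp
      also have "\<dots> = A - 2 * (A + 1)" using pp by simp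
      finally have "A \<le> -2" by simp
      moreover have "0 \<le> A" unfolding A_def using bnonneg assms by auto
      ultimately show False by simp
    qed
    then show ?thesis using True unfolding p_def B_def by simp
  next
    case False
    then have Bp: "B > 0" using B0 by simp
    have "0 \<le> A - 2 * (1/B) * p^2 + (1/B)^2 * p^2 * B" by (rule q)
    also have "\<dots> = A - p^2 / B" using Bp by (simp add: power2_eq_square field_simps)
    finally have "p^2 / B \<le> A" by simp
    then have "p^2 \<le> A * B" using Bp by (simp add: divide_le_eq)
    then show ?thesis unfolding p_def A_def B_def by simp
  qed
qed

lemma cs_sqrt:
  assumes "x \<in> X" "y \<in> X"
  shows "cmod (b x y) \<le> sqrt (Re (b x x)) * sqrt (Re (b y y))"
proof -
  have "cmod (b x y) = sqrt ((cmod (b x y))^2)" by simp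
  also have "\<dots> \<le> sqrt (Re (b x x) * Re (b y y))" using cs[OF assms] real_sqrt_le_mono by blast
  also have "\<dots> = sqrt (Re (b x x)) * sqrt (Re (b y y))" by (simp add: real_sqrt_mult)
  finally show ?thesis .
qed

definition sn :: "'a \<Rightarrow> real" where "sn x = sqrt (Re (b x x))"

lemma sn_nonneg: "x \<in> X \<Longrightarrow> 0 \<le> sn x" unfolding sn_def using bnonneg by simp

lemma sn_sq: "x \<in> X \<Longrightarrow> (sn x)^2 = Re (b x x)"
  unfolding sn_def using bnonneg real_sqrt_pow2 by blast

lemma sn_triangle:
  assumes "x \<in> X" "y \<in> X"
  shows "sn (x + y) \<le> sn x + sn y"
proof -
  have "Re (b (x + y) (x + y)) = Re (b x x) + 2 * Re (b x y) + Re (b y y)"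
    using expand[OF assms, of 1] by (simp add: cscale_one)
  also have "\<dots> \<le> (sn x)^2 + 2 * (sn x * sn y) + (sn y)^2"
  proof -
    have "Re (b x y) \<le> cmod (b x y)" by (rule complex_Re_le_cmod)
    also have "\<dots> \<le> sn x * sn y" unfolding sn_def by (rule cs_sqrt[OF assms])
    finally show ?thesis using sn_sq assms by simp
  qed
  also have "\<dots> = (sn x + sn y)^2" by (simp add: power2_eq_square algebra_simps)
  finally have "(sn (x+y))^2 \<le> (sn x + sn y)^2" using sn_sq assms Xadd by simp
  then show ?thesis using sn_nonneg assms by (meson power2_le_imp_le add_nonneg_nonneg)
qed

lemma bminus_left: "u \<in> X \<Longrightarrow> v \<in> X \<Longrightarrow> b (- u) v = - b u v"
  using bscale_left[of u v "-1"] by (simp add: cscale_minus_one)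

lemma sn_minus: "x \<in> X \<Longrightarrow> sn (- x) = sn x"
  unfolding sn_def using bminus_left[of x "-x"] bminus_right[of x x] Xminus by simp

lemma sn_diff_tri: "x \<in> X \<Longrightarrow> y \<in> X \<Longrightarrow> \<bar>sn x - sn y\<bar> \<le> sn (x - y)"
proof -
  assume a: "x \<in> X" "y \<in> X"
  have "sn x \<le> sn (x - y) + sn y" using sn_triangle[of "x - y" y] a Xdiff by simp
  moreover have "sn y \<le> sn (y - x) + sn x" using sn_triangle[of "y - x" x] a Xdiff by simp
  moreover have "sn (y - x) = sn (x - y)" using sn_minus[of "x - y"] a Xdiff by simp
  ultimately show ?thesis by linarith
qed

end

lemma hinner_sform: "sform UNIV (hinner :: 'a::chilbert \<Rightarrow> _)"
proof
  show "csubspace (UNIV :: 'a set)" by (simp add: csubspace_def)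
qed (auto simp: hinner_add_right hinner_scale_right hinner_nonneg intro: hinner_cnj)

interpretation H: sform UNIV hinner by (rule hinner_sform)

lemma sn_hnorm: "H.sn = hnorm"
  by (auto simp: H.sn_def hnorm_def fun_eq_iff)

lemma hnorm_nonneg[simp]: "0 \<le> hnorm x" unfolding hnorm_def using hinner_nonneg real_sqrt_ge_zero by blast

lemma hnorm_sq: "(hnorm x)^2 = Re (hinner x x)"
  unfolding hnorm_def using hinner_nonneg real_sqrt_pow2 by blast

lemma hinner_self_hnorm: "hinner x x = complex_of_real ((hnorm x)^2)"
  by (metis hinner_self_eq hnorm_sq)

lemma hnorm_zero_iff[simp]: "hnorm x = 0 \<longleftrightarrow> x = 0"
  by (metis hinner_self_hnorm hinner_self_zero_iff of_real_eq_0_iff zero_less_power2 less_numeral_extra(3) hinner_zero_right)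

lemma hnorm_zero[simp]: "hnorm 0 = 0" by simp

lemma hnorm_pos: "x \<noteq> 0 \<Longrightarrow> 0 < hnorm x"
  using hnorm_nonneg hnorm_zero_iff by (metis less_eq_real_def)

lemma cauchy_schwarz: "cmod (hinner x y) \<le> hnorm x * hnorm y"
  using H.cs_sqrt[of x y] by (simp add: hnorm_def)

lemma hnorm_triangle: "hnorm (x + y) \<le> hnorm x + hnorm y"
  using H.sn_triangle[of x y] by (simp add: sn_hnorm)

lemma hnorm_minus: "hnorm (- x) = hnorm x"
  using H.sn_minus[of x] by (simp add: sn_hnorm)

lemma hnorm_commute: "hnorm (x - y) = hnorm (y - x)"
  by (metis hnorm_minus minus_diff_eq)

lemma hnorm_diff_tri: "\<bar>hnorm x - hnorm y\<bar> \<le> hnorm (x - y)"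
  using H.sn_diff_tri[of x y] by (simp add: sn_hnorm)

lemma hnorm_triangle_diff: "hnorm (x - z) \<le> hnorm (x - y) + hnorm (y - z)"
  using hnorm_triangle[of "x - y" "y - z"] by simp

lemma hnorm_scale: "hnorm (cscale c x) = cmod c * hnorm x"
proof -
  have "(hnorm (cscale c x))^2 = Re (c * (cnj c * hinner x x))"
    unfolding hnorm_sq by (simp only: hinner_scale_left hinner_scale_right)
  also have "c * (cnj c * hinner x x) = (c * cnj c) * hinner x x" by (rule mult.assoc[symmetric])
  also have "\<dots> = complex_of_real ((cmod c)^2) * complex_of_real ((hnorm x)^2)"
    by (simp only: complex_norm_square hinner_self_hnorm)
  also have "\<dots> = complex_of_real ((cmod c)^2 * (hnorm x)^2)" by (rule of_real_mult[symmetric])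
  also have "Re (complex_of_real ((cmod c)^2 * (hnorm x)^2)) = (cmod c * hnorm x)^2" by (simp add: power_mult_distrib)
  finally show ?thesis
    by (metis hnorm_nonneg norm_ge_zero power2_eq_imp_eq zero_le_mult_iff)
qed

lemma Re_hinner_self: "Re (hinner x x) = (hnorm x)^2" by (simp add: hnorm_sq)

lemma hnorm_sum: "hnorm (sum f A) \<le> sum (\<lambda>i. hnorm (f i)) A"
  by (induction A rule: infinite_finite_induct) (auto intro: order_trans[OF hnorm_triangle])


definition hlim :: "(nat \<Rightarrow> 'a::chilbert) \<Rightarrow> 'a \<Rightarrow> bool" where
  "hlim f l \<longleftrightarrow> (\<lambda>n. hnorm (f n - l)) \<longlonglongrightarrow> 0"

definition hcauchy :: "(nat \<Rightarrow> 'a::chilbert) \<Rightarrow> bool" where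
  "hcauchy f \<longleftrightarrow> (\<forall>e>0. \<exists>N. \<forall>m\<ge>N. \<forall>n\<ge>N. hnorm (f m - f n) < e)"

lemma hlimI: "(\<And>e. e > 0 \<Longrightarrow> \<exists>N. \<forall>n\<ge>N. hnorm (f n - l) < e) \<Longrightarrow> hlim f l"
  unfolding hlim_def by (rule LIMSEQ_I) simp

lemma hlimD: "hlim f l \<Longrightarrow> e > 0 \<Longrightarrow> \<exists>N. \<forall>n\<ge>N. hnorm (f n - l) < e"
  unfolding hlim_def using LIMSEQ_D by fastforce

lemma hlim_bound:
  assumes "\<And>n. hnorm (f n - l) \<le> g n" "g \<longlonglongrightarrow> 0"
  shows "hlim f l"
  unfolding hlim_def
  by (rule tendsto_sandwich[of "\<lambda>_. 0" _ _ g]) (use assms in auto)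

lemma hlim_norm_tendsto: "hlim f l \<longleftrightarrow> (\<lambda>n. hnorm (f n - l)) \<longlonglongrightarrow> 0" by (simp add: hlim_def)

lemma hlim_const: "hlim (\<lambda>n. x) x" by (simp add: hlim_def)

lemma hlim_add: "hlim f l \<Longrightarrow> hlim g m \<Longrightarrow> hlim (\<lambda>n. f n + g n) (l + m)"
proof -
  assume a: "hlim f l" "hlim g m"
  have "(\<lambda>n. hnorm (f n - l) + hnorm (g n - m)) \<longlonglongrightarrow> 0 + 0"
    using a unfolding hlim_def by (rule tendsto_add)
  moreover have "hnorm (f n + g n - (l + m)) \<le> hnorm (f n - l) + hnorm (g n - m)" for n
    using hnorm_triangle[of "f n - l" "g n - m"] by (simp add: algebra_simps)
  ultimately show ?thesis by (intro hlim_bound) auto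
qed

lemma hlim_scale: "hlim f l \<Longrightarrow> hlim (\<lambda>n. cscale c (f n)) (cscale c l)"
proof -
  assume a: "hlim f l"
  have "(\<lambda>n. cmod c * hnorm (f n - l)) \<longlonglongrightarrow> cmod c * 0"
    using a unfolding hlim_def by (intro tendsto_mult) auto
  moreover have "hnorm (cscale c (f n) - cscale c l) = cmod c * hnorm (f n - l)" for n
    by (simp add: cscale_diff_right[symmetric] hnorm_scale)
  ultimately show ?thesis unfolding hlim_def by simp
qed

lemma hlim_minus: "hlim f l \<Longrightarrow> hlim (\<lambda>n. - f n) (- l)"
  using hlim_scale[of f l "-1"] by (simp add: cscale_minus_one)

lemma hlim_diff: "hlim f l \<Longrightarrow> hlim g m \<Longrightarrow> hlim (\<lambda>n. f n - g n) (l - m)"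
  using hlim_add[of f l "\<lambda>n. - g n" "- m"] hlim_minus[of g m] by simp

lemma hlim_unique: "hlim f l \<Longrightarrow> hlim f m \<Longrightarrow> l = m"
proof -
  assume a: "hlim f l" "hlim f m"
  have "(\<lambda>n. hnorm (f n - l) + hnorm (f n - m)) \<longlonglongrightarrow> 0 + 0"
    using a unfolding hlim_def by (rule tendsto_add)
  moreover have "hnorm (l - m) \<le> hnorm (f n - l) + hnorm (f n - m)" for n
    using hnorm_triangle_diff[where x=l and y="f n" and z=m] hnorm_commute[of l "f n"] by simp
  ultimately have "hnorm (l - m) \<le> 0"
    by (intro tendsto_lowerbound[of "\<lambda>n. hnorm (f n - l) + hnorm (f n - m)"]) auto
  then show ?thesis using hnorm_nonneg[of "l - m"] by simp
qed

lemma hlim_norm: "hlim f l \<Longrightarrow> (\<lambda>n. hnorm (f n)) \<longlonglongrightarrow> hnorm l"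
proof -
  assume a: "hlim f l"
  have "(\<lambda>n. hnorm (f n) - hnorm l) \<longlonglongrightarrow> 0"
    using a unfolding hlim_def
    by (rule tendsto_0_le[where K=1]) (auto intro!: always_eventually simp: hnorm_diff_tri)
  then show ?thesis using Lim_null by blast
qed

lemma hlim_inner_left: "hlim f l \<Longrightarrow> (\<lambda>n. hinner (f n) y) \<longlonglongrightarrow> hinner l y"
proof -
  assume a: "hlim f l"
  have "(\<lambda>n. hinner (f n) y - hinner l y) \<longlonglongrightarrow> 0"
  proof (rule tendsto_0_le[where K="hnorm y + 1"])
    show "(\<lambda>n. hnorm (f n - l)) \<longlonglongrightarrow> 0" using a by (simp add: hlim_def)
    show "\<forall>\<^sub>F n in sequentially. norm (hinner (f n) y - hinner l y) \<le> norm (hnorm (f n - l)) * (hnorm y + 1)"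
    proof (intro always_eventually allI)
      fix n
      have "norm (hinner (f n) y - hinner l y) = cmod (hinner (f n - l) y)" by (simp add: hinner_diff_left)
      also have "\<dots> \<le> hnorm (f n - l) * hnorm y" by (rule cauchy_schwarz)
      also have "\<dots> \<le> norm (hnorm (f n - l)) * (hnorm y + 1)" by (simp add: mult_left_mono)
      finally show "norm (hinner (f n) y - hinner l y) \<le> norm (hnorm (f n - l)) * (hnorm y + 1)" .
    qed
  qed
  then show ?thesis using Lim_null by blast
qed

lemma hlim_inner_right: "hlim f l \<Longrightarrow> (\<lambda>n. hinner y (f n)) \<longlonglongrightarrow> hinner y l"
proof -
  assume "hlim f l"
  then have "(\<lambda>n. cnj (hinner (f n) y)) \<longlonglongrightarrow> cnj (hinner l y)" by (intro tendsto_cnj hlim_inner_left)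
  then show ?thesis by (metis (no_types, lifting) ext hinner_cnj)
qed

lemma hlim_inner:
  assumes "hlim f l" "hlim g m"
  shows "(\<lambda>n. hinner (f n) (g n)) \<longlonglongrightarrow> hinner l m"
proof -
  have "Bseq (\<lambda>n. hnorm (f n))" using hlim_norm[OF assms(1)] convergent_imp_Bseq convergentI by blast
  then obtain K where K0: "\<forall>n. norm (hnorm (f n)) \<le> K" by (elim BseqE) blast
  have K: "\<And>n. hnorm (f n) \<le> K" using K0 by simp
  have "(\<lambda>n. hinner (f n) (g n) - hinner (f n) m) \<longlonglongrightarrow> 0"
  proof (rule tendsto_0_le[where K="K + 1"])
    show "(\<lambda>n. hnorm (g n - m)) \<longlonglongrightarrow> 0" using assms(2) by (simp add: hlim_def)
    show "\<forall>\<^sub>F n in sequentially. norm (hinner (f n) (g n) - hinner (f n) m) \<le> norm (hnorm (g n - m)) * (K + 1)"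
    proof (intro always_eventually allI)
      fix n
      have "norm (hinner (f n) (g n) - hinner (f n) m) = cmod (hinner (f n) (g n - m))" by (simp add: hinner_diff_right)
      also have "\<dots> \<le> hnorm (f n) * hnorm (g n - m)" by (rule cauchy_schwarz)
      also have "\<dots> \<le> (K + 1) * hnorm (g n - m)" using K[of n] by (intro mult_right_mono) auto
      finally show "norm (hinner (f n) (g n) - hinner (f n) m) \<le> norm (hnorm (g n - m)) * (K + 1)" by (simp add: mult.commute)
    qed
  qed
  moreover have "(\<lambda>n. hinner (f n) m) \<longlonglongrightarrow> hinner l m" using assms(1) by (rule hlim_inner_left)
  ultimately have "(\<lambda>n. (hinner (f n) (g n) - hinner (f n) m) + hinner (f n) m) \<longlonglongrightarrow> 0 + hinner l m"
    by (rule tendsto_add)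
  then show ?thesis by simp
qed

lemma hcauchy_conv: "hcauchy f \<Longrightarrow> \<exists>l. hlim f l"
proof -
  assume c: "hcauchy f"
  have "\<forall>e::real>0. \<exists>N::nat. \<forall>m\<ge>N. \<forall>n\<ge>N. Re (hinner (f m - f n) (f m - f n)) < e"
  proof (intro allI impI)
    fix e :: real assume e: "e > 0"
    then obtain N where N: "\<forall>m\<ge>N. \<forall>n\<ge>N. hnorm (f m - f n) < sqrt e" using c e unfolding hcauchy_def by (meson real_sqrt_gt_zero)
    show "\<exists>N::nat. \<forall>m\<ge>N. \<forall>n\<ge>N. Re (hinner (f m - f n) (f m - f n)) < e"
    proof (intro exI allI impI)
      fix m n assume "m \<ge> N" "n \<ge> N"
      then have "hnorm (f m - f n) < sqrt e" using N by auto
      then have "(hnorm (f m - f n))^2 < (sqrt e)^2" by (intro power_strict_mono) auto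
      then show "Re (hinner (f m - f n) (f m - f n)) < e" using e by (simp add: hnorm_sq)
    qed
  qed
  then obtain l where l: "\<forall>e::real>0. \<exists>N. \<forall>n\<ge>N. Re (hinner (f n - l) (f n - l)) < e"
    using hcomplete by blast
  have "hlim f l"
  proof (rule hlimI)
    fix e :: real assume e: "e > 0"
    then obtain N where N: "\<forall>n\<ge>N. Re (hinner (f n - l) (f n - l)) < e^2" using l by (meson zero_less_power)
    show "\<exists>N. \<forall>n\<ge>N. hnorm (f n - l) < e"
    proof (intro exI allI impI)
      fix n assume "n \<ge> N"
      then have "(hnorm (f n - l))^2 < e^2" using N by (simp add: hnorm_sq)
      then show "hnorm (f n - l) < e" using e by (meson abs_le_square_iff abs_of_pos hnorm_nonneg less_le_not_le power2_less_imp_less)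
    qed
  qed
  then show ?thesis by blast
qed

lemma hlim_cauchy: "hlim f l \<Longrightarrow> hcauchy f"
  unfolding hcauchy_def
proof (intro allI impI)
  fix e :: real assume a: "hlim f l" "e > 0"
  then obtain N where N: "\<forall>n\<ge>N. hnorm (f n - l) < e/2" using hlimD[of f l "e/2"] by auto
  show "\<exists>N. \<forall>m\<ge>N. \<forall>n\<ge>N. hnorm (f m - f n) < e"
  proof (intro exI allI impI)
    fix m n assume "m \<ge> N" "n \<ge> N"
    then have "hnorm (f m - l) < e/2" "hnorm (f n - l) < e/2" using N by auto
    moreover have "hnorm (f m - f n) \<le> hnorm (f m - l) + hnorm (l - f n)" by (rule hnorm_triangle_diff)
    moreover have "hnorm (l - f n) = hnorm (f n - l)" by (rule hnorm_commute)
    ultimately show "hnorm (f m - f n) < e" by linarith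
  qed
qed

lemma dense_orth:
  assumes "dense_set D" "\<forall>x\<in>D. hinner x z = 0"
  shows "z = 0"
proof (rule ccontr)
  assume z: "z \<noteq> 0"
  then have p: "hnorm z > 0" by (rule hnorm_pos)
  obtain x where x: "x \<in> D" "hnorm (z - x) < hnorm z" using assms(1) p unfolding dense_set_def by blast
  have "(hnorm z)^2 = cmod (hinner z z)" unfolding hinner_self_hnorm norm_of_real by simp
  also have "hinner z z = hinner (z - x) z" using assms(2) x(1) by (simp add: hinner_diff_left)
  also have "cmod (hinner (z - x) z) \<le> hnorm (z - x) * hnorm z" by (rule cauchy_schwarz)
  also have "\<dots> < hnorm z * hnorm z" using x(2) p by simp
  finally show False by (simp add: power2_eq_square)
qed

lemma dense_eq:
  assumes "dense_set D" "\<forall>x\<in>D. hinner x z1 = hinner x z2"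
  shows "z1 = z2"
  using dense_orth[OF assms(1), of "z1 - z2"] assms(2) by (simp add: hinner_diff_right)

lemma dense_seq:
  assumes "dense_set D"
  shows "\<exists>f. (\<forall>n. f n \<in> D) \<and> hlim f y"
proof -
  have "\<forall>n. \<exists>x\<in>D. hnorm (y - x) < 1 / (Suc n)" using assms unfolding dense_set_def by auto
  then obtain f where f: "\<And>n. f n \<in> D" "\<And>n. hnorm (y - f n) < 1 / Suc n" by metis
  have "hlim f y"
  proof (rule hlim_bound[where g="\<lambda>n. 1 / Suc n"])
    show "hnorm (f n - y) \<le> 1 / Suc n" for n using f(2)[of n] hnorm_commute[of y "f n"] by simp
    show "(\<lambda>n. 1 / real (Suc n)) \<longlonglongrightarrow> 0" using LIMSEQ_inverse_real_of_nat by (simp add: inverse_eq_divide)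
  qed
  then show ?thesis using f(1) by blast
qed

definition blin :: "('a::chilbert \<Rightarrow> 'a) \<Rightarrow> bool" where
  "blin Y \<longleftrightarrow> (\<forall>x y. Y (x + y) = Y x + Y y) \<and> (\<forall>c x. Y (cscale c x) = cscale c (Y x))
     \<and> (\<exists>K. \<forall>x. hnorm (Y x) \<le> K * hnorm x)"

definition sadj :: "('a::chilbert \<Rightarrow> 'a) \<Rightarrow> bool" where
  "sadj Y \<longleftrightarrow> (\<forall>x y. hinner (Y x) y = hinner x (Y y))"

definition pos :: "('a::chilbert \<Rightarrow> 'a) \<Rightarrow> bool" where
  "pos Y \<longleftrightarrow> (\<forall>x. Im (hinner x (Y x)) = 0 \<and> 0 \<le> Re (hinner x (Y x)))"

lemma blin_add: "blin Y \<Longrightarrow> Y (x + y) = Y x + Y y" by (simp add: blin_def)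
lemma blin_scale: "blin Y \<Longrightarrow> Y (cscale c x) = cscale c (Y x)" by (simp add: blin_def)
lemma blin_zero: "blin Y \<Longrightarrow> Y 0 = 0" using blin_scale[of Y 0 0] by simp
lemma blin_minus: "blin Y \<Longrightarrow> Y (- x) = - Y x" using blin_scale[of Y "-1" x] by (simp add: cscale_minus_one)
lemma blin_diff: "blin Y \<Longrightarrow> Y (x - y) = Y x - Y y" using blin_add[of Y x "-y"] blin_minus by simp
lemma blin_sum: "blin Y \<Longrightarrow> Y (sum f A) = sum (\<lambda>i. Y (f i)) A"
  by (induction A rule: infinite_finite_induct) (auto simp: blin_zero blin_add)

lemma blin_bound: "blin Y \<Longrightarrow> \<exists>K>0. \<forall>x. hnorm (Y x) \<le> K * hnorm x"
proof -
  assume "blin Y"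
  then obtain K where K: "\<forall>x. hnorm (Y x) \<le> K * hnorm x" by (auto simp: blin_def)
  show ?thesis
  proof (intro exI[of _ "\<bar>K\<bar> + 1"] conjI allI)
    fix x show "hnorm (Y x) \<le> (\<bar>K\<bar> + 1) * hnorm x"
    proof -
      have "K * hnorm x \<le> (\<bar>K\<bar> + 1) * hnorm x" by (intro mult_right_mono) auto
      then show ?thesis using K[rule_format, of x] by linarith
    qed
  qed simp
qed

lemma blin_hlim: "blin Y \<Longrightarrow> hlim f l \<Longrightarrow> hlim (\<lambda>n. Y (f n)) (Y l)"
proof -
  assume b: "blin Y" and f: "hlim f l"
  obtain K where K: "K > 0" "\<forall>x. hnorm (Y x) \<le> K * hnorm x" using blin_bound[OF b] by auto
  show ?thesis
  proof (rule hlim_bound[where g="\<lambda>n. K * hnorm (f n - l)"])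
    show "hnorm (Y (f n) - Y l) \<le> K * hnorm (f n - l)" for n using K(2) blin_diff[OF b] by metis
    show "(\<lambda>n. K * hnorm (f n - l)) \<longlonglongrightarrow> 0" using f unfolding hlim_def by (metis mult_zero_right tendsto_mult_left)
  qed
qed

lemma blin_id: "blin (\<lambda>x. x)" unfolding blin_def by (auto intro!: exI[of _ 1])

lemma blin_comp: "blin Y \<Longrightarrow> blin Z \<Longrightarrow> blin (\<lambda>x. Y (Z x))"
proof -
  assume a: "blin Y" "blin Z"
  obtain K where K: "K > 0" "\<forall>x. hnorm (Y x) \<le> K * hnorm x" using blin_bound[OF a(1)] by auto
  obtain L where L: "L > 0" "\<forall>x. hnorm (Z x) \<le> L * hnorm x" using blin_bound[OF a(2)] by auto
  have "hnorm (Y (Z x)) \<le> (K * L) * hnorm x" for x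
  proof -
    have "K * hnorm (Z x) \<le> K * (L * hnorm x)" using L(2) K(1) by (intro mult_left_mono) auto
    then show ?thesis using K(2)[rule_format, of "Z x"] by (simp add: mult.assoc)
  qed
  then show ?thesis using a unfolding blin_def by auto
qed

lemma blin_plus: "blin Y \<Longrightarrow> blin Z \<Longrightarrow> blin (\<lambda>x. Y x + Z x)"
proof -
  assume a: "blin Y" "blin Z"
  obtain K where K: "K > 0" "\<forall>x. hnorm (Y x) \<le> K * hnorm x" using blin_bound[OF a(1)] by auto
  obtain L where L: "L > 0" "\<forall>x. hnorm (Z x) \<le> L * hnorm x" using blin_bound[OF a(2)] by auto
  have "hnorm (Y x + Z x) \<le> (K + L) * hnorm x" for x
    using K(2)[rule_format, of x] L(2)[rule_format, of x] hnorm_triangle[of "Y x" "Z x"] by (simp add: distrib_right)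
  then have "\<exists>K. \<forall>x. hnorm (Y x + Z x) \<le> K * hnorm x" by blast
  moreover have "\<forall>x y. Y (x + y) + Z (x + y) = (Y x + Z x) + (Y y + Z y)"
    using a by (simp add: blin_add algebra_simps)
  moreover have "\<forall>d x. Y (cscale d x) + Z (cscale d x) = cscale d (Y x + Z x)"
    using a by (simp add: blin_scale cscale_add_right)
  ultimately show ?thesis unfolding blin_def by blast
qed

lemma blin_cscale: "blin Y \<Longrightarrow> blin (\<lambda>x. cscale c (Y x))"
proof -
  assume a: "blin Y"
  obtain K where K: "K > 0" "\<forall>x. hnorm (Y x) \<le> K * hnorm x" using blin_bound[OF a(1)] by auto
  have "hnorm (cscale c (Y x)) \<le> (cmod c * K) * hnorm x" for x
    using K(2)[rule_format, of x] by (simp add: hnorm_scale mult.assoc mult_left_mono)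
  then have "\<exists>K. \<forall>x. hnorm (cscale c (Y x)) \<le> K * hnorm x" by blast
  moreover have "\<forall>x y. cscale c (Y (x + y)) = cscale c (Y x) + cscale c (Y y)"
    using a by (simp add: blin_add cscale_add_right)
  moreover have "\<forall>d x. cscale c (Y (cscale d x)) = cscale d (cscale c (Y x))"
    using a by (simp add: blin_scale cscale_cscale mult.commute)
  ultimately show ?thesis unfolding blin_def by blast
qed

lemma blin_minus_op: "blin Y \<Longrightarrow> blin (\<lambda>x. - Y x)"
  using blin_cscale[of Y "-1"] by (simp add: cscale_minus_one)

lemma blin_diff_op: "blin Y \<Longrightarrow> blin Z \<Longrightarrow> blin (\<lambda>x. Y x - Z x)"
  using blin_plus[of Y "\<lambda>x. - Z x"] blin_minus_op[of Z] by simp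

lemma blin_pow: "blin Y \<Longrightarrow> blin (Y ^^ n)"
proof (induction n)
  case 0
  show ?case unfolding funpow.simps(1) id_def by (rule blin_id)
next
  case (Suc n)
  have "(Y ^^ Suc n) = (\<lambda>x. Y ((Y ^^ n) x))" by (simp add: comp_def)
  then show ?case using blin_comp[OF Suc.prems Suc.IH[OF Suc.prems]] by simp
qed

lemma sadj_pow: "sadj Y \<Longrightarrow> sadj (Y ^^ n)"
proof (induction n)
  case 0 then show ?case by (simp add: sadj_def)
next
  case (Suc n)
  show ?case unfolding sadj_def
  proof (intro allI)
    fix x y
    have "hinner ((Y ^^ Suc n) x) y = hinner ((Y ^^ n) (Y x)) y" by (simp add: funpow_swap1)
    also have "\<dots> = hinner (Y x) ((Y ^^ n) y)" using Suc by (simp add: sadj_def)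
    also have "\<dots> = hinner x (Y ((Y ^^ n) y))" using Suc.prems by (simp add: sadj_def)
    finally show "hinner ((Y ^^ Suc n) x) y = hinner x ((Y ^^ Suc n) y)" by simp
  qed
qed

lemma sadj_self_real: "sadj Y \<Longrightarrow> Im (hinner x (Y x)) = 0"
  by (metis hinner_cnj sadj_def cnj.simps(2) neg_equal_zero)


section \<open>Parallelogram and projection\<close>

lemma hnorm_add_sq: "(hnorm (x + y))^2 = (hnorm x)^2 + 2 * Re (hinner x y) + (hnorm y)^2"
  using H.expand[of x y 1] by (simp add: cscale_one hnorm_sq)

lemma hnorm_diff_sq: "(hnorm (x - y))^2 = (hnorm x)^2 - 2 * Re (hinner x y) + (hnorm y)^2"
  using H.expand[of x y "-1"] by (simp add: cscale_minus_one hnorm_sq)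

lemma parallelogram: "(hnorm (x + y))^2 + (hnorm (x - y))^2 = 2 * (hnorm x)^2 + 2 * (hnorm y)^2"
  using hnorm_add_sq[of x y] hnorm_diff_sq[of x y] by simp

lemma cscale_two: "cscale 2 x = x + x"
  using cscale_add_left[of 1 1 x] by (simp add: cscale_one)

lemma csub0: "csubspace M \<Longrightarrow> 0 \<in> M" by (simp add: csubspace_def)
lemma csub_add: "csubspace M \<Longrightarrow> x \<in> M \<Longrightarrow> y \<in> M \<Longrightarrow> x + y \<in> M" by (simp add: csubspace_def)
lemma csub_scale: "csubspace M \<Longrightarrow> x \<in> M \<Longrightarrow> cscale c x \<in> M" by (simp add: csubspace_def)
lemma csub_minus: "csubspace M \<Longrightarrow> x \<in> M \<Longrightarrow> - x \<in> M"
  using csub_scale[of M x "-1"] by (simp add: cscale_minus_one)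
lemma csub_diff: "csubspace M \<Longrightarrow> x \<in> M \<Longrightarrow> y \<in> M \<Longrightarrow> x - y \<in> M"
proof -
  assume a: "csubspace M" "x \<in> M" "y \<in> M"
  then have "- y \<in> M" by (intro csub_minus)
  then show ?thesis using csub_add[OF a(1) a(2)] by (metis diff_conv_add_uminus)
qed

lemma orth_of_min:
  assumes M: "csubspace M" and l: "l \<in> M" and min: "\<And>m. m \<in> M \<Longrightarrow> hnorm (y - l) \<le> hnorm (y - m)"
    and m: "m \<in> M"
  shows "hinner m (y - l) = 0"
proof -
  define w where "w = y - l"
  define q where "q = cmod (hinner w m)"
  have key: "2 * s * q^2 \<le> s^2 * q^2 * (hnorm m)^2" if s: "s > 0" for s :: real
  proof -
    define t where "t = - complex_of_real s * cnj (hinner w m)"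
    have "l - cscale t m \<in> M" using M l m csub_diff csub_scale by blast
    then have "hnorm w \<le> hnorm (y - (l - cscale t m))" using min unfolding w_def by blast
    also have "y - (l - cscale t m) = w + cscale t m" unfolding w_def by simp
    finally have "(hnorm w)^2 \<le> (hnorm (w + cscale t m))^2" by (simp add: power_mono)
    also have "\<dots> = (hnorm w)^2 + 2 * Re (t * hinner w m) + (cmod t)^2 * (hnorm m)^2"
      using H.expand[of w m t] by (simp add: hnorm_sq)
    also have "t * hinner w m = - complex_of_real (s * q^2)"
    proof -
      have "cnj (hinner w m) * hinner w m = complex_of_real (q^2)" using complex_norm_square[of "hinner w m"] by (simp add: q_def mult.commute)
      then show ?thesis unfolding t_def by (metis minus_mult_left mult.assoc of_real_mult)
    qed
    also have "cmod t = s * q" unfolding t_def q_def using s by (simp add: norm_mult)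
    finally show ?thesis by (simp add: power_mult_distrib)
  qed
  have "q = 0"
  proof (rule ccontr)
    assume "q \<noteq> 0"
    then have qp: "q^2 > 0" by simp
    define s where "s = 1 / ((hnorm m)^2 + 1)"
    have hp: "(hnorm m)^2 + 1 > 0" using zero_le_power2[of "hnorm m"] by linarith
    have sp: "s > 0" unfolding s_def using hp by simp
    have "2 * s * q^2 \<le> s^2 * q^2 * (hnorm m)^2" using key[OF sp] .
    then have "2 * s \<le> s^2 * (hnorm m)^2" using qp by (simp add: mult.commute mult.left_commute)
    then have "2 \<le> s * (hnorm m)^2" using sp by (simp add: power2_eq_square mult.assoc)
    moreover have "s * (hnorm m)^2 < 1" unfolding s_def using hp by (simp add: divide_less_eq)
    ultimately show False by simp
  qed
  then have "hinner w m = 0" unfolding q_def by simp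
  then show ?thesis unfolding w_def by (metis hinner_cnj complex_cnj_zero)
qed

lemma projection:
  assumes M: "csubspace M"
    and cl: "\<And>f. (\<forall>n. f n \<in> M) \<Longrightarrow> hcauchy f \<Longrightarrow> \<exists>l\<in>M. hlim f l"
  shows "\<exists>l\<in>M. \<forall>m\<in>M. hinner m (y - l) = 0"
proof -
  define S where "S = (\<lambda>m. hnorm (y - m)) ` M"
  define d where "d = Inf S"
  have Sne: "S \<noteq> {}" unfolding S_def using csub0[OF M] by auto
  have Sbdd: "bdd_below S" unfolding S_def by (rule bdd_belowI[of _ 0]) auto
  have dle: "d \<le> hnorm (y - m)" if "m \<in> M" for m
    unfolding d_def S_def using that Sbdd[unfolded S_def] by (intro cInf_lower) auto
  have d0: "0 \<le> d" unfolding d_def using Sne by (intro cInf_greatest) (auto simp: S_def)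
  have "\<forall>n. \<exists>m\<in>M. hnorm (y - m) < d + 1 / Suc n"
  proof
    fix n
    have "Inf S < d + 1 / Suc n" unfolding d_def by simp
    then obtain s where "s \<in> S" "s < d + 1 / Suc n" using cInf_less_iff[OF Sne Sbdd] by blast
    then show "\<exists>m\<in>M. hnorm (y - m) < d + 1 / Suc n" unfolding S_def by auto
  qed
  then obtain g where g: "\<And>n. g n \<in> M" "\<And>n. hnorm (y - g n) < d + 1 / Suc n" by metis
  define C where "C = 4 * d + 2"
  have gb: "(hnorm (g n - g k))^2 \<le> C * (1 / Suc n + 1 / Suc k)" for n k
  proof -
    define a where "a = y - g n"
    define b where "b = y - g k"
    define mid where "mid = cscale (1/2) (g n + g k)"
    have midM: "mid \<in> M" unfolding mid_def using M g(1) csub_add csub_scale by blast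
    have "a + b = cscale 2 (y - mid)"
      unfolding a_def b_def mid_def
      by (simp add: cscale_diff_right cscale_cscale cscale_one cscale_two)
    then have "hnorm (a + b) = 2 * hnorm (y - mid)" by (simp add: hnorm_scale)
    then have ab: "2 * d \<le> hnorm (a + b)" using dle[OF midM] by simp
    have "a - b = g k - g n" unfolding a_def b_def by simp
    then have "hnorm (a - b) = hnorm (g n - g k)" by (simp add: hnorm_commute)
    then have "(hnorm (g n - g k))^2 = 2 * (hnorm a)^2 + 2 * (hnorm b)^2 - (hnorm (a + b))^2"
      using parallelogram[of a b] by simp
    also have "\<dots> \<le> 2 * (d + 1 / Suc n)^2 + 2 * (d + 1 / Suc k)^2 - (2 * d)^2"
    proof -
      have "(hnorm a)^2 \<le> (d + 1 / Suc n)^2" unfolding a_def using g(2)[of n] by (intro power_mono) auto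
      moreover have "(hnorm b)^2 \<le> (d + 1 / Suc k)^2" unfolding b_def using g(2)[of k] by (intro power_mono) auto
      moreover have "(2 * d)^2 \<le> (hnorm (a + b))^2" using ab d0 by (intro power_mono) auto
      ultimately show ?thesis by linarith
    qed
    also have "\<dots> = 4 * d * (1 / Suc n + 1 / Suc k) + 2 * ((1 / Suc n)^2 + (1 / Suc k)^2)"
      by (simp add: power2_eq_square algebra_simps)
    also have "\<dots> \<le> 4 * d * (1 / Suc n + 1 / Suc k) + 2 * (1 / Suc n + 1 / Suc k)"
    proof -
      have h: "x^2 \<le> x" if "0 \<le> x" "x \<le> 1" for x :: real
        using that by (simp add: power2_eq_square mult_left_le_one_le)
      have "(1 / real (Suc n))^2 \<le> 1 / Suc n" for n by (rule h) auto
      then show ?thesis by (smt (verit))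
    qed
    also have "\<dots> = C * (1 / Suc n + 1 / Suc k)" unfolding C_def by (simp add: algebra_simps)
    finally show ?thesis .
  qed
  have Cp: "C > 0" unfolding C_def using d0 by simp
  have "hcauchy g"
    unfolding hcauchy_def
  proof (intro allI impI)
    fix e :: real assume e: "e > 0"
    obtain N :: nat where N: "2 * C / e^2 < N" using reals_Archimedean2 by blast
    show "\<exists>N. \<forall>m\<ge>N. \<forall>n\<ge>N. hnorm (g m - g n) < e"
    proof (intro exI[of _ N] allI impI)
      fix m n :: nat assume mn: "m \<ge> N" "n \<ge> N"
      have Npos: "real N > 0" using N Cp e by (smt (verit) divide_pos_pos zero_less_power)
      have "1 / real (Suc m) \<le> 1 / N" using mn Npos by (intro divide_left_mono) auto
      moreover have "1 / real (Suc n) \<le> 1 / N" using mn Npos by (intro divide_left_mono) auto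
      ultimately have "C * (1 / Suc m + 1 / Suc n) \<le> C * (2 / N)" using Cp by (intro mult_left_mono) auto
      also have "\<dots> < e^2" using N Npos e Cp by (simp add: field_simps)
      finally have "(hnorm (g m - g n))^2 < e^2" using gb[of m n] by simp
      then show "hnorm (g m - g n) < e" using e by (meson abs_le_square_iff abs_of_pos hnorm_nonneg less_le_not_le power2_less_imp_less)
    qed
  qed
  then obtain l where l: "l \<in> M" "hlim g l" using cl g(1) by blast
  have "hnorm (y - l) \<le> d"
  proof -
    have "(\<lambda>n. hnorm (y - g n)) \<longlonglongrightarrow> hnorm (y - l)"
      using hlim_norm[OF hlim_diff[OF hlim_const l(2)]] .
    moreover have "(\<lambda>n. d + 1 / real (Suc n)) \<longlonglongrightarrow> d + 0"
    proof (intro tendsto_add tendsto_const)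
      show "(\<lambda>n. 1 / real (Suc n)) \<longlonglongrightarrow> 0" using LIMSEQ_inverse_real_of_nat by (simp add: inverse_eq_divide)
    qed
    ultimately show ?thesis using g(2) by (intro LIMSEQ_le) (auto intro: less_imp_le)
  qed
  then have min: "\<And>m. m \<in> M \<Longrightarrow> hnorm (y - l) \<le> hnorm (y - m)" using dle by (meson order.trans)
  show ?thesis using orth_of_min[OF M l(1) min] l(1) by blast
qed

lemma sa_dense: "self_adjoint D T \<Longrightarrow> dense_set D" by (simp add: self_adjoint_def)
lemma sa_sub: "self_adjoint D T \<Longrightarrow> csubspace D" by (simp add: self_adjoint_def lin_op_def)
lemma sa_add: "self_adjoint D T \<Longrightarrow> x \<in> D \<Longrightarrow> y \<in> D \<Longrightarrow> T (x + y) = T x + T y"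
  by (simp add: self_adjoint_def lin_op_def)
lemma sa_scale: "self_adjoint D T \<Longrightarrow> x \<in> D \<Longrightarrow> T (cscale c x) = cscale c (T x)"
  by (simp add: self_adjoint_def lin_op_def)
lemma sa_zero: "self_adjoint D T \<Longrightarrow> T 0 = 0"
proof -
  assume sa: "self_adjoint D T"
  have "T (cscale 0 0) = cscale 0 (T 0)" using sa_scale[OF sa csub0[OF sa_sub[OF sa]]] .
  then show ?thesis by simp
qed
lemma sa_minus: "self_adjoint D T \<Longrightarrow> x \<in> D \<Longrightarrow> T (- x) = - T x"
  using sa_scale[of D T x "-1"] by (simp add: cscale_minus_one)
lemma sa_diff: "self_adjoint D T \<Longrightarrow> x \<in> D \<Longrightarrow> y \<in> D \<Longrightarrow> T (x - y) = T x - T y"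
proof -
  assume a: "self_adjoint D T" "x \<in> D" "y \<in> D"
  have my: "- y \<in> D" using csub_minus[OF sa_sub[OF a(1)] a(3)] .
  have "T (x + - y) = T x + T (- y)" using sa_add[OF a(1) a(2) my] .
  then show ?thesis using sa_minus[OF a(1) a(3)] by simp
qed

lemma adj_unique:
  assumes "dense_set D" "\<forall>x\<in>D. hinner (T x) y = hinner x z"
  shows "adj D T y = z"
  unfolding adj_def
proof (rule the_equality)
  show "\<forall>x\<in>D. hinner (T x) y = hinner x z" by fact
  show "\<And>z'. \<forall>x\<in>D. hinner (T x) y = hinner x z' \<Longrightarrow> z' = z"
  proof -
    fix z' assume "\<forall>x\<in>D. hinner (T x) y = hinner x z'"
    then have "\<forall>x\<in>D. hinner x z' = hinner x z" using assms(2) by simp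
    then show "z' = z" using dense_eq[OF assms(1)] by blast
  qed
qed

lemma sa_adj:
  assumes sa: "self_adjoint D T" and h: "\<forall>x\<in>D. hinner (T x) y = hinner x z"
  shows "y \<in> D \<and> T y = z"
proof -
  have "y \<in> adj_dom D T" unfolding adj_dom_def using h by blast
  then have yD: "y \<in> D" using sa by (simp add: self_adjoint_def)
  have "adj D T y = z" using adj_unique[OF sa_dense[OF sa] h] .
  then show ?thesis using yD sa by (simp add: self_adjoint_def)
qed

lemma sa_sym:
  assumes sa: "self_adjoint D T" and x: "x \<in> D" and y: "y \<in> D"
  shows "hinner (T x) y = hinner x (T y)"
proof -
  have "y \<in> adj_dom D T" using sa y by (simp add: self_adjoint_def)
  then obtain z where z: "\<forall>x\<in>D. hinner (T x) y = hinner x z" unfolding adj_dom_def by blast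
  have "adj D T y = z" using adj_unique[OF sa_dense[OF sa] z] .
  then have "T y = z" using sa y by (simp add: self_adjoint_def)
  then show ?thesis using z x by simp
qed

lemma sa_self_real: "self_adjoint D T \<Longrightarrow> x \<in> D \<Longrightarrow> Im (hinner x (T x)) = 0"
  using sa_sym[of D T x x] hinner_cnj[of x "T x"] by (metis cnj.simps(2) neg_equal_zero)

lemma sa_closed:
  assumes sa: "self_adjoint D T" and f: "\<forall>n. f n \<in> D" "hlim f x" and Tf: "hlim (\<lambda>n. T (f n)) l"
  shows "x \<in> D \<and> T x = l"
proof (rule sa_adj[OF sa], intro ballI)
  fix v assume v: "v \<in> D"
  have a: "(\<lambda>n. hinner (T v) (f n)) \<longlonglongrightarrow> hinner (T v) x" using hlim_inner_right[OF f(2)] .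
  have b: "(\<lambda>n. hinner (T v) (f n)) = (\<lambda>n. hinner v (T (f n)))" using sa_sym[OF sa v] f(1) by auto
  have c: "(\<lambda>n. hinner v (T (f n))) \<longlonglongrightarrow> hinner v l" using hlim_inner_right[OF Tf] .
  have "(\<lambda>n. hinner v (T (f n))) \<longlonglongrightarrow> hinner (T v) x" using a unfolding b .
  then show "hinner (T v) x = hinner v l" using c by (rule LIMSEQ_unique)
qed

lemma sa_surj:
  assumes sa: "self_adjoint D T" and c: "c > 0"
    and bb: "\<And>z. z \<in> D \<Longrightarrow> c * hnorm z \<le> hnorm (T z - cscale lam z)"
    and inj: "\<And>z. z \<in> D \<Longrightarrow> T z - cscale (cnj lam) z = 0 \<Longrightarrow> z = 0"
  shows "\<exists>z\<in>D. T z - cscale lam z = y"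
proof -
  define M where "M = (\<lambda>z. T z - cscale lam z) ` D"
  have DS: "csubspace D" using sa_sub[OF sa] .
  have M0: "0 \<in> M"
  proof -
    have "T 0 - cscale lam 0 = 0" using sa_zero[OF sa] by simp
    then show ?thesis unfolding M_def using csub0[OF DS] by (rule image_eqI[OF sym])
  qed
  have Madd: "a + b \<in> M" if "a \<in> M" "b \<in> M" for a b
  proof -
    obtain x where x: "x \<in> D" "a = T x - cscale lam x" using \<open>a \<in> M\<close> unfolding M_def by (elim imageE) simp
    obtain y where y: "y \<in> D" "b = T y - cscale lam y" using \<open>b \<in> M\<close> unfolding M_def by (elim imageE) simp
    have e1: "T (x + y) = T x + T y" using sa_add[OF sa x(1) y(1)] .
    have e2: "cscale lam (x + y) = cscale lam x + cscale lam y" by (rule cscale_add_right)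
    have q: "a + b = T (x + y) - cscale lam (x + y)" unfolding e1 e2 x(2) y(2) by (simp add: algebra_simps)
    have "x + y \<in> D" using csub_add[OF DS x(1) y(1)] .
    then show ?thesis unfolding M_def by (rule image_eqI[where f="\<lambda>z. T z - cscale lam z", OF q])
  qed
  have Mscale: "cscale d a \<in> M" if "a \<in> M" for a d
  proof -
    obtain x where x: "x \<in> D" "a = T x - cscale lam x" using \<open>a \<in> M\<close> unfolding M_def by (elim imageE) simp
    have e1: "T (cscale d x) = cscale d (T x)" using sa_scale[OF sa x(1)] .
    have e2: "cscale lam (cscale d x) = cscale d (cscale lam x)" by (simp only: cscale_cscale mult.commute)
    have q: "cscale d a = T (cscale d x) - cscale lam (cscale d x)" unfolding e1 e2 x(2) by (rule cscale_diff_right)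
    have "cscale d x \<in> D" using csub_scale[OF DS x(1)] .
    then show ?thesis unfolding M_def by (rule image_eqI[where f="\<lambda>z. T z - cscale lam z", OF q])
  qed
  have M: "csubspace M" unfolding csubspace_def using M0 Madd Mscale by blast
  have cl: "\<exists>l\<in>M. hlim f l" if f: "\<forall>n. f n \<in> M" "hcauchy f" for f
  proof -
    have "\<forall>n. \<exists>z\<in>D. f n = T z - cscale lam z" using f(1) unfolding M_def by blast
    then obtain z where z: "\<And>n. z n \<in> D" "\<And>n. f n = T (z n) - cscale lam (z n)" by metis
    have zc: "hcauchy z" unfolding hcauchy_def
    proof (intro allI impI)
      fix e :: real assume e: "e > 0"
      have ce: "c * e > 0" using c e by simp
      obtain N where N: "\<forall>m\<ge>N. \<forall>n\<ge>N. hnorm (f m - f n) < c * e" using f(2) ce unfolding hcauchy_def by blast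
      show "\<exists>N. \<forall>m\<ge>N. \<forall>n\<ge>N. hnorm (z m - z n) < e"
      proof (intro exI[of _ N] allI impI)
        fix m n assume "m \<ge> N" "n \<ge> N"
        have "c * hnorm (z m - z n) \<le> hnorm (T (z m - z n) - cscale lam (z m - z n))"
          using bb csub_diff[OF DS z(1) z(1)] by blast
        also have "T (z m - z n) - cscale lam (z m - z n) = f m - f n"
        proof -
          have e: "T (z m - z n) = T (z m) - T (z n)" by (rule sa_diff[OF sa z(1) z(1)])
          show ?thesis unfolding e z(2) cscale_diff_right by (simp add: algebra_simps)
        qed
        finally have "c * hnorm (z m - z n) \<le> hnorm (f m - f n)" .
        also have "\<dots> < c * e" using N \<open>m \<ge> N\<close> \<open>n \<ge> N\<close> by blast
        finally show "hnorm (z m - z n) < e" using c by simp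
      qed
    qed
    obtain x where x: "hlim z x" using hcauchy_conv[OF zc] by blast
    obtain fl where fl: "hlim f fl" using hcauchy_conv[OF f(2)] by blast
    have "hlim (\<lambda>n. f n + cscale lam (z n)) (fl + cscale lam x)" by (intro hlim_add hlim_scale fl x)
    moreover have "(\<lambda>n. f n + cscale lam (z n)) = (\<lambda>n. T (z n))" using z(2) by auto
    ultimately have "hlim (\<lambda>n. T (z n)) (fl + cscale lam x)" by simp
    then have xx: "x \<in> D \<and> T x = fl + cscale lam x" using sa_closed[OF sa] z(1) x by blast
    then have "fl = T x - cscale lam x" by simp
    then have "fl \<in> M" unfolding M_def using xx by blast
    then show ?thesis using fl by blast
  qed
  obtain l where l: "l \<in> M" "\<forall>m\<in>M. hinner m (y - l) = 0" using projection[OF M cl] by blast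
  define w where "w = y - l"
  have "\<forall>x\<in>D. hinner (T x) w = hinner x (cscale (cnj lam) w)"
  proof
    fix x assume x: "x \<in> D"
    have "T x - cscale lam x \<in> M" unfolding M_def using x by blast
    then have "hinner (T x - cscale lam x) w = 0" using l(2) unfolding w_def by blast
    then show "hinner (T x) w = hinner x (cscale (cnj lam) w)"
      by (simp add: hinner_diff_left hinner_scale_left hinner_scale_right)
  qed
  then have "w \<in> D \<and> T w = cscale (cnj lam) w" using sa_adj[OF sa] by blast
  then have "w = 0" using inj by simp
  then have "y \<in> M" using l(1) unfolding w_def by simp
  then show ?thesis unfolding M_def by auto
qed


section \<open>Operator power series\<close>

definition contr :: "('a::chilbert \<Rightarrow> 'a) \<Rightarrow> bool" where
  "contr Z \<longleftrightarrow> blin Z \<and> (\<forall>x. hnorm (Z x) \<le> hnorm x)"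

definition psum :: "(nat \<Rightarrow> real) \<Rightarrow> ('a::chilbert \<Rightarrow> 'a) \<Rightarrow> nat \<Rightarrow> 'a \<Rightarrow> 'a" where
  "psum a Z N x = (\<Sum>k<N. cscale (complex_of_real (a k)) ((Z ^^ k) x))"

definition ser :: "(nat \<Rightarrow> real) \<Rightarrow> ('a::chilbert \<Rightarrow> 'a) \<Rightarrow> 'a \<Rightarrow> 'a" where
  "ser a Z x = (SOME l. hlim (\<lambda>N. psum a Z N x) l)"

lemma contr_pow: "contr Z \<Longrightarrow> hnorm ((Z ^^ k) x) \<le> hnorm x"
proof (induction k)
  case 0 then show ?case by simp
next
  case (Suc k)
  have "hnorm ((Z ^^ Suc k) x) = hnorm (Z ((Z ^^ k) x))" by simp
  also have "\<dots> \<le> hnorm ((Z ^^ k) x)" using Suc.prems by (simp add: contr_def)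
  also have "\<dots> \<le> hnorm x" using Suc by simp
  finally show ?case .
qed

lemma psum_diff:
  assumes "M \<le> N"
  shows "psum a Z N x - psum a Z M x = (\<Sum>k\<in>{M..<N}. cscale (complex_of_real (a k)) ((Z ^^ k) x))"
proof -
  have "{..<N} = {..<M} \<union> {M..<N}" using assms by auto
  moreover have "{..<M} \<inter> {M..<N} = {}" by auto
  ultimately have "psum a Z N x = psum a Z M x + (\<Sum>k\<in>{M..<N}. cscale (complex_of_real (a k)) ((Z ^^ k) x))"
    unfolding psum_def by (simp add: sum.union_disjoint)
  then show ?thesis by simp
qed

lemma sum_terms_bound:
  assumes "contr Z"
  shows "hnorm (\<Sum>k\<in>A. cscale (complex_of_real (a k)) ((Z ^^ k) x)) \<le> (\<Sum>k\<in>A. \<bar>a k\<bar>) * hnorm x"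
proof -
  have "hnorm (\<Sum>k\<in>A. cscale (complex_of_real (a k)) ((Z ^^ k) x)) \<le> (\<Sum>k\<in>A. hnorm (cscale (complex_of_real (a k)) ((Z ^^ k) x)))"
    by (rule hnorm_sum)
  also have "\<dots> \<le> (\<Sum>k\<in>A. \<bar>a k\<bar> * hnorm x)"
  proof (rule sum_mono)
    fix k
    have "hnorm (cscale (complex_of_real (a k)) ((Z ^^ k) x)) = \<bar>a k\<bar> * hnorm ((Z ^^ k) x)" by (simp add: hnorm_scale)
    also have "\<dots> \<le> \<bar>a k\<bar> * hnorm x" using contr_pow[OF assms] by (simp add: mult_left_mono)
    finally show "hnorm (cscale (complex_of_real (a k)) ((Z ^^ k) x)) \<le> \<bar>a k\<bar> * hnorm x" .
  qed
  also have "\<dots> = (\<Sum>k\<in>A. \<bar>a k\<bar>) * hnorm x" by (simp add: sum_distrib_right)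
  finally show ?thesis .
qed

lemma psum_cauchy:
  assumes s: "summable (\<lambda>k. \<bar>a k\<bar>)" and Z: "contr Z"
  shows "hcauchy (\<lambda>N. psum a Z N x)"
  unfolding hcauchy_def
proof (intro allI impI)
  fix e :: real assume e: "e > 0"
  define e' where "e' = e / (hnorm x + 1)"
  have e': "e' > 0" unfolding e'_def using e by (simp add: add_nonneg_pos)
  obtain N where N: "\<forall>m\<ge>N. \<forall>n. norm (\<Sum>k\<in>{m..<n}. \<bar>a k\<bar>) < e'"
    using s e' unfolding summable_Cauchy by blast
  have b: "hnorm (psum a Z n x - psum a Z m x) < e" if "N \<le> m" "m \<le> n" for m n
  proof -
    have "hnorm (psum a Z n x - psum a Z m x) \<le> (\<Sum>k\<in>{m..<n}. \<bar>a k\<bar>) * hnorm x"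
      unfolding psum_diff[OF that(2)] by (rule sum_terms_bound[OF Z])
    also have "\<dots> \<le> e' * hnorm x"
      using N that(1) by (intro mult_right_mono) (auto intro: less_imp_le)
    also have "\<dots> < e"
    proof -
      have "e' * hnorm x < e' * (hnorm x + 1)" using e' by simp
      also have "\<dots> = e" unfolding e'_def
      proof -
        have "hnorm x + 1 \<noteq> 0" using hnorm_nonneg[of x] by linarith
        then show "e / (hnorm x + 1) * (hnorm x + 1) = e" by simp
      qed
      finally show ?thesis .
    qed
    finally show ?thesis .
  qed
  show "\<exists>N. \<forall>m\<ge>N. \<forall>n\<ge>N. hnorm (psum a Z m x - psum a Z n x) < e"
  proof (intro exI[of _ N] allI impI)
    fix m n assume "m \<ge> N" "n \<ge> N"
    show "hnorm (psum a Z m x - psum a Z n x) < e"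
    proof (cases "n \<le> m")
      case True then show ?thesis using b \<open>n \<ge> N\<close> by blast
    next
      case False
      then have "hnorm (psum a Z n x - psum a Z m x) < e" using b[of m n] \<open>m \<ge> N\<close> by simp
      then show ?thesis by (simp add: hnorm_commute)
    qed
  qed
qed

lemma ser_lim:
  assumes "summable (\<lambda>k. \<bar>a k\<bar>)" "contr Z"
  shows "hlim (\<lambda>N. psum a Z N x) (ser a Z x)"
proof -
  obtain l where "hlim (\<lambda>N. psum a Z N x) l" using hcauchy_conv[OF psum_cauchy[OF assms]] by blast
  then show ?thesis unfolding ser_def by (rule someI)
qed

lemma ser_eq:
  assumes "summable (\<lambda>k. \<bar>a k\<bar>)" "contr Z" "hlim (\<lambda>N. psum a Z N x) l"
  shows "ser a Z x = l"
  using hlim_unique[OF ser_lim[OF assms(1,2)] assms(3)] .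

lemma psum_add: "blin Z \<Longrightarrow> psum a Z N (x + y) = psum a Z N x + psum a Z N y"
  unfolding psum_def by (simp add: blin_add[OF blin_pow] cscale_add_right sum.distrib)

lemma psum_scale: "blin Z \<Longrightarrow> psum a Z N (cscale c x) = cscale c (psum a Z N x)"
  unfolding psum_def by (simp add: blin_scale[OF blin_pow] cscale_cscale cscale_sum mult.commute)

lemma psum_comm:
  assumes K: "blin K" and Z: "blin Z" and c: "\<And>x. K (Z x) = Z (K x)"
  shows "K (psum a Z N x) = psum a Z N (K x)"
proof -
  have p: "K ((Z ^^ k) x) = (Z ^^ k) (K x)" for k x
    by (induction k) (simp_all add: c)
  show ?thesis unfolding psum_def by (simp add: blin_sum[OF K] blin_scale[OF K] p)
qed

lemma ser_blin:
  assumes s: "summable (\<lambda>k. \<bar>a k\<bar>)" and Z: "contr Z"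
  shows "blin (ser a Z)"
proof -
  have bZ: "blin Z" using Z by (simp add: contr_def)
  have add: "ser a Z (x + y) = ser a Z x + ser a Z y" for x y
  proof (rule ser_eq[OF s Z])
    show "hlim (\<lambda>N. psum a Z N (x + y)) (ser a Z x + ser a Z y)"
      unfolding psum_add[OF bZ] by (intro hlim_add ser_lim[OF s Z])
  qed
  have sc: "ser a Z (cscale c x) = cscale c (ser a Z x)" for c x
  proof (rule ser_eq[OF s Z])
    show "hlim (\<lambda>N. psum a Z N (cscale c x)) (cscale c (ser a Z x))"
      unfolding psum_scale[OF bZ] by (intro hlim_scale ser_lim[OF s Z])
  qed
  have bd: "hnorm (ser a Z x) \<le> suminf (\<lambda>k. \<bar>a k\<bar>) * hnorm x" for x
  proof -
    have "(\<lambda>N. hnorm (psum a Z N x)) \<longlonglongrightarrow> hnorm (ser a Z x)" using hlim_norm[OF ser_lim[OF s Z]] .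
    moreover have "hnorm (psum a Z N x) \<le> suminf (\<lambda>k. \<bar>a k\<bar>) * hnorm x" for N
    proof -
      have "hnorm (psum a Z N x) \<le> (\<Sum>k<N. \<bar>a k\<bar>) * hnorm x" unfolding psum_def by (rule sum_terms_bound[OF Z])
      also have "\<dots> \<le> suminf (\<lambda>k. \<bar>a k\<bar>) * hnorm x"
        using sum_le_suminf[OF s, of "{..<N}"] by (intro mult_right_mono) auto
      finally show ?thesis .
    qed
    ultimately show ?thesis by (intro LIMSEQ_le_const2) auto
  qed
  show ?thesis unfolding blin_def using add sc bd by blast
qed

lemma ser_comm:
  assumes s: "summable (\<lambda>k. \<bar>a k\<bar>)" and Z: "contr Z" and K: "blin K" and c: "\<And>x. K (Z x) = Z (K x)"
  shows "K (ser a Z x) = ser a Z (K x)"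
proof -
  have bZ: "blin Z" using Z by (simp add: contr_def)
  have "hlim (\<lambda>N. K (psum a Z N x)) (K (ser a Z x))" by (rule blin_hlim[OF K ser_lim[OF s Z]])
  then have "hlim (\<lambda>N. psum a Z N (K x)) (K (ser a Z x))" unfolding psum_comm[OF K bZ c] .
  then show ?thesis using ser_eq[OF s Z] by metis
qed

lemma psum_sadj:
  assumes Z: "sadj Z"
  shows "hinner (psum a Z N x) y = hinner x (psum a Z N y)"
proof -
  have "hinner (psum a Z N x) y = (\<Sum>k<N. complex_of_real (a k) * hinner ((Z ^^ k) x) y)"
    unfolding psum_def by (simp add: hinner_sum_left hinner_scale_left)
  also have "\<dots> = (\<Sum>k<N. complex_of_real (a k) * hinner x ((Z ^^ k) y))"
    using sadj_pow[OF Z] by (simp add: sadj_def)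
  also have "\<dots> = hinner x (psum a Z N y)"
    unfolding psum_def by (simp add: hinner_sum_right hinner_scale_right)
  finally show ?thesis .
qed

lemma ser_sadj:
  assumes s: "summable (\<lambda>k. \<bar>a k\<bar>)" and Z: "contr Z" "sadj Z"
  shows "sadj (ser a Z)"
  unfolding sadj_def
proof (intro allI)
  fix x y
  have "(\<lambda>N. hinner (psum a Z N x) y) \<longlonglongrightarrow> hinner (ser a Z x) y" by (rule hlim_inner_left[OF ser_lim[OF s Z(1)]])
  moreover have "(\<lambda>N. hinner x (psum a Z N y)) \<longlonglongrightarrow> hinner x (ser a Z y)" by (rule hlim_inner_right[OF ser_lim[OF s Z(1)]])
  ultimately show "hinner (ser a Z x) y = hinner x (ser a Z y)"
    unfolding psum_sadj[OF Z(2)] using LIMSEQ_unique by blast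
qed


section \<open>Coefficients of the square root series\<close>

definition sc :: "nat \<Rightarrow> real" where "sc n = (-1)^n * ((1/2::real) gchoose n)"

lemma sc_poch: "sc n = pochhammer (-1/2) n / fact n"
  unfolding sc_def gbinomial_pochhammer by (simp add: mult.assoc[symmetric] power_mult_distrib[symmetric])

lemma sc_0: "sc 0 = 1" by (simp add: sc_def)

lemma sc_nonpos: "n \<ge> 1 \<Longrightarrow> sc n \<le> 0"
proof -
  assume "n \<ge> 1"
  then obtain m where m: "n = Suc m" by (cases n) auto
  have "pochhammer (-1/2::real) (Suc m) = (-1/2) * pochhammer (1/2) m"
    by (simp add: pochhammer_rec)
  moreover have "pochhammer (1/2::real) m > 0" by (rule pochhammer_pos) simp
  ultimately have "pochhammer (-1/2::real) n \<le> 0" using m by simp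
  then show ?thesis unfolding sc_poch by (simp add: divide_nonpos_pos)
qed

lemma sc_partial_nonneg: "0 \<le> (\<Sum>k<N. sc k)"
proof (cases N)
  case 0 then show ?thesis by simp
next
  case (Suc n)
  have "(\<Sum>k<Suc n. sc k) = (\<Sum>k\<le>n. ((1/2::real) gchoose k) * (- 1) ^ k)"
    unfolding sc_def lessThan_Suc_atMost by (simp add: mult.commute)
  also have "\<dots> = (- 1) ^ n * ((1/2 - 1) gchoose n)" by (rule gbinomial_sum_lower_neg)
  also have "\<dots> = pochhammer (1/2) n / fact n"
    unfolding gbinomial_pochhammer by (simp add: mult.assoc[symmetric] power_mult_distrib[symmetric])
  also have "\<dots> \<ge> 0" by (intro divide_nonneg_pos pochhammer_nonneg) auto
  finally show ?thesis using Suc by simp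
qed

lemma sc_abs_sum: "(\<Sum>k<N. \<bar>sc k\<bar>) \<le> 2"
proof (cases N)
  case 0 then show ?thesis by simp
next
  case (Suc n)
  have "(\<Sum>k<Suc n. \<bar>sc k\<bar>) = \<bar>sc 0\<bar> + (\<Sum>k<n. \<bar>sc (Suc k)\<bar>)" by (rule sum.lessThan_Suc_shift)
  also have "(\<Sum>k<n. \<bar>sc (Suc k)\<bar>) = - (\<Sum>k<n. sc (Suc k))"
    using sc_nonpos by (simp add: sum_negf[symmetric])
  also have "(\<Sum>k<n. sc (Suc k)) = (\<Sum>k<Suc n. sc k) - sc 0" using sum.lessThan_Suc_shift[of sc n] by simp
  finally have "(\<Sum>k<Suc n. \<bar>sc k\<bar>) = 2 - (\<Sum>k<Suc n. sc k)" by (simp add: sc_0)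
  then show ?thesis using sc_partial_nonneg[of "Suc n"] Suc by simp
qed

lemma sc_summable: "summable (\<lambda>k. \<bar>sc k\<bar>)"
  by (rule summableI_nonneg_bounded[where x=2]) (auto simp: sc_abs_sum)

lemma sc_conv: "(\<Sum>i\<le>k. sc i * sc (k - i)) = (if k = 0 then 1 else if k = 1 then -1 else 0)"
proof -
  have "(\<Sum>i\<le>k. sc i * sc (k - i)) = (\<Sum>i\<le>k. (-1)^k * (((1/2::real) gchoose i) * ((1/2) gchoose (k - i))))"
  proof (rule sum.cong[OF refl])
    fix i assume "i \<in> {..k}"
    then have "(-1::real)^i * (-1)^(k - i) = (-1)^k" by (simp add: power_add[symmetric])
    then show "sc i * sc (k - i) = (-1)^k * (((1/2::real) gchoose i) * ((1/2) gchoose (k - i)))"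
      unfolding sc_def by (metis (no_types, lifting) mult.assoc mult.left_commute)
  qed
  also have "\<dots> = (-1)^k * (\<Sum>i=0..k. ((1/2::real) gchoose i) * ((1/2) gchoose (k - i)))"
    by (simp add: sum_distrib_left atLeast0AtMost)
  also have "(\<Sum>i=0..k. ((1/2::real) gchoose i) * ((1/2) gchoose (k - i))) = (1/2 + 1/2) gchoose k"
    by (rule gbinomial_Vandermonde)
  also have "((1/2 + 1/2 :: real) gchoose k) = of_nat (1 choose k)"
    using binomial_gbinomial[of 1 k, where 'a=real] by simp
  finally show ?thesis
    by (cases k; cases "k - 1") (auto simp: binomial_eq_0)
qed

lemma form_sform:
  assumes "blin Z" "sadj Z" "pos Z"
  shows "sform UNIV (\<lambda>u v. hinner u (Z v))"
proof
  show "csubspace (UNIV :: 'a set)" by (simp add: csubspace_def)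
  fix u v w :: 'a and c
  show "hinner v (Z u) = cnj (hinner u (Z v))" using assms(2) by (metis hinner_cnj sadj_def)
  show "hinner u (Z (v + w)) = hinner u (Z v) + hinner u (Z w)" using assms(1) by (simp add: blin_add hinner_add_right)
  show "hinner u (Z (cscale c v)) = c * hinner u (Z v)" using assms(1) by (simp add: blin_scale hinner_scale_right)
  show "0 \<le> Re (hinner u (Z u))" using assms(3) unfolding pos_def by blast
qed

lemma pos_cs:
  assumes "blin Z" "sadj Z" "pos Z"
  shows "(cmod (hinner u (Z v)))^2 \<le> Re (hinner u (Z u)) * Re (hinner v (Z v))"
  using sform.cs[OF form_sform[OF assms]] by simp

lemma pos_zero:
  assumes "blin Z" "sadj Z" "pos Z" "Re (hinner u (Z u)) = 0"
  shows "Z u = 0"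
proof -
  have "(cmod (hinner u (Z (Z u))))^2 \<le> 0" using pos_cs[OF assms(1-3), of u "Z u"] assms(4) by simp
  then have "hinner u (Z (Z u)) = 0" by simp
  then have "hinner (Z u) (Z u) = 0" using assms(2) by (simp add: sadj_def)
  then show ?thesis by (simp add: hinner_self_zero_iff)
qed

lemma contr_of_pos:
  assumes "blin Z" "sadj Z" "pos Z" "\<And>x. Re (hinner x (Z x)) \<le> (hnorm x)^2"
  shows "contr Z"
  unfolding contr_def
proof (intro conjI allI)
  show "blin Z" by fact
  fix x
  have "hinner x (Z (Z x)) = hinner (Z x) (Z x)" using assms(2) by (simp add: sadj_def)
  then have e1: "hinner x (Z (Z x)) = complex_of_real ((hnorm (Z x))^2)"
    by (simp only: hinner_self_hnorm)
  have cm: "cmod (hinner x (Z (Z x))) = (hnorm (Z x))^2" unfolding e1 norm_of_real by simp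
  have "((hnorm (Z x))^2)^2 \<le> Re (hinner x (Z x)) * Re (hinner (Z x) (Z (Z x)))"
    using pos_cs[OF assms(1-3), of x "Z x"] unfolding cm .
  also have "\<dots> \<le> (hnorm x)^2 * (hnorm (Z x))^2"
  proof (rule mult_mono)
    show "Re (hinner x (Z x)) \<le> (hnorm x)^2" by fact
    show "Re (hinner (Z x) (Z (Z x))) \<le> (hnorm (Z x))^2" by fact
    show "0 \<le> (hnorm x)^2" by simp
    show "0 \<le> Re (hinner (Z x) (Z (Z x)))" using assms(3) unfolding pos_def by blast
  qed
  finally have h: "(hnorm (Z x))^2 * (hnorm (Z x))^2 \<le> (hnorm x)^2 * (hnorm (Z x))^2"
    by (simp add: power2_eq_square)
  show "hnorm (Z x) \<le> hnorm x"
  proof (cases "hnorm (Z x) = 0")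
    case True then show ?thesis by simp
  next
    case False
    then have p: "(hnorm (Z x))^2 > 0" by simp
    have "(hnorm (Z x))^2 \<le> (hnorm x)^2" using mult_right_le_imp_le[OF h p] .
    then show ?thesis using power2_le_imp_le hnorm_nonneg by blast
  qed
qed


section \<open>Cauchy product for the square root series\<close>

definition FF :: "('a::chilbert \<Rightarrow> 'a) \<Rightarrow> 'a \<Rightarrow> nat \<Rightarrow> nat \<Rightarrow> 'a" where
  "FF Z x i j = cscale (complex_of_real (sc i * sc j)) ((Z ^^ (i + j)) x)"

lemma funpow_add_app: "(Z ^^ i) ((Z ^^ j) x) = (Z ^^ (i + j)) x"
  by (simp add: funpow_add)

lemma pp_expand:
  assumes Z: "blin Z"
  shows "psum sc Z N (psum sc Z M x) = (\<Sum>i<N. \<Sum>j<M. FF Z x i j)"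
proof -
  have "psum sc Z N (psum sc Z M x) = (\<Sum>i<N. cscale (complex_of_real (sc i)) ((Z ^^ i) (\<Sum>j<M. cscale (complex_of_real (sc j)) ((Z ^^ j) x))))"
    unfolding psum_def by simp
  also have "\<dots> = (\<Sum>i<N. \<Sum>j<M. FF Z x i j)"
  proof (rule sum.cong[OF refl])
    fix i
    have "(Z ^^ i) (\<Sum>j<M. cscale (complex_of_real (sc j)) ((Z ^^ j) x)) = (\<Sum>j<M. cscale (complex_of_real (sc j)) ((Z ^^ (i + j)) x))"
      by (simp add: blin_sum[OF blin_pow[OF Z]] blin_scale[OF blin_pow[OF Z]] funpow_add_app)
    then show "cscale (complex_of_real (sc i)) ((Z ^^ i) (\<Sum>j<M. cscale (complex_of_real (sc j)) ((Z ^^ j) x))) = (\<Sum>j<M. FF Z x i j)"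
      unfolding FF_def by (simp add: cscale_sum cscale_cscale)
  qed
  finally show ?thesis .
qed

lemma main_part:
  assumes N: "N \<ge> 2"
  shows "(\<Sum>i<N. \<Sum>j<N. if i + j < N then FF Z x i j else 0) = x - Z x"
proof -
  have "(\<Sum>i<N. \<Sum>j<N. if i + j < N then FF Z x i j else 0) = (\<Sum>i<N. \<Sum>j<N - i. FF Z x i j)"
  proof (rule sum.cong[OF refl])
    fix i assume "i \<in> {..<N}"
    have "(\<Sum>j\<in>{j \<in> {..<N}. i + j < N}. FF Z x i j) = (\<Sum>j<N. if i + j < N then FF Z x i j else 0)"
      by (rule sum.inter_filter) simp
    then have "(\<Sum>j<N. if i + j < N then FF Z x i j else 0) = (\<Sum>j\<in>{j \<in> {..<N}. i + j < N}. FF Z x i j)" by simp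
    also have "{j \<in> {..<N}. i + j < N} = {..<N - i}" by auto
    finally show "(\<Sum>j<N. if i + j < N then FF Z x i j else 0) = (\<Sum>j<N - i. FF Z x i j)" .
  qed
  also have "\<dots> = (\<Sum>(i,j)\<in>Sigma {..<N} (\<lambda>i. {..<N - i}). FF Z x i j)"
    by (rule sum.Sigma) auto
  also have "Sigma {..<N} (\<lambda>i. {..<N - i}) = {(i,j). i + j < N}" by auto
  also have "(\<Sum>(i,j)\<in>{(i,j). i + j < N}. FF Z x i j) = (\<Sum>k<N. \<Sum>i\<le>k. FF Z x i (k - i))"
    by (rule sum.triangle_reindex)
  also have "\<dots> = (\<Sum>k<N. cscale (complex_of_real (if k = 0 then 1 else if k = 1 then -1 else 0)) ((Z ^^ k) x))"
  proof (rule sum.cong[OF refl])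
    fix k
    have "(\<Sum>i\<le>k. FF Z x i (k - i)) = (\<Sum>i\<le>k. cscale (complex_of_real (sc i * sc (k - i))) ((Z ^^ k) x))"
      unfolding FF_def by (rule sum.cong) auto
    also have "\<dots> = cscale (\<Sum>i\<le>k. complex_of_real (sc i * sc (k - i))) ((Z ^^ k) x)"
      by (rule cscale_sum_left[symmetric])
    also have "(\<Sum>i\<le>k. complex_of_real (sc i * sc (k - i))) = complex_of_real (\<Sum>i\<le>k. sc i * sc (k - i))"
      by simp
    finally show "(\<Sum>i\<le>k. FF Z x i (k - i)) = cscale (complex_of_real (if k = 0 then 1 else if k = 1 then -1 else 0)) ((Z ^^ k) x)"
      unfolding sc_conv .
  qed
  also have "\<dots> = (\<Sum>k<2. cscale (complex_of_real (if k = 0 then 1 else if k = 1 then -1 else 0)) ((Z ^^ k) x))"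
    using N by (intro sum.mono_neutral_right) auto
  also have "\<dots> = x - Z x" by (simp add: numeral_2_eq_2 cscale_one cscale_minus_one)
  finally show ?thesis .
qed

lemma rem_bound:
  assumes Z: "contr Z"
  shows "hnorm (\<Sum>i<N. \<Sum>j<N. if N \<le> i + j then FF Z x i j else 0) \<le> 4 * (\<Sum>i\<in>{N div 2..<N}. \<bar>sc i\<bar>) * hnorm x"
proof -
  define h where "h = N div 2"
  define a where "a i = (if h \<le> i then \<bar>sc i\<bar> else 0)" for i
  have pt: "hnorm (if N \<le> i + j then FF Z x i j else 0) \<le> (a i * \<bar>sc j\<bar> + \<bar>sc i\<bar> * a j) * hnorm x" for i j
  proof (cases "N \<le> i + j")
    case True
    have "hnorm (FF Z x i j) = \<bar>sc i * sc j\<bar> * hnorm ((Z ^^ (i + j)) x)" by (simp only: FF_def hnorm_scale norm_of_real)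
    also have "\<dots> \<le> \<bar>sc i * sc j\<bar> * hnorm x" using contr_pow[OF Z] by (simp add: mult_left_mono)
    also have "\<bar>sc i * sc j\<bar> \<le> a i * \<bar>sc j\<bar> + \<bar>sc i\<bar> * a j"
    proof -
      have "h \<le> i \<or> h \<le> j" using True unfolding h_def by auto
      then show ?thesis unfolding a_def by (auto simp: abs_mult)
    qed
    then have "\<bar>sc i * sc j\<bar> * hnorm x \<le> (a i * \<bar>sc j\<bar> + \<bar>sc i\<bar> * a j) * hnorm x" by (simp add: mult_right_mono)
    finally show ?thesis using True by simp
  next
    case False
    have "0 \<le> a i" "0 \<le> a j" unfolding a_def by auto
    then show ?thesis using False by simp
  qed
  have "hnorm (\<Sum>i<N. \<Sum>j<N. if N \<le> i + j then FF Z x i j else 0) \<le> (\<Sum>i<N. \<Sum>j<N. hnorm (if N \<le> i + j then FF Z x i j else 0))"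
    by (rule order_trans[OF hnorm_sum sum_mono[OF hnorm_sum]])
  also have "\<dots> \<le> (\<Sum>i<N. \<Sum>j<N. (a i * \<bar>sc j\<bar> + \<bar>sc i\<bar> * a j) * hnorm x)"
    by (intro sum_mono pt)
  also have "\<dots> = (2 * ((\<Sum>i<N. a i) * (\<Sum>j<N. \<bar>sc j\<bar>))) * hnorm x"
  proof -
    have e1: "(\<Sum>i<N. \<Sum>j<N. (a i * \<bar>sc j\<bar> + \<bar>sc i\<bar> * a j) * hnorm x) = ((\<Sum>i<N. \<Sum>j<N. a i * \<bar>sc j\<bar>) + (\<Sum>i<N. \<Sum>j<N. \<bar>sc i\<bar> * a j)) * hnorm x"
      by (simp add: sum.distrib distrib_right sum_distrib_right)
    have e2: "(\<Sum>i<N. \<Sum>j<N. a i * \<bar>sc j\<bar>) = (\<Sum>i<N. a i) * (\<Sum>j<N. \<bar>sc j\<bar>)" by (rule sum_product[symmetric])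
    have e3: "(\<Sum>i<N. \<Sum>j<N. \<bar>sc i\<bar> * a j) = (\<Sum>i<N. \<bar>sc i\<bar>) * (\<Sum>j<N. a j)" by (rule sum_product[symmetric])
    show ?thesis unfolding e1 e2 e3 by simp
  qed
  also have "\<dots> \<le> (4 * (\<Sum>i<N. a i)) * hnorm x"
  proof -
    have "0 \<le> (\<Sum>i<N. a i)" unfolding a_def by (intro sum_nonneg) auto
    then have "(\<Sum>i<N. a i) * (\<Sum>j<N. \<bar>sc j\<bar>) \<le> (\<Sum>i<N. a i) * 2" using sc_abs_sum by (intro mult_left_mono) auto
    then show ?thesis by (intro mult_right_mono) auto
  qed
  also have "(\<Sum>i<N. a i) = (\<Sum>i\<in>{h..<N}. \<bar>sc i\<bar>)"
  proof -
    have "(\<Sum>i\<in>{i \<in> {..<N}. h \<le> i}. \<bar>sc i\<bar>) = (\<Sum>i<N. a i)" unfolding a_def by (rule sum.inter_filter) simp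
    then have "(\<Sum>i<N. a i) = (\<Sum>i\<in>{i \<in> {..<N}. h \<le> i}. \<bar>sc i\<bar>)" by simp
    also have "{i \<in> {..<N}. h \<le> i} = {h..<N}" by auto
    finally show ?thesis .
  qed
  finally show ?thesis unfolding h_def by simp
qed

lemma cauchy_prod:
  assumes Z: "contr Z"
  shows "hlim (\<lambda>N. psum sc Z N (psum sc Z N x)) (x - Z x)"
proof (rule hlimI)
  fix e :: real assume e: "e > 0"
  have bZ: "blin Z" using Z by (simp add: contr_def)
  define K where "K = 4 * (hnorm x + 1)"
  have "0 < hnorm x + 1" using hnorm_nonneg[of x] by linarith
  then have K: "K > 0" unfolding K_def by simp
  define e' where "e' = e / K"
  have e': "e' > 0" unfolding e'_def using e K by simp
  obtain M where M: "\<forall>m\<ge>M. \<forall>n. norm (\<Sum>k\<in>{m..<n}. \<bar>sc k\<bar>) < e'"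
    using sc_summable e' unfolding summable_Cauchy by blast
  show "\<exists>N. \<forall>n\<ge>N. hnorm (psum sc Z n (psum sc Z n x) - (x - Z x)) < e"
  proof (intro exI[of _ "2 * M + 2"] allI impI)
    fix n assume n: "n \<ge> 2 * M + 2"
    have split: "(\<Sum>i<n. \<Sum>j<n. FF Z x i j) = (\<Sum>i<n. \<Sum>j<n. if i + j < n then FF Z x i j else 0) + (\<Sum>i<n. \<Sum>j<n. if n \<le> i + j then FF Z x i j else 0)"
      unfolding sum.distrib[symmetric] by (intro sum.cong refl) auto
    have "psum sc Z n (psum sc Z n x) - (x - Z x) = (\<Sum>i<n. \<Sum>j<n. if n \<le> i + j then FF Z x i j else 0)"
      unfolding pp_expand[OF bZ] split main_part[of n Z x] using n main_part[of n Z x] by simp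
    then have "hnorm (psum sc Z n (psum sc Z n x) - (x - Z x)) \<le> 4 * (\<Sum>i\<in>{n div 2..<n}. \<bar>sc i\<bar>) * hnorm x"
      using rem_bound[OF Z] by simp
    also have "\<dots> \<le> 4 * e' * hnorm x"
    proof -
      have "n div 2 \<ge> M" using n by auto
      then have "norm (\<Sum>k\<in>{n div 2..<n}. \<bar>sc k\<bar>) < e'" using M by blast
      then have "(\<Sum>k\<in>{n div 2..<n}. \<bar>sc k\<bar>) \<le> e'" by simp
      then show ?thesis by (intro mult_right_mono) auto
    qed
    also have "\<dots> < e"
    proof -
      have "4 * e' * hnorm x < 4 * e' * (hnorm x + 1)" using e' by simp
      also have "\<dots> = e' * K" unfolding K_def by (simp add: algebra_simps)
      also have "\<dots> = e" unfolding e'_def using K by simp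
      finally show ?thesis .
    qed
    finally show "hnorm (psum sc Z n (psum sc Z n x) - (x - Z x)) < e" .
  qed
qed


section \<open>Square roots of bounded operators\<close>

definition bpos :: "('a::chilbert \<Rightarrow> 'a) \<Rightarrow> bool" where
  "bpos Y \<longleftrightarrow> blin Y \<and> sadj Y \<and> pos Y \<and> (\<forall>x. Re (hinner x (Y x)) \<le> (hnorm x)^2)"

definition sqop :: "('a::chilbert \<Rightarrow> 'a) \<Rightarrow> 'a \<Rightarrow> 'a" where
  "sqop Y = ser sc (\<lambda>x. x - Y x)"

lemma Re_le_norms: "Re (hinner x y) \<le> hnorm x * hnorm y"
  using complex_Re_le_cmod[of "hinner x y"] cauchy_schwarz[of x y] by linarith

lemma bpos_Z:
  assumes "bpos Y"
  shows "contr (\<lambda>x. x - Y x)" "sadj (\<lambda>x. x - Y x)"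
proof -
  have bY: "blin Y" and sY: "sadj Y" and pY: "pos Y" and lY: "\<And>x. Re (hinner x (Y x)) \<le> (hnorm x)^2"
    using assms by (auto simp: bpos_def)
  have bZ: "blin (\<lambda>x. x - Y x)" by (rule blin_diff_op[OF blin_id bY])
  show sZ: "sadj (\<lambda>x. x - Y x)" unfolding sadj_def
    using sY by (simp add: hinner_diff_left hinner_diff_right sadj_def)
  have pZ: "pos (\<lambda>x. x - Y x)" unfolding pos_def
  proof
    fix x
    have "Im (hinner x (x - Y x)) = Im (hinner x x) - Im (hinner x (Y x))" by (simp add: hinner_diff_right)
    also have "\<dots> = 0" using hinner_self_Im[of x] pY by (simp add: pos_def)
    finally have "Im (hinner x (x - Y x)) = 0" .
    moreover have "Re (hinner x (x - Y x)) = (hnorm x)^2 - Re (hinner x (Y x))" by (simp add: hinner_diff_right hnorm_sq)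
    ultimately show "Im (hinner x (x - Y x)) = 0 \<and> 0 \<le> Re (hinner x (x - Y x))" using lY[of x] by simp
  qed
  have "Re (hinner x (x - Y x)) \<le> (hnorm x)^2" for x
  proof -
    have "Re (hinner x (x - Y x)) = (hnorm x)^2 - Re (hinner x (Y x))" by (simp add: hinner_diff_right hnorm_sq)
    moreover have "0 \<le> Re (hinner x (Y x))" using pY by (simp add: pos_def)
    ultimately show ?thesis by simp
  qed
  then show "contr (\<lambda>x. x - Y x)" by (rule contr_of_pos[OF bZ sZ pZ])
qed

lemma sq_blin: "bpos Y \<Longrightarrow> blin (sqop Y)"
  unfolding sqop_def by (rule ser_blin[OF sc_summable bpos_Z(1)])

lemma sq_sadj: "bpos Y \<Longrightarrow> sadj (sqop Y)"
  unfolding sqop_def by (rule ser_sadj[OF sc_summable bpos_Z(1) bpos_Z(2)])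

lemma sq_pos:
  assumes Y: "bpos Y"
  shows "pos (sqop Y)"
  unfolding pos_def
proof
  fix x
  define Z where "Z = (\<lambda>x. x - Y x)"
  have Zc: "contr Z" "sadj Z" using bpos_Z[OF Y] unfolding Z_def by auto
  define s where "s N = hinner x (psum sc Z N x)" for N
  have lim: "s \<longlonglongrightarrow> hinner x (sqop Y x)"
    unfolding s_def sqop_def Z_def[symmetric] by (rule hlim_inner_right[OF ser_lim[OF sc_summable Zc(1)]])
  have s_eq: "s N = (\<Sum>k<N. complex_of_real (sc k) * hinner x ((Z ^^ k) x))" for N
    unfolding s_def psum_def by (simp add: hinner_sum_right hinner_scale_right)
  have ImZ: "Im (hinner x ((Z ^^ k) x)) = 0" for k using sadj_self_real[OF sadj_pow[OF Zc(2)]] .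
  have Im0: "Im (s N) = 0" for N unfolding s_eq Im_sum using ImZ by simp
  have Re0: "0 \<le> Re (s N)" for N
  proof -
    have "Re (s N) = (\<Sum>k<N. sc k * Re (hinner x ((Z ^^ k) x)))" unfolding s_eq Re_sum using ImZ by simp
    also have "\<dots> \<ge> (\<Sum>k<N. sc k * (hnorm x)^2)"
    proof (rule sum_mono)
      fix k
      show "sc k * (hnorm x)^2 \<le> sc k * Re (hinner x ((Z ^^ k) x))"
      proof (cases k)
        case 0 then show ?thesis by (simp add: hnorm_sq)
      next
        case (Suc m)
        have "Re (hinner x ((Z ^^ k) x)) \<le> hnorm x * hnorm ((Z ^^ k) x)" by (rule Re_le_norms)
        also have "\<dots> \<le> hnorm x * hnorm x" using contr_pow[OF Zc(1)] by (simp add: mult_left_mono)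
        finally have "Re (hinner x ((Z ^^ k) x)) \<le> (hnorm x)^2" by (simp add: power2_eq_square)
        moreover have "sc k \<le> 0" using sc_nonpos Suc by simp
        ultimately show ?thesis by (simp add: mult_left_mono_neg)
      qed
    qed
    finally have "(\<Sum>k<N. sc k) * (hnorm x)^2 \<le> Re (s N)" by (simp add: sum_distrib_right)
    moreover have "0 \<le> (\<Sum>k<N. sc k) * (hnorm x)^2" using sc_partial_nonneg by simp
    ultimately show ?thesis by linarith
  qed
  have "(\<lambda>N. Im (s N)) \<longlonglongrightarrow> Im (hinner x (sqop Y x))" by (rule tendsto_Im[OF lim])
  then have "Im (hinner x (sqop Y x)) = 0" using Im0 by (simp add: LIMSEQ_const_iff)
  moreover have "0 \<le> Re (hinner x (sqop Y x))"
    using tendsto_Re[OF lim] Re0 by (intro LIMSEQ_le_const) auto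
  ultimately show "Im (hinner x (sqop Y x)) = 0 \<and> 0 \<le> Re (hinner x (sqop Y x))" by simp
qed

lemma sq_sq:
  assumes Y: "bpos Y"
  shows "sqop Y (sqop Y x) = Y x"
proof -
  define Z where "Z = (\<lambda>x. x - Y x)"
  have Zc: "contr Z" using bpos_Z[OF Y] unfolding Z_def by auto
  have bZ: "blin Z" using Zc by (simp add: contr_def)
  define Q where "Q = sqop Y"
  have Qd: "Q = ser sc Z" unfolding Q_def sqop_def Z_def ..
  have h1: "hlim (\<lambda>N. psum sc Z N (psum sc Z N x)) (x - Z x)" by (rule cauchy_prod[OF Zc])
  have h2: "hlim (\<lambda>N. psum sc Z N (Q x)) (Q (Q x))" unfolding Qd by (rule ser_lim[OF sc_summable Zc])
  have h0: "hlim (\<lambda>N. psum sc Z N x) (Q x)" unfolding Qd by (rule ser_lim[OF sc_summable Zc])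
  have pd: "psum sc Z N u - psum sc Z N v = psum sc Z N (u - v)" for N u v
    using psum_add[OF bZ, of sc N v "u - v"] by simp
  have pb: "hnorm (psum sc Z N u) \<le> 2 * hnorm u" for N u
  proof -
    have "hnorm (psum sc Z N u) \<le> (\<Sum>k<N. \<bar>sc k\<bar>) * hnorm u" unfolding psum_def by (rule sum_terms_bound[OF Zc])
    also have "\<dots> \<le> 2 * hnorm u" using sc_abs_sum by (intro mult_right_mono) auto
    finally show ?thesis .
  qed
  have h3: "hlim (\<lambda>N. psum sc Z N (psum sc Z N x)) (Q (Q x))"
  proof (rule hlim_bound)
    show "hnorm (psum sc Z N (psum sc Z N x) - Q (Q x)) \<le> 2 * hnorm (psum sc Z N x - Q x) + hnorm (psum sc Z N (Q x) - Q (Q x))" for N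
    proof -
      have "hnorm (psum sc Z N (psum sc Z N x) - Q (Q x)) \<le> hnorm (psum sc Z N (psum sc Z N x) - psum sc Z N (Q x)) + hnorm (psum sc Z N (Q x) - Q (Q x))"
        by (rule hnorm_triangle_diff)
      moreover have "hnorm (psum sc Z N (psum sc Z N x) - psum sc Z N (Q x)) \<le> 2 * hnorm (psum sc Z N x - Q x)"
        unfolding pd by (rule pb)
      ultimately show ?thesis by linarith
    qed
    have "(\<lambda>N. 2 * hnorm (psum sc Z N x - Q x) + hnorm (psum sc Z N (Q x) - Q (Q x))) \<longlonglongrightarrow> 2 * 0 + 0"
      using h0 h2 unfolding hlim_def by (intro tendsto_add tendsto_mult tendsto_const)
    then show "(\<lambda>N. 2 * hnorm (psum sc Z N x - Q x) + hnorm (psum sc Z N (Q x) - Q (Q x))) \<longlonglongrightarrow> 0" by simp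
  qed
  have "Q (Q x) = x - Z x" using hlim_unique[OF h3 h1] .
  then show ?thesis unfolding Q_def Z_def by simp
qed

lemma sq_comm:
  assumes Y: "bpos Y" and K: "blin K" and c: "\<And>x. K (Y x) = Y (K x)"
  shows "K (sqop Y x) = sqop Y (K x)"
  unfolding sqop_def
proof (rule ser_comm[OF sc_summable bpos_Z(1)[OF Y] K])
  fix x show "K (x - Y x) = K x - Y (K x)" using c blin_diff[OF K] by simp
qed

lemma sq_unique:
  assumes Y: "bpos Y" and S: "blin S" "sadj S" "pos S" and SS: "\<And>x. S (S x) = Y x"
  shows "S x = sqop Y x"
proof -
  define R where "R = sqop Y"
  have bR: "blin R" "sadj R" "pos R" unfolding R_def using sq_blin[OF Y] sq_sadj[OF Y] sq_pos[OF Y] by auto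
  have RR: "R (R u) = Y u" for u unfolding R_def by (rule sq_sq[OF Y])
  have SY: "S (Y u) = Y (S u)" for u using SS by metis
  have SR: "S (R u) = R (S u)" for u unfolding R_def by (rule sq_comm[OF Y S(1) SY])
  define y where "y = S x - R x"
  have "S y + R y = 0"
    unfolding y_def blin_diff[OF S(1)] blin_diff[OF bR(1)] SS RR SR by simp
  then have "hinner y (S y) + hinner y (R y) = 0" by (metis hinner_add_right hinner_zero_right)
  then have "Re (hinner y (S y)) + Re (hinner y (R y)) = 0" by (metis plus_complex.simps(1) zero_complex.simps(1))
  moreover have "0 \<le> Re (hinner y (S y))" "0 \<le> Re (hinner y (R y))" using S(3) bR(3) by (auto simp: pos_def)
  ultimately have "Re (hinner y (S y)) = 0" "Re (hinner y (R y)) = 0" by linarith+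
  then have "S y = 0" "R y = 0" using pos_zero[OF S] pos_zero[OF bR] by auto
  then have "hinner x (S y) - hinner x (R y) = 0" by simp
  then have "hinner (S x) y - hinner (R x) y = 0" using S(2) bR(2) by (simp add: sadj_def)
  then have "hinner y y = 0" unfolding y_def by (simp add: hinner_diff_left)
  then have "y = 0" by (simp add: hinner_self_zero_iff)
  then show ?thesis unfolding y_def R_def by simp
qed

lemma sq_bpos:
  assumes Y: "bpos Y"
  shows "bpos (sqop Y)"
proof -
  have b: "blin (sqop Y)" "sadj (sqop Y)" "pos (sqop Y)" using sq_blin[OF Y] sq_sadj[OF Y] sq_pos[OF Y] by auto
  have "Re (hinner x (sqop Y x)) \<le> (hnorm x)^2" for x
  proof -
    have "(hnorm (sqop Y x))^2 = Re (hinner (sqop Y x) (sqop Y x))" by (rule hnorm_sq)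
    also have "\<dots> = Re (hinner x (Y x))" using b(2) sq_sq[OF Y] by (simp add: sadj_def)
    also have "\<dots> \<le> (hnorm x)^2" using Y by (simp add: bpos_def)
    finally have "hnorm (sqop Y x) \<le> hnorm x" using power2_le_imp_le hnorm_nonneg by blast
    then have "hnorm x * hnorm (sqop Y x) \<le> hnorm x * hnorm x" by (simp add: mult_left_mono)
    then show ?thesis using Re_le_norms[of x "sqop Y x"] by (simp add: power2_eq_square)
  qed
  then show ?thesis using b by (simp add: bpos_def)
qed


section \<open>Nonnegative self-adjoint operators: the resolvent at -1\<close>

lemma bpos_contr: "bpos Y \<Longrightarrow> hnorm (Y x) \<le> hnorm x"
  using contr_of_pos[of Y] unfolding bpos_def contr_def by blast

locale nsa =
  fixes D :: "'a::chilbert set" and T :: "'a \<Rightarrow> 'a"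
  assumes sa: "self_adjoint D T" and nn: "nonneg_op D T"
begin

lemma DS: "csubspace D" using sa_sub[OF sa] .

lemma nn_Im: "x \<in> D \<Longrightarrow> Im (hinner x (T x)) = 0" using nn by (simp add: nonneg_op_def)
lemma nn_Re: "x \<in> D \<Longrightarrow> 0 \<le> Re (hinner x (T x))" using nn by (simp add: nonneg_op_def)

lemma bb1: "z \<in> D \<Longrightarrow> hnorm z \<le> hnorm (T z + z)"
proof -
  assume z: "z \<in> D"
  have "(hnorm z)^2 \<le> Re (hinner z (T z)) + (hnorm z)^2" using nn_Re[OF z] by simp
  also have "\<dots> = Re (hinner z (T z + z))" by (simp add: hinner_add_right hnorm_sq)
  also have "\<dots> \<le> hnorm z * hnorm (T z + z)" by (rule Re_le_norms)
  finally have "hnorm z * hnorm z \<le> hnorm z * hnorm (T z + z)" by (simp add: power2_eq_square)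
  then show ?thesis
    by (cases "hnorm z = 0") (auto simp: mult_le_cancel_left_pos less_le)
qed

lemma ex1_B: "\<exists>!z. z \<in> D \<and> T z + z = y"
proof -
  have "\<exists>z\<in>D. T z - cscale (-1) z = y"
  proof (rule sa_surj[OF sa, of 1])
    fix z assume z: "z \<in> D"
    show "1 * hnorm z \<le> hnorm (T z - cscale (-1) z)" using bb1[OF z] by (simp add: cscale_minus_one)
  next
    fix z assume z: "z \<in> D" "T z - cscale (cnj (-1)) z = 0"
    then have "T z + z = 0" by (simp add: cscale_minus_one)
    then show "z = 0" using bb1[OF z(1)] hnorm_nonneg[of z] hnorm_zero_iff[of z] by simp
  qed simp
  then obtain z where z: "z \<in> D" "T z + z = y" by (auto simp: cscale_minus_one)
  moreover have "z' = z" if "z' \<in> D" "T z' + z' = y" for z'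
  proof -
    have "z' - z \<in> D" using csub_diff[OF DS that(1) z(1)] .
    moreover have "T (z' - z) + (z' - z) = 0"
    proof -
      have "T (z' - z) + (z' - z) = (T z' + z') - (T z + z)" unfolding sa_diff[OF sa that(1) z(1)] by (simp add: algebra_simps)
      then show ?thesis using that(2) z(2) by simp
    qed
    ultimately have "hnorm (z' - z) \<le> 0" using bb1[of "z' - z"] by simp
    then show ?thesis using hnorm_nonneg[of "z' - z"] hnorm_zero_iff[of "z' - z"] by simp
  qed
  ultimately show ?thesis by blast
qed

definition B :: "'a \<Rightarrow> 'a" where "B y = (THE z. z \<in> D \<and> T z + z = y)"

lemma B_D: "B y \<in> D" and B_eq: "T (B y) + B y = y"
  using theI'[OF ex1_B[of y]] unfolding B_def by auto

lemma B_inv: "z \<in> D \<Longrightarrow> B (T z + z) = z"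
  unfolding B_def by (rule the1_equality[OF ex1_B]) auto

lemma TB: "T (B y) = y - B y" using B_eq[of y] by (simp add: algebra_simps)

lemma B_blin: "blin B"
proof -
  have add: "B (x + y) = B x + B y" for x y
  proof -
    have "B x + B y \<in> D" using csub_add[OF DS B_D B_D] .
    moreover have "T (B x + B y) + (B x + B y) = x + y" using sa_add[OF sa B_D B_D] B_eq[of x] B_eq[of y] by (simp add: algebra_simps)
    ultimately show ?thesis using B_inv by metis
  qed
  have sc: "B (cscale c x) = cscale c (B x)" for c x
  proof -
    have "cscale c (B x) \<in> D" using csub_scale[OF DS B_D] .
    moreover have "T (cscale c (B x)) + cscale c (B x) = cscale c x" using sa_scale[OF sa B_D] B_eq[of x] by (simp add: cscale_add_right[symmetric])
    ultimately show ?thesis using B_inv by metis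
  qed
  have bd: "hnorm (B x) \<le> 1 * hnorm x" for x using bb1[OF B_D] B_eq by simp
  show ?thesis unfolding blin_def using add sc bd by blast
qed

lemma B_sadj: "sadj B"
  unfolding sadj_def
proof (intro allI)
  fix x y
  have "hinner (B x) y = hinner (B x) (T (B y) + B y)" using B_eq by simp
  also have "\<dots> = hinner (B x) (T (B y)) + hinner (B x) (B y)" by (rule hinner_add_right)
  also have "hinner (B x) (T (B y)) = hinner (T (B x)) (B y)" using sa_sym[OF sa B_D B_D] by simp
  also have "hinner (T (B x)) (B y) + hinner (B x) (B y) = hinner (T (B x) + B x) (B y)" by (simp add: hinner_add_left)
  also have "\<dots> = hinner x (B y)" using B_eq by simp
  finally show "hinner (B x) y = hinner x (B y)" .
qed

lemma B_form: "hinner x (B x) = cnj (hinner (B x) (T (B x))) + hinner (B x) (B x)"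
proof -
  have "hinner x (B x) = hinner (T (B x) + B x) (B x)" using B_eq by simp
  also have "\<dots> = hinner (T (B x)) (B x) + hinner (B x) (B x)" by (rule hinner_add_left)
  finally show ?thesis by (metis hinner_cnj)
qed

lemma B_bpos: "bpos B"
proof -
  have p: "Im (hinner x (B x)) = 0 \<and> 0 \<le> Re (hinner x (B x))" for x
    unfolding B_form using nn_Im[OF B_D] nn_Re[OF B_D] hinner_self_Im[of "B x"] hinner_nonneg[of "B x"] by simp
  have l: "Re (hinner x (B x)) \<le> (hnorm x)^2" for x
  proof -
    have "Re (hinner x (B x)) \<le> hnorm x * hnorm (B x)" by (rule Re_le_norms)
    also have "\<dots> \<le> hnorm x * hnorm x" using bb1[OF B_D] B_eq by (simp add: mult_left_mono)
    finally show ?thesis by (simp add: power2_eq_square)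
  qed
  show ?thesis unfolding bpos_def pos_def using B_blin B_sadj p l by blast
qed

lemma B_inj: "B y = 0 \<Longrightarrow> y = 0"
  using B_eq[of y] sa_zero[OF sa] by simp

lemma B_range: "x \<in> D \<Longrightarrow> B (T x + x) = x" using B_inv .

definition IB :: "'a \<Rightarrow> 'a" where "IB x = x - B x"

lemma IB_bpos: "bpos IB"
proof -
  have b: "blin IB" unfolding IB_def by (rule blin_diff_op[OF blin_id B_blin])
  have s: "sadj IB" unfolding IB_def sadj_def using B_sadj by (simp add: hinner_diff_left hinner_diff_right sadj_def)
  have pB: "Im (hinner x (B x)) = 0" "0 \<le> Re (hinner x (B x))" "Re (hinner x (B x)) \<le> (hnorm x)^2" for x
    using B_bpos by (auto simp: bpos_def pos_def)
  have "Im (hinner x (IB x)) = 0 \<and> 0 \<le> Re (hinner x (IB x))" for x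
    unfolding IB_def using pB[of x] hinner_self_Im[of x] by (simp add: hinner_diff_right hnorm_sq)
  moreover have "Re (hinner x (IB x)) \<le> (hnorm x)^2" for x
    unfolding IB_def using pB[of x] by (simp add: hinner_diff_right hnorm_sq)
  ultimately show ?thesis unfolding bpos_def pos_def using b s by blast
qed

definition C :: "'a \<Rightarrow> 'a" where "C = sqop B"
definition E :: "'a \<Rightarrow> 'a" where "E = sqop IB"
definition G :: "'a \<Rightarrow> 'a" where "G = sqop C"

lemma C_bpos: "bpos C" unfolding C_def by (rule sq_bpos[OF B_bpos])
lemma E_bpos: "bpos E" unfolding E_def by (rule sq_bpos[OF IB_bpos])
lemma G_bpos: "bpos G" unfolding G_def by (rule sq_bpos[OF C_bpos])

lemma C_blin: "blin C" and E_blin: "blin E" and G_blin: "blin G"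
  and C_sadj: "sadj C" and E_sadj: "sadj E" and G_sadj: "sadj G"
  using C_bpos E_bpos G_bpos by (auto simp: bpos_def)

lemma CC: "C (C x) = B x" unfolding C_def by (rule sq_sq[OF B_bpos])
lemma EE: "E (E x) = x - B x" unfolding E_def using sq_sq[OF IB_bpos] by (simp add: IB_def)
lemma GG: "G (G x) = C x" unfolding G_def by (rule sq_sq[OF C_bpos])

lemma EB: "E (B x) = B (E x)"
proof -
  have "B (IB x) = IB (B x)" for x unfolding IB_def by (simp add: blin_diff[OF B_blin])
  then show ?thesis unfolding E_def by (intro sq_comm[OF IB_bpos B_blin, symmetric]) auto
qed

lemma EC: "E (C x) = C (E x)"
  unfolding C_def by (rule sq_comm[OF B_bpos E_blin EB])

lemma EG: "E (G x) = G (E x)"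
  unfolding G_def by (rule sq_comm[OF C_bpos E_blin EC])

lemma C_inj: "C x = 0 \<Longrightarrow> x = 0"
proof -
  assume "C x = 0"
  then have "B x = 0" using CC[of x] blin_zero[OF C_blin] by metis
  then show ?thesis by (rule B_inj)
qed

lemma EC_pos: "Im (hinner x (E (C x))) = 0 \<and> 0 \<le> Re (hinner x (E (C x)))"
proof -
  have "hinner x (E (C x)) = hinner x (G (E (G x)))" using GG[of x] EG[of "G x"] by metis
  also have "\<dots> = hinner (G x) (E (G x))" using G_sadj by (simp add: sadj_def)
  finally show ?thesis using E_bpos by (simp add: bpos_def pos_def)
qed

lemma decomp: "x = C (C x) + E (E x)" using CC EE by simp

lemma C_contr: "hnorm (C x) \<le> hnorm x" using bpos_contr[OF C_bpos] .
lemma E_contr: "hnorm (E x) \<le> hnorm x" using bpos_contr[OF E_bpos] .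

end


lemma dense_UNIV: "dense_set UNIV"
  unfolding dense_set_def by (metis UNIV_I diff_self hnorm_zero)

context nsa begin

definition R :: "'a set" where "R = range C"
definition Cinv :: "'a \<Rightarrow> 'a" where "Cinv y = (THE w. C w = y)"
definition Sq :: "'a \<Rightarrow> 'a" where "Sq y = (if y \<in> R then E (Cinv y) else 0)"

lemma C_inj2: "C w1 = C w2 \<Longrightarrow> w1 = w2"
  using C_inj[of "w1 - w2"] blin_diff[OF C_blin, of w1 w2] by simp

lemma Cinv_C[simp]: "Cinv (C w) = w"
  unfolding Cinv_def using C_inj2 by blast

lemma Sq_C[simp]: "Sq (C w) = E w"
  unfolding Sq_def R_def by simp

lemma R_sub: "csubspace R"
  unfolding csubspace_def R_def
proof (intro conjI ballI allI)
  show "0 \<in> range C" using blin_zero[OF C_blin] by (metis rangeI)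
  fix x y assume "x \<in> range C" "y \<in> range C"
  then obtain w v where "x = C w" "y = C v" by auto
  then show "x + y \<in> range C" using blin_add[OF C_blin, of w v] by (metis rangeI)
next
  fix c x assume "x \<in> range C"
  then obtain w where "x = C w" by auto
  then show "cscale c x \<in> range C" using blin_scale[OF C_blin, of c w] by (metis rangeI)
qed

lemma D_form: "x \<in> D \<Longrightarrow> x = C (C (T x + x))"
  using CC B_inv by simp

lemma D_R: "D \<subseteq> R"
  unfolding R_def using D_form by (metis rangeI subsetI)

lemma R_dense: "dense_set R"
  using sa_dense[OF sa] D_R unfolding dense_set_def by blast

lemma RE: "y \<in> R \<Longrightarrow> (\<And>w. y = C w \<Longrightarrow> P) \<Longrightarrow> P"
  unfolding R_def by blast

lemma Sq_add: "x \<in> R \<Longrightarrow> y \<in> R \<Longrightarrow> Sq (x + y) = Sq x + Sq y"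
  by (elim RE) (metis Sq_C blin_add[OF C_blin] blin_add[OF E_blin])

lemma Sq_scale: "x \<in> R \<Longrightarrow> Sq (cscale c x) = cscale c (Sq x)"
  by (elim RE) (metis Sq_C blin_scale[OF C_blin] blin_scale[OF E_blin])

lemma Sq_sym: "x \<in> R \<Longrightarrow> y \<in> R \<Longrightarrow> hinner (Sq x) y = hinner x (Sq y)"
proof -
  assume "x \<in> R" "y \<in> R"
  then obtain w v where wv: "x = C w" "y = C v" unfolding R_def by auto
  have "hinner (E w) (C v) = hinner w (E (C v))" using E_sadj C_sadj by (simp add: sadj_def)
  also have "\<dots> = hinner w (C (E v))" by (simp add: EC)
  also have "\<dots> = hinner (C w) (E v)" using C_sadj by (simp add: sadj_def)
  finally show ?thesis using wv by simp
qed

lemma Sq_out: "x \<notin> R \<Longrightarrow> Sq x = 0" unfolding Sq_def by simp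

lemma Sq_lin: "lin_op R Sq"
  unfolding lin_op_def using R_sub Sq_add Sq_scale by blast

lemma Sq_adj: "adj_dom R Sq = R" and Sq_adj_eq: "\<forall>y\<in>R. adj R Sq y = Sq y"
proof -
  show "adj_dom R Sq = R"
  proof
    show "R \<subseteq> adj_dom R Sq" unfolding adj_dom_def using Sq_sym by blast
    show "adj_dom R Sq \<subseteq> R"
    proof
      fix y assume "y \<in> adj_dom R Sq"
      then obtain z where z: "\<forall>x\<in>R. hinner (Sq x) y = hinner x z" unfolding adj_dom_def by blast
      have "hinner w (E y) = hinner w (C z)" for w
      proof -
        have "hinner (Sq (C w)) y = hinner (C w) z" using z unfolding R_def by blast
        then show ?thesis using E_sadj C_sadj by (simp add: sadj_def)
      qed
      then have Ey: "E y = C z" using dense_eq[OF dense_UNIV] by blast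
      have "y = C (C y) + E (E y)" by (rule decomp)
      also have "\<dots> = C (C y) + C (E z)" using Ey EC by simp
      also have "\<dots> = C (C y + E z)" using blin_add[OF C_blin] by simp
      finally show "y \<in> R" unfolding R_def by (metis rangeI)
    qed
  qed
  show "\<forall>y\<in>R. adj R Sq y = Sq y"
    using adj_unique[OF R_dense] Sq_sym by metis
qed

lemma Sq_sa: "self_adjoint R Sq"
  unfolding self_adjoint_def using R_dense Sq_lin Sq_adj Sq_adj_eq by blast

lemma Sq_nn: "nonneg_op R Sq"
  unfolding nonneg_op_def
proof
  fix x assume "x \<in> R"
  then obtain w where w: "x = C w" unfolding R_def by auto
  have "hinner (C w) (E w) = hinner w (C (E w))" using C_sadj by (simp add: sadj_def)
  also have "\<dots> = hinner w (E (C w))" by (simp add: EC)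
  finally show "Im (hinner x (Sq x)) = 0 \<and> 0 \<le> Re (hinner x (Sq x))" using w EC_pos[of w] by simp
qed

lemma Sq_D: "D = {x \<in> R. Sq x \<in> R}"
proof
  show "D \<subseteq> {x \<in> R. Sq x \<in> R}"
  proof
    fix x assume x: "x \<in> D"
    define y where "y = T x + x"
    have "x = C (C y)" using D_form[OF x] unfolding y_def .
    then have "Sq x = C (E y)" by (simp add: EC)
    then show "x \<in> {x \<in> R. Sq x \<in> R}" using D_R x unfolding R_def by auto
  qed
  show "{x \<in> R. Sq x \<in> R} \<subseteq> D"
  proof
    fix x assume "x \<in> {x \<in> R. Sq x \<in> R}"
    then obtain w v where w: "x = C w" "E w = C v" unfolding R_def by auto
    have "w = C (C w) + E (E w)" by (rule decomp)
    also have "\<dots> = C (C w) + C (E v)" using w(2) EC by simp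
    also have "\<dots> = C (C w + E v)" using blin_add[OF C_blin] by simp
    finally have "x = B (C w + E v)" using w(1) CC by metis
    then show "x \<in> D" using B_D by simp
  qed
qed

lemma Sq_T: "x \<in> D \<Longrightarrow> Sq (Sq x) = T x"
proof -
  assume x: "x \<in> D"
  define y where "y = T x + x"
  have xy: "x = C (C y)" using D_form[OF x] unfolding y_def .
  then have "Sq x = C (E y)" by (simp add: EC)
  then have "Sq (Sq x) = E (E y)" by simp
  also have "\<dots> = y - B y" by (rule EE)
  also have "B y = x" using xy CC by simp
  finally show ?thesis unfolding y_def by simp
qed

definition SP :: "'a set \<Rightarrow> ('a \<Rightarrow> 'a) \<Rightarrow> bool" where
  "SP D' S \<longleftrightarrow> self_adjoint D' S \<and> nonneg_op D' S
      \<and> D = {x \<in> D'. S x \<in> D'} \<and> (\<forall>x\<in>D. S (S x) = T x) \<and> (\<forall>x. x \<notin> D' \<longrightarrow> S x = 0)"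

lemma SP_Sq: "SP R Sq"
  unfolding SP_def using Sq_sa Sq_nn Sq_D Sq_T Sq_out by blast

lemma SP_unique:
  assumes "SP D' S"
  shows "D' = R \<and> S = Sq"
proof -
  have sa': "self_adjoint D' S" and nn': "nonneg_op D' S" and DD: "D = {x \<in> D'. S x \<in> D'}"
    and SST: "\<And>x. x \<in> D \<Longrightarrow> S (S x) = T x" and out: "\<And>x. x \<notin> D' \<Longrightarrow> S x = 0"
    using assms unfolding SP_def by auto
  have DS': "csubspace D'" using sa_sub[OF sa'] .
  have DinD': "x \<in> D \<Longrightarrow> x \<in> D'" for x using DD by blast
  have SinD': "x \<in> D \<Longrightarrow> S x \<in> D'" for x using DD by blast
  have BD': "B y \<in> D'" for y using DinD'[OF B_D] .
  have SBD': "S (B y) \<in> D'" for y using SinD'[OF B_D] .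
  have comm: "B (S y) = S (B y)" if y: "y \<in> D'" for y
  proof -
    define x where "x = B y"
    have xD: "x \<in> D" unfolding x_def by (rule B_D)
    have Tx: "T x = y - x" unfolding x_def by (rule TB)
    have SSx: "S (S x) = y - x" using SST[OF xD] Tx by simp
    have SxD: "S x \<in> D"
    proof -
      have "S (S x) \<in> D'" unfolding SSx using csub_diff[OF DS' y DinD'[OF xD]] .
      then show ?thesis using DD SinD'[OF xD] by blast
    qed
    have "T (S x) = S (S (S x))" using SST[OF SxD] by simp
    also have "\<dots> = S (y - x)" using SSx by simp
    also have "\<dots> = S y - S x" using sa_diff[OF sa' y DinD'[OF xD]] .
    finally have "T (S x) + S x = S y" by simp
    then have "B (S y) = S x" using B_inv[OF SxD] by simp
    then show ?thesis unfolding x_def .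
  qed
  define W where "W x = S (B x)" for x
  have TBx: "T (B x) = x - B x" for x by (rule TB)
  have W_lin: "W (x + y) = W x + W y" "W (cscale c x) = cscale c (W x)" for x y c
    unfolding W_def using blin_add[OF B_blin] blin_scale[OF B_blin] sa_add[OF sa' BD' BD'] sa_scale[OF sa' BD'] by auto
  have W_sq: "(hnorm (W x))^2 = Re (hinner (B x) (x - B x))" for x
  proof -
    have "(hnorm (W x))^2 = Re (hinner (S (B x)) (S (B x)))" unfolding W_def by (rule hnorm_sq)
    also have "hinner (S (B x)) (S (B x)) = hinner (B x) (S (S (B x)))" using sa_sym[OF sa' BD' SBD'] .
    also have "S (S (B x)) = x - B x" using SST[OF B_D] TBx by simp
    finally show ?thesis .
  qed
  have W_bd: "hnorm (W x) \<le> 2 * hnorm x" for x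
  proof -
    have "Re (hinner (B x) (x - B x)) \<le> hnorm (B x) * hnorm (x - B x)" by (rule Re_le_norms)
    also have "\<dots> \<le> hnorm x * (2 * hnorm x)"
    proof (rule mult_mono)
      show "hnorm (B x) \<le> hnorm x" using bpos_contr[OF B_bpos] .
      have "hnorm (x - B x) \<le> hnorm x + hnorm (B x)" using hnorm_triangle[of x "- B x"] hnorm_minus[of "B x"] by simp
      then show "hnorm (x - B x) \<le> 2 * hnorm x" using bpos_contr[OF B_bpos, of x] by simp
    qed auto
    also have "\<dots> \<le> (2 * hnorm x)^2" by (simp add: power2_eq_square)
    finally have "(hnorm (W x))^2 \<le> (2 * hnorm x)^2" unfolding W_sq .
    then show "hnorm (W x) \<le> 2 * hnorm x" by (rule power2_le_imp_le) simp
  qed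
  have W_blin: "blin W" unfolding blin_def using W_lin W_bd by blast
  have W_sadj: "sadj W" unfolding sadj_def
  proof (intro allI)
    fix x y
    have "hinner (W x) y = hinner (S (B x)) (T (B y) + B y)" using B_eq unfolding W_def by simp
    also have "\<dots> = hinner (S (B x)) (S (S (B y))) + hinner (S (B x)) (B y)"
      using SST[OF B_D] by (simp add: hinner_add_right)
    also have "hinner (S (B x)) (S (S (B y))) = hinner (S (S (B x))) (S (B y))" using sa_sym[OF sa' SBD' SBD'] by simp
    also have "hinner (S (B x)) (B y) = hinner (B x) (S (B y))" using sa_sym[OF sa' BD' BD'] .
    also have "hinner (S (S (B x))) (S (B y)) + hinner (B x) (S (B y)) = hinner (T (B x) + B x) (S (B y))"
      using SST[OF B_D] by (simp add: hinner_add_left)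
    also have "\<dots> = hinner x (W y)" unfolding W_def using B_eq by simp
    finally show "hinner (W x) y = hinner x (W y)" .
  qed
  have nnS: "Im (hinner v (S v)) = 0 \<and> 0 \<le> Re (hinner v (S v))" if "v \<in> D'" for v
    using nn' that by (simp add: nonneg_op_def)
  have W_pos: "pos W" unfolding pos_def
  proof
    fix x
    have "hinner x (W x) = hinner (T (B x) + B x) (S (B x))" using B_eq unfolding W_def by simp
    also have "\<dots> = hinner (S (S (B x))) (S (B x)) + hinner (B x) (S (B x))"
      using SST[OF B_D] by (simp add: hinner_add_left)
    also have "hinner (S (S (B x))) (S (B x)) = cnj (hinner (S (B x)) (S (S (B x))))" by (rule hinner_cnj)
    finally show "Im (hinner x (W x)) = 0 \<and> 0 \<le> Re (hinner x (W x))"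
      using nnS[OF SBD'] nnS[OF BD'] by simp
  qed
  have W_sq2: "W (W x) = B x - B (B x)" for x
  proof -
    have "W (W x) = S (B (S (B x)))" unfolding W_def ..
    also have "\<dots> = S (S (B (B x)))" using comm[OF BD'] by simp
    also have "\<dots> = T (B (B x))" using SST[OF B_D] .
    also have "\<dots> = B x - B (B x)" by (rule TB)
    finally show ?thesis .
  qed
  define F where "F x = E (C x)" for x
  have F_blin: "blin F" unfolding F_def using blin_comp[OF E_blin C_blin] .
  have F_sadj: "sadj F" unfolding F_def sadj_def using E_sadj C_sadj EC by (simp add: sadj_def)
  have F_pos: "pos F" unfolding F_def pos_def using EC_pos by blast
  have F_sq: "F (F x) = B x - B (B x)" for x
  proof -
    have "F (F x) = E (E (C (C x)))" unfolding F_def by (metis EC)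
    also have "\<dots> = B x - B (B x)" using EE CC by simp
    finally show ?thesis .
  qed
  define Y where "Y x = B x - B (B x)" for x
  have Y_bpos: "bpos Y"
  proof -
    have "blin Y" unfolding Y_def by (rule blin_diff_op[OF B_blin blin_comp[OF B_blin B_blin]])
    moreover have "sadj Y" unfolding Y_def sadj_def using B_sadj by (simp add: sadj_def hinner_diff_left hinner_diff_right)
    moreover have "pos Y" unfolding pos_def
    proof
      fix x
      have hh: "hinner x (Y x) = hinner (F x) (F x)" using F_sq[of x] F_sadj unfolding Y_def by (simp add: sadj_def)
      show "Im (hinner x (Y x)) = 0 \<and> 0 \<le> Re (hinner x (Y x))" unfolding hh using hinner_self_Im[of "F x"] hinner_nonneg[of "F x"] by blast
    qed
    moreover have "Re (hinner x (Y x)) \<le> (hnorm x)^2" for x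
    proof -
      have "hinner x (Y x) = hinner (F x) (F x)" using F_sq[of x] F_sadj unfolding Y_def by (simp add: sadj_def)
      then have "Re (hinner x (Y x)) = (hnorm (E (C x)))^2" unfolding F_def by (simp add: hnorm_sq)
      also have "\<dots> \<le> (hnorm x)^2" using E_contr[of "C x"] C_contr[of x] by (intro power_mono) auto
      finally show ?thesis .
    qed
    ultimately show ?thesis unfolding bpos_def by blast
  qed
  have WF: "W x = F x" for x
  proof -
    have "W x = sqop Y x" using sq_unique[OF Y_bpos W_blin W_sadj W_pos] W_sq2 unfolding Y_def by blast
    moreover have "F x = sqop Y x" using sq_unique[OF Y_bpos F_blin F_sadj F_pos] F_sq unfolding Y_def by blast
    ultimately show ?thesis by simp
  qed
  have key: "y \<in> R \<and> Sq y = S y" if y: "y \<in> D'" for y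
  proof -
    have "C (C (S y)) = C (E y)" using CC comm[OF y] WF[of y] EC unfolding W_def F_def by metis
    then have CS: "C (S y) = E y" using C_inj2 by blast
    have "y = C (C y) + E (E y)" by (rule decomp)
    also have "\<dots> = C (C y) + E (C (S y))" using CS by simp
    also have "\<dots> = C (C y) + C (E (S y))" by (simp add: EC)
    also have "\<dots> = C (C y + E (S y))" using blin_add[OF C_blin] by simp
    finally have yC: "y = C (C y + E (S y))" .
    have "Sq y = E (C y + E (S y))" by (subst yC) simp
    also have "\<dots> = E (C y) + (S y - B (S y))" using blin_add[OF E_blin] EE by simp
    also have "B (S y) = C (C (S y))" using CC by simp
    also have "\<dots> = C (E y)" using CS by simp
    also have "\<dots> = E (C y)" by (simp add: EC)
    finally have "Sq y = S y" by simp
    then show ?thesis using yC unfolding R_def by (metis rangeI)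
  qed
  have D'R: "D' \<subseteq> R" using key by blast
  have RD': "R \<subseteq> D'"
  proof
    fix y assume y: "y \<in> R"
    have "\<forall>x\<in>D'. hinner (S x) y = hinner x (Sq y)"
    proof
      fix x assume x: "x \<in> D'"
      have "hinner (S x) y = hinner (Sq x) y" using key[OF x] by simp
      also have "\<dots> = hinner x (Sq y)" using Sq_sym key[OF x] y by blast
      finally show "hinner (S x) y = hinner x (Sq y)" .
    qed
    then show "y \<in> D'" using sa_adj[OF sa'] by blast
  qed
  have eqD: "D' = R" using D'R RD' by blast
  have "S x = Sq x" for x
  proof (cases "x \<in> R")
    case True then show ?thesis using key eqD by simp
  next
    case False then show ?thesis using out eqD Sq_out by simp
  qed
  then show ?thesis using eqD by auto
qed

lemma op_sqrt_eq: "op_sqrt D T = (R, Sq)"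
  unfolding op_sqrt_def
  apply (rule the_equality)
  subgoal using SP_Sq unfolding SP_def by simp
  subgoal for p using SP_unique unfolding SP_def by (cases p) auto
  done

lemma Xnorm_eq: "Xnorm D T u = hnorm (Sq u + u)"
  unfolding Xnorm_def op_sqrt_eq by simp

end


lemma cf_parts:
  assumes "closed_form X a"
  shows "csubspace X" "dense_set X"
    "\<forall>u\<in>X. \<forall>v\<in>X. \<forall>w\<in>X. a u (v + w) = a u v + a u w"
    "\<forall>c. \<forall>u\<in>X. \<forall>v\<in>X. a u (cscale c v) = c * a u v"
    "\<forall>u\<in>X. \<forall>v\<in>X. a v u = cnj (a u v)"
    "\<forall>u\<in>X. 0 \<le> Re (a u u)"
    "\<forall>f::nat \<Rightarrow> 'a::chilbert. (\<forall>n. f n \<in> X) \<longrightarrow>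
         (\<forall>e::real>0. \<exists>N::nat. \<forall>m\<ge>N. \<forall>n\<ge>N. Re (a (f m - f n) (f m - f n)) + Re (hinner (f m - f n) (f m - f n)) < e)
         \<longrightarrow> (\<exists>l\<in>X. \<forall>e::real>0. \<exists>N::nat. \<forall>n\<ge>N. Re (a (f n - l) (f n - l)) + Re (hinner (f n - l) (f n - l)) < e)"
  using assms unfolding closed_form_def
  apply -
  apply (elim conjE, assumption)+
  done

lemma closed_form_sform: "closed_form X a \<Longrightarrow> sform X a"
proof -
  assume h: "closed_form X a"
  note p = cf_parts[OF h]
  show ?thesis
  proof
    show "csubspace X" by (rule p(1))
    fix u v w c
    show "u \<in> X \<Longrightarrow> v \<in> X \<Longrightarrow> a v u = cnj (a u v)" using p(5) by blast
    show "u \<in> X \<Longrightarrow> v \<in> X \<Longrightarrow> w \<in> X \<Longrightarrow> a u (v + w) = a u v + a u w" using p(3) by blast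
    show "u \<in> X \<Longrightarrow> v \<in> X \<Longrightarrow> a u (cscale c v) = c * a u v" using p(4) by blast
    show "u \<in> X \<Longrightarrow> 0 \<le> Re (a u u)" using p(6) by blast
  qed
qed

locale fset = nsa D T for D :: "'a::chilbert set" and T +
  fixes X :: "'a set" and a :: "'a \<Rightarrow> 'a \<Rightarrow> complex"
  assumes cf: "closed_form X a" and ao: "assoc_op X a D T"
begin

interpretation A: sform X a by (rule closed_form_sform[OF cf])

lemma D_X: "D \<subseteq> X" using ao unfolding assoc_op_def by blast

lemma aT: "u \<in> D \<Longrightarrow> v \<in> X \<Longrightarrow> a u v = hinner (T u) v"
  using ao unfolding assoc_op_def by blast

lemma a_D: "d \<in> D \<Longrightarrow> Re (a d d) = (hnorm (Sq d))^2"
proof -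
  assume d: "d \<in> D"
  have dR: "d \<in> R" "Sq d \<in> R" using Sq_D d by auto
  have "a d d = hinner (T d) d" using aT[OF d] D_X d by blast
  also have "\<dots> = hinner (Sq (Sq d)) d" using Sq_T[OF d] by simp
  also have "\<dots> = hinner (Sq d) (Sq d)" using Sq_sym[OF dR(2) dR(1)] .
  finally show ?thesis by (simp add: hnorm_sq)
qed

lemma cf_complete:
  assumes "\<forall>n. f n \<in> X"
    "\<forall>e::real>0. \<exists>N::nat. \<forall>m\<ge>N. \<forall>n\<ge>N. Re (a (f m - f n) (f m - f n)) + Re (hinner (f m - f n) (f m - f n)) < e"
  shows "\<exists>l\<in>X. \<forall>e::real>0. \<exists>N::nat. \<forall>n\<ge>N. Re (a (f n - l) (f n - l)) + Re (hinner (f n - l) (f n - l)) < e"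
  using mp[OF mp[OF spec[OF cf_parts(7)[OF cf], of f] assms(1)] assms(2)] .

lemma R_form:
  assumes l: "l \<in> R"
  shows "l \<in> X \<and> Re (a l l) = (hnorm (Sq l))^2"
proof -
  obtain w where w: "l = C w" using l unfolding R_def by auto
  obtain r where r: "\<forall>n. r n \<in> R" "hlim r w" using dense_seq[OF R_dense] by blast
  have "\<forall>n. \<exists>v. r n = C v" using r(1) unfolding R_def by auto
  then obtain v where v: "\<And>n. r n = C (v n)" by metis
  define x where "x n = C (r n)" for n
  have xD: "x n \<in> D" for n unfolding x_def v CC by (rule B_D)
  have xX: "x n \<in> X" for n using xD D_X by blast
  have xl: "hlim x l" unfolding x_def w by (rule blin_hlim[OF C_blin r(2)])
  have Sx: "Sq (x n) = E (r n)" for n unfolding x_def by simp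
  have rc: "hcauchy r" using hlim_cauchy[OF r(2)] .
  have bnd: "Re (a (x m - x n) (x m - x n)) + Re (hinner (x m - x n) (x m - x n)) \<le> 2 * (hnorm (r m - r n))^2" for m n
  proof -
    have dD: "x m - x n \<in> D" using csub_diff[OF DS xD xD] .
    have dC: "x m - x n = C (r m - r n)" unfolding x_def using blin_diff[OF C_blin] by simp
    have "Re (a (x m - x n) (x m - x n)) = (hnorm (E (r m - r n)))^2" using a_D[OF dD] dC by simp
    also have "\<dots> \<le> (hnorm (r m - r n))^2" using E_contr by (intro power_mono) auto
    finally have 1: "Re (a (x m - x n) (x m - x n)) \<le> (hnorm (r m - r n))^2" .
    have "Re (hinner (x m - x n) (x m - x n)) = (hnorm (C (r m - r n)))^2" using dC by (simp add: hnorm_sq)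
    also have "\<dots> \<le> (hnorm (r m - r n))^2" using C_contr by (intro power_mono) auto
    finally show ?thesis using 1 by simp
  qed
  have "\<forall>e::real>0. \<exists>N::nat. \<forall>m\<ge>N. \<forall>n\<ge>N. Re (a (x m - x n) (x m - x n)) + Re (hinner (x m - x n) (x m - x n)) < e"
  proof (intro allI impI)
    fix e :: real assume e: "e > 0"
    then have "sqrt (e/2) > 0" by simp
    then obtain N where N: "\<forall>m\<ge>N. \<forall>n\<ge>N. hnorm (r m - r n) < sqrt (e/2)" using rc unfolding hcauchy_def by blast
    show "\<exists>N::nat. \<forall>m\<ge>N. \<forall>n\<ge>N. Re (a (x m - x n) (x m - x n)) + Re (hinner (x m - x n) (x m - x n)) < e"
    proof (intro exI[of _ N] allI impI)
      fix m n assume "m \<ge> N" "n \<ge> N"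
      then have "hnorm (r m - r n) < sqrt (e/2)" using N by blast
      then have "(hnorm (r m - r n))^2 < (sqrt (e/2))^2" by (intro power_strict_mono) auto
      then have "2 * (hnorm (r m - r n))^2 < e" using e by simp
      then show "Re (a (x m - x n) (x m - x n)) + Re (hinner (x m - x n) (x m - x n)) < e" using bnd[of m n] by linarith
    qed
  qed
  then obtain l' where l': "l' \<in> X" "\<forall>e::real>0. \<exists>N::nat. \<forall>n\<ge>N. Re (a (x n - l') (x n - l')) + Re (hinner (x n - l') (x n - l')) < e"
    using cf_complete[of x] xX by blast
  have dX: "x n - l' \<in> X" for n using A.Xdiff[OF xX l'(1)] .
  have xl': "hlim x l'"
  proof (rule hlimI)
    fix e :: real assume e: "e > 0"
    then obtain N where N: "\<forall>n\<ge>N. Re (a (x n - l') (x n - l')) + Re (hinner (x n - l') (x n - l')) < e^2"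
      using l'(2) by (meson zero_less_power)
    show "\<exists>N. \<forall>n\<ge>N. hnorm (x n - l') < e"
    proof (intro exI[of _ N] allI impI)
      fix n assume "n \<ge> N"
      then have "Re (a (x n - l') (x n - l')) + (hnorm (x n - l'))^2 < e^2" using N by (simp add: hnorm_sq)
      moreover have "0 \<le> Re (a (x n - l') (x n - l'))" using A.bnonneg[OF dX] .
      ultimately have "(hnorm (x n - l'))^2 < e^2" by linarith
      then show "hnorm (x n - l') < e" using e by (meson abs_le_square_iff abs_of_pos hnorm_nonneg less_le_not_le power2_less_imp_less)
    qed
  qed
  have ll: "l' = l" using hlim_unique[OF xl' xl] .
  then have lX: "l \<in> X" using l'(1) by simp
  have snd0: "(\<lambda>n. A.sn (x n - l)) \<longlonglongrightarrow> 0"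
  proof (rule LIMSEQ_I)
    fix e :: real assume e: "e > 0"
    then obtain N where N: "\<forall>n\<ge>N. Re (a (x n - l) (x n - l)) + Re (hinner (x n - l) (x n - l)) < e^2"
      using l'(2) ll by (meson zero_less_power)
    show "\<exists>N. \<forall>n\<ge>N. norm (A.sn (x n - l) - 0) < e"
    proof (intro exI[of _ N] allI impI)
      fix n assume "n \<ge> N"
      then have "Re (a (x n - l) (x n - l)) + (hnorm (x n - l))^2 < e^2" using N by (simp add: hnorm_sq)
      then have "(A.sn (x n - l))^2 < e^2" using A.sn_sq[OF A.Xdiff[OF xX[of n] lX]] zero_le_power2[of "hnorm (x n - l)"] by linarith
      then show "norm (A.sn (x n - l) - 0) < e" using e A.sn_nonneg[OF A.Xdiff[OF xX[of n] lX]]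
        by (simp add: power2_less_imp_less)
    qed
  qed
  have "(\<lambda>n. A.sn (x n)) \<longlonglongrightarrow> A.sn l"
  proof -
    have "(\<lambda>n. A.sn (x n) - A.sn l) \<longlonglongrightarrow> 0"
    proof (rule tendsto_0_le[OF snd0, where K=1], intro always_eventually allI)
      fix n
      have "\<bar>A.sn (x n) - A.sn l\<bar> \<le> A.sn (x n - l)" using A.sn_diff_tri[OF xX[of n] lX] .
      also have "\<dots> = norm (A.sn (x n - l))" using A.sn_nonneg[OF A.Xdiff[OF xX[of n] lX]] by simp
      finally show "norm (A.sn (x n) - A.sn l) \<le> norm (A.sn (x n - l)) * 1" by simp
    qed
    then show ?thesis using Lim_null by blast
  qed
  moreover have "A.sn (x n) = hnorm (E (r n))" for n
  proof -
    have "(A.sn (x n))^2 = (hnorm (E (r n)))^2" using A.sn_sq[OF xX] a_D[OF xD] Sx by simp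
    then show ?thesis using A.sn_nonneg[OF xX] hnorm_nonneg power2_eq_imp_eq by blast
  qed
  moreover have "(\<lambda>n. hnorm (E (r n))) \<longlonglongrightarrow> hnorm (E w)" using hlim_norm[OF blin_hlim[OF E_blin r(2)]] .
  ultimately have "(\<lambda>n. hnorm (E (r n))) \<longlonglongrightarrow> A.sn l" "(\<lambda>n. hnorm (E (r n))) \<longlonglongrightarrow> hnorm (E w)" by simp_all
  then have "A.sn l = hnorm (E w)" by (rule LIMSEQ_unique)
  then have "Re (a l l) = (hnorm (Sq l))^2" using A.sn_sq[OF lX] w by simp
  then show ?thesis using lX by simp
qed

lemma X_bound: "v \<in> X \<Longrightarrow> (hnorm (Sq v))^2 \<le> Re (a v v)"
proof (cases "v \<in> R")
  case True then show ?thesis using R_form by simp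
next
  case False
  assume "v \<in> X"
  then show ?thesis using False Sq_out A.bnonneg by simp
qed

end


context nsa begin

lemma cscale_complex_split: "cscale lam z = cscale (complex_of_real (Re lam)) z + cscale (\<i> * complex_of_real (Im lam)) z"
proof -
  have "lam = complex_of_real (Re lam) + \<i> * complex_of_real (Im lam)" by (simp add: complex_eq_iff)
  then show ?thesis by (metis cscale_add_left)
qed

lemma norm_split:
  assumes z: "z \<in> D"
  shows "(hnorm (T z - cscale lam z))^2 = (hnorm (T z - cscale (complex_of_real (Re lam)) z))^2 + (Im lam)^2 * (hnorm z)^2"
proof -
  define u where "u = T z - cscale (complex_of_real (Re lam)) z"
  define w where "w = cscale (\<i> * complex_of_real (Im lam)) z"
  have e: "T z - cscale lam z = u - w" unfolding u_def w_def by (subst cscale_complex_split) (simp add: algebra_simps)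
  have Iu: "Im (hinner u z) = 0"
  proof -
    have "hinner u z = cnj (hinner z (T z)) - complex_of_real (Re lam) * hinner z z"
      unfolding u_def by (simp add: hinner_diff_left hinner_scale_left hinner_cnj[of "T z" z])
    then show ?thesis using nn_Im[OF z] hinner_self_Im[of z] by simp
  qed
  have "Re (hinner u w) = 0"
  proof -
    have "hinner u w = (\<i> * complex_of_real (Im lam)) * hinner u z" unfolding w_def by (rule hinner_scale_right)
    then show ?thesis using Iu by simp
  qed
  moreover have "(hnorm w)^2 = (Im lam)^2 * (hnorm z)^2" unfolding w_def by (simp add: hnorm_scale power_mult_distrib norm_mult)
  ultimately show ?thesis unfolding e hnorm_diff_sq u_def by simp
qed

lemma norm_cnj: "z \<in> D \<Longrightarrow> hnorm (T z - cscale (cnj lam) z) = hnorm (T z - cscale lam z)"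
proof -
  assume z: "z \<in> D"
  have "(hnorm (T z - cscale (cnj lam) z))^2 = (hnorm (T z - cscale lam z))^2"
    using norm_split[OF z, of lam] norm_split[OF z, of "cnj lam"] by simp
  then show ?thesis using power2_eq_imp_eq hnorm_nonneg by blast
qed

lemma fl_diff: "z1 \<in> D \<Longrightarrow> z2 \<in> D \<Longrightarrow> T (z1 - z2) - cscale lam (z1 - z2) = (T z1 - cscale lam z1) - (T z2 - cscale lam z2)"
  using sa_diff[OF sa] by (simp add: cscale_diff_right algebra_simps)

lemma res_of_bb:
  assumes c: "c > 0" and bb: "\<And>z. z \<in> D \<Longrightarrow> c * hnorm z \<le> hnorm (T z - cscale lam z)"
  shows "lam \<in> resolvent_set D T"
proof -
  have inj: "inj_on (\<lambda>x. T x - cscale lam x) D"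
  proof (rule inj_onI)
    fix z1 z2 assume z: "z1 \<in> D" "z2 \<in> D" "T z1 - cscale lam z1 = T z2 - cscale lam z2"
    have "c * hnorm (z1 - z2) \<le> 0" using bb[OF csub_diff[OF DS z(1,2)]] fl_diff[OF z(1,2)] z(3) by simp
    then have "hnorm (z1 - z2) \<le> 0" using c by (simp add: mult_le_0_iff)
    then show "z1 = z2" using hnorm_nonneg[of "z1 - z2"] hnorm_zero_iff[of "z1 - z2"] by simp
  qed
  have surj: "(\<lambda>x. T x - cscale lam x) ` D = UNIV"
  proof -
    have "\<exists>z\<in>D. T z - cscale lam z = y" for y
    proof (rule sa_surj[OF sa c bb])
      fix z assume z: "z \<in> D" "T z - cscale (cnj lam) z = 0"
      have "hnorm (T z - cscale lam z) = hnorm (T z - cscale (cnj lam) z)" using norm_cnj[OF z(1), of lam] by simp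
      then have "hnorm (T z - cscale lam z) = 0" using z(2) by simp
      then have "c * hnorm z \<le> 0" using bb[OF z(1)] by simp
      then have "hnorm z \<le> 0" using c by (simp add: mult_le_0_iff)
      then show "z = 0" using hnorm_nonneg[of z] hnorm_zero_iff[of z] by simp
    qed
    then show ?thesis by (metis (mono_tags, lifting) UNIV_eq_I image_eqI)
  qed
  have K: "\<forall>x\<in>D. hnorm x \<le> (1/c) * hnorm (T x - cscale lam x)"
  proof
    fix x assume "x \<in> D"
    then have "c * hnorm x \<le> hnorm (T x - cscale lam x)" by (rule bb)
    then show "hnorm x \<le> (1/c) * hnorm (T x - cscale lam x)" using c by (simp add: field_simps)
  qed
  show ?thesis unfolding resolvent_set_def bij_betw_def using inj surj K by blast
qed

lemma res_K:
  assumes "lam \<in> resolvent_set D T"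
  shows "\<exists>K>0. \<forall>z\<in>D. hnorm z \<le> K * hnorm (T z - cscale lam z)"
proof -
  obtain K where K: "\<forall>x\<in>D. hnorm x \<le> K * hnorm (T x - cscale lam x)" using assms unfolding resolvent_set_def by blast
  have "\<forall>z\<in>D. hnorm z \<le> (\<bar>K\<bar> + 1) * hnorm (T z - cscale lam z)"
  proof
    fix z assume "z \<in> D"
    then have "hnorm z \<le> K * hnorm (T z - cscale lam z)" using K by blast
    also have "\<dots> \<le> (\<bar>K\<bar> + 1) * hnorm (T z - cscale lam z)" by (intro mult_right_mono) auto
    finally show "hnorm z \<le> (\<bar>K\<bar> + 1) * hnorm (T z - cscale lam z)" .
  qed
  then show ?thesis by (intro exI[of _ "\<bar>K\<bar> + 1"]) auto
qed

lemma res_bij: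
  assumes "lam \<in> resolvent_set D T"
  shows "\<exists>z\<in>D. T z - cscale lam z = y"
proof -
  have "(\<lambda>x. T x - cscale lam x) ` D = UNIV" using assms unfolding resolvent_set_def bij_betw_def by simp
  then have "y \<in> (\<lambda>x. T x - cscale lam x) ` D" by simp
  then show ?thesis by (elim imageE) auto
qed

lemma res_open:
  assumes K: "K > 0" "\<And>z. z \<in> D \<Longrightarrow> hnorm z \<le> K * hnorm (T z - cscale lam z)"
    and mu: "cmod (mu - lam) < 1 / K"
  shows "mu \<in> resolvent_set D T"
proof (rule res_of_bb)
  show "0 < 1 / K - cmod (mu - lam)" using mu by simp
  fix z assume z: "z \<in> D"
  have e: "T z - cscale lam z = (T z - cscale mu z) + cscale (mu - lam) z" by (simp add: cscale_diff_left algebra_simps)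
  have "hnorm (T z - cscale lam z) \<le> hnorm (T z - cscale mu z) + cmod (mu - lam) * hnorm z"
    unfolding e using hnorm_triangle[of "T z - cscale mu z" "cscale (mu - lam) z"] by (simp add: hnorm_scale)
  moreover have "(1 / K) * hnorm z \<le> hnorm (T z - cscale lam z)" using K(2)[OF z] K(1) by (simp add: field_simps)
  ultimately show "(1 / K - cmod (mu - lam)) * hnorm z \<le> hnorm (T z - cscale mu z)" by (simp add: algebra_simps)
qed

lemma ball_m1:
  assumes mu: "cmod (mu + 1) < 1"
  shows "mu \<in> resolvent_set D T"
proof (rule res_of_bb)
  show "0 < 1 - cmod (mu + 1)" using mu by simp
  fix z assume z: "z \<in> D"
  have e: "T z + z = (T z - cscale mu z) + cscale (mu + 1) z" by (simp add: cscale_add_left cscale_one algebra_simps)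
  have "hnorm (T z + z) \<le> hnorm (T z - cscale mu z) + cmod (mu + 1) * hnorm z"
    unfolding e using hnorm_triangle[of "T z - cscale mu z" "cscale (mu + 1) z"] by (simp add: hnorm_scale)
  then show "(1 - cmod (mu + 1)) * hnorm z \<le> hnorm (T z - cscale mu z)" using bb1[OF z] by (simp add: algebra_simps)
qed

lemma spec_far: "s \<in> spectrum_op D T \<Longrightarrow> 1 \<le> cmod (s + 1)"
  using ball_m1[of s] unfolding spectrum_op_def by force

lemma infdist_ge:
  assumes "A \<noteq> {}" "\<And>a. a \<in> A \<Longrightarrow> e \<le> dist x a"
  shows "e \<le> infdist x A"
  unfolding infdist_notempty[OF assms(1)] using assms by (intro cINF_greatest) auto

end


context nsa begin

lemma real_spec:
  assumes rr: "complex_of_real r \<in> resolvent_set D T" and nt: "(x0::'a) \<noteq> 0"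
  shows "\<exists>s. complex_of_real s \<in> spectrum_op D T \<and> (\<forall>z\<in>D. \<bar>s - r\<bar> * hnorm z \<le> hnorm (T z - cscale (complex_of_real r) z))"
proof -
  define cr where "cr = complex_of_real r"
  define f where "f z = T z - cscale cr z" for z
  obtain K where K: "K > 0" "\<And>z. z \<in> D \<Longrightarrow> hnorm z \<le> K * hnorm (f z)"
    using res_K[OF rr] unfolding f_def cr_def by blast
  have f_diff: "z1 \<in> D \<Longrightarrow> z2 \<in> D \<Longrightarrow> f (z1 - z2) = f z1 - f z2" for z1 z2 unfolding f_def by (rule fl_diff)
  have f_add: "z1 \<in> D \<Longrightarrow> z2 \<in> D \<Longrightarrow> f (z1 + z2) = f z1 + f z2" for z1 z2
    unfolding f_def using sa_add[OF sa] by (simp add: cscale_add_right algebra_simps)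
  have f_scale: "z \<in> D \<Longrightarrow> f (cscale c z) = cscale c (f z)" for z c
    unfolding f_def using sa_scale[OF sa] by (simp add: cscale_diff_right cscale_cscale mult.commute)
  have ex1: "\<exists>!z. z \<in> D \<and> f z = y" for y
  proof -
    obtain z where z: "z \<in> D" "f z = y" using res_bij[OF rr] unfolding f_def cr_def by blast
    moreover have "z' = z" if "z' \<in> D" "f z' = y" for z'
    proof -
      have "hnorm (z' - z) \<le> K * hnorm (f (z' - z))" using K(2)[OF csub_diff[OF DS that(1) z(1)]] .
      also have "f (z' - z) = 0" using f_diff[OF that(1) z(1)] that(2) z(2) by simp
      finally have "hnorm (z' - z) \<le> 0" by simp
      then show ?thesis using hnorm_nonneg[of "z' - z"] hnorm_zero_iff[of "z' - z"] by simp
    qed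
    ultimately show ?thesis by blast
  qed
  define Rs where "Rs y = (THE z. z \<in> D \<and> f z = y)" for y
  have Rs_D: "Rs y \<in> D" and Rs_eq: "f (Rs y) = y" for y using theI'[OF ex1[of y]] unfolding Rs_def by auto
  have Rs_inv: "z \<in> D \<Longrightarrow> f z = y \<Longrightarrow> Rs y = z" for z y unfolding Rs_def by (rule the1_equality[OF ex1]) auto
  have Rs_bd: "hnorm (Rs y) \<le> K * hnorm y" for y using K(2)[OF Rs_D] Rs_eq by simp
  have Rs_blin: "blin Rs"
  proof -
    have "Rs (x + y) = Rs x + Rs y" for x y
      using Rs_inv[OF csub_add[OF DS Rs_D Rs_D]] f_add[OF Rs_D Rs_D] Rs_eq by simp
    moreover have "Rs (cscale c x) = cscale c (Rs x)" for c x
      using Rs_inv[OF csub_scale[OF DS Rs_D]] f_scale[OF Rs_D] Rs_eq by simp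
    ultimately show ?thesis unfolding blin_def using Rs_bd by blast
  qed
  have Rs_sadj: "sadj Rs"
    unfolding sadj_def
  proof (intro allI)
    fix x y
    have "hinner (Rs x) y = hinner (Rs x) (f (Rs y))" using Rs_eq by simp
    also have "\<dots> = hinner (Rs x) (T (Rs y)) - cr * hinner (Rs x) (Rs y)"
      unfolding f_def by (simp add: hinner_diff_right hinner_scale_right)
    also have "hinner (Rs x) (T (Rs y)) = hinner (T (Rs x)) (Rs y)" using sa_sym[OF sa Rs_D Rs_D] by simp
    also have "hinner (T (Rs x)) (Rs y) - cr * hinner (Rs x) (Rs y) = hinner (f (Rs x)) (Rs y)"
      unfolding f_def cr_def by (simp add: hinner_diff_left hinner_scale_left)
    also have "\<dots> = hinner x (Rs y)" using Rs_eq by simp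
    finally show "hinner (Rs x) y = hinner x (Rs y)" .
  qed
  have Rs_zero: "Rs y = 0 \<Longrightarrow> y = 0" for y using Rs_eq[of y] sa_zero[OF sa] unfolding f_def by simp
  define S where "S = {(hnorm (Rs x))^2 | x. hnorm x \<le> 1}"
  define m2 where "m2 = Sup S"
  have S_ne: "S \<noteq> {}" unfolding S_def by (auto intro: exI[of _ 0])
  have S_bdd: "bdd_above S"
  proof (rule bdd_aboveI[of _ "K^2"])
    fix v assume "v \<in> S"
    then obtain x where x: "v = (hnorm (Rs x))^2" "hnorm x \<le> 1" unfolding S_def by auto
    have "K * hnorm x \<le> K * 1" using x(2) K(1) by (intro mult_left_mono) auto
    then have "hnorm (Rs x) \<le> K" using Rs_bd[of x] by linarith
    then show "v \<le> K^2" using x(1) by (simp add: power_mono)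
  qed
  have ub: "(hnorm (Rs x))^2 \<le> m2 * (hnorm x)^2" for x
  proof (cases "x = 0")
    case True then show ?thesis using blin_zero[OF Rs_blin] by simp
  next
    case False
    then have nx: "hnorm x > 0" by (rule hnorm_pos)
    define x' where "x' = cscale (complex_of_real (1 / hnorm x)) x"
    have "hnorm x' = 1" unfolding x'_def hnorm_scale norm_of_real using nx False by simp
    then have "(hnorm (Rs x'))^2 \<in> S" unfolding S_def by auto
    then have "(hnorm (Rs x'))^2 \<le> m2" unfolding m2_def using S_bdd by (rule cSup_upper)
    moreover have "hnorm (Rs x') = hnorm (Rs x) / hnorm x" unfolding x'_def blin_scale[OF Rs_blin] hnorm_scale norm_of_real
      using nx by simp
    ultimately have "(hnorm (Rs x))^2 / (hnorm x)^2 \<le> m2" by (simp add: power_divide)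
    then show ?thesis using nx False by (simp add: divide_le_eq)
  qed
  have m2_pos: "m2 > 0"
  proof -
    have "Rs x0 \<noteq> 0" using Rs_zero nt by blast
    then have "0 < (hnorm (Rs x0))^2" by (simp add: hnorm_pos)
    also have "\<dots> \<le> m2 * (hnorm x0)^2" by (rule ub)
    finally show ?thesis using zero_le_power2[of "hnorm x0"] by (simp add: zero_less_mult_iff)
  qed
  have approx: "\<exists>x. hnorm x \<le> 1 \<and> m2 - e < (hnorm (Rs x))^2" if e: "e > 0" for e
  proof -
    have "m2 - e < Sup S" unfolding m2_def using e by simp
    then obtain v where "v \<in> S" "m2 - e < v" using less_cSupD[OF S_ne] by blast
    then show ?thesis unfolding S_def by auto
  qed
  define m where "m = sqrt m2"
  have m_pos: "m > 0" unfolding m_def using m2_pos by simp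
  have mm: "m * m = m2" unfolding m_def using m2_pos by simp
  have Rs_m: "hnorm (Rs y) \<le> m * hnorm y" for y
  proof -
    have "(m * hnorm y)^2 = m2 * (hnorm y)^2" using mm by (simp add: power_mult_distrib power2_eq_square)
    then have "(hnorm (Rs y))^2 \<le> (m * hnorm y)^2" using ub[of y] by simp
    then show ?thesis using power2_le_imp_le m_pos by simp
  qed
  define Q where "Q x = cscale (complex_of_real m2) x - Rs (Rs x)" for x
  have Q_blin: "blin Q" unfolding Q_def
    by (rule blin_diff_op[OF blin_cscale[OF blin_id] blin_comp[OF Rs_blin Rs_blin]])
  have Q_sadj: "sadj Q" unfolding Q_def sadj_def using Rs_sadj
    by (simp add: sadj_def hinner_diff_left hinner_diff_right hinner_scale_left hinner_scale_right)
  have Q_form: "hinner x (Q x) = complex_of_real (m2 * (hnorm x)^2 - (hnorm (Rs x))^2)" for x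
  proof -
    have "hinner x (Rs (Rs x)) = hinner (Rs x) (Rs x)" using Rs_sadj by (simp add: sadj_def)
    then show ?thesis unfolding Q_def by (simp add: hinner_diff_right hinner_scale_right hinner_self_hnorm)
  qed
  have Q_pos: "pos Q" unfolding pos_def Q_form using ub by simp
  define L where "L = m2 + K^2"
  have L_pos: "L > 0" unfolding L_def using m2_pos by (simp add: add_pos_nonneg)
  have Q_bd: "hnorm (Q y) \<le> L * hnorm y" for y
  proof -
    have "hnorm (Q y) \<le> hnorm (cscale (complex_of_real m2) y) + hnorm (Rs (Rs y))"
      unfolding Q_def using hnorm_triangle[of "cscale (complex_of_real m2) y" "- Rs (Rs y)"] hnorm_minus[of "Rs (Rs y)"] by simp
    also have "hnorm (cscale (complex_of_real m2) y) = m2 * hnorm y" using m2_pos by (simp add: hnorm_scale)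
    also have "hnorm (Rs (Rs y)) \<le> K * (K * hnorm y)"
    proof -
      have "K * hnorm (Rs y) \<le> K * (K * hnorm y)" using Rs_bd[of y] K(1) by (intro mult_left_mono) auto
      then show ?thesis using Rs_bd[of "Rs y"] by linarith
    qed
    finally show ?thesis unfolding L_def by (simp add: algebra_simps power2_eq_square)
  qed
  define Mp where "Mp y = cscale (complex_of_real m) y + Rs y" for y
  define Mm where "Mm y = cscale (complex_of_real m) y - Rs y" for y
  have factor: "Q x = Mm (Mp x)" for x
  proof -
    have "Mm (Mp x) = cscale (complex_of_real m) (cscale (complex_of_real m) x + Rs x) - Rs (cscale (complex_of_real m) x + Rs x)"
      unfolding Mm_def Mp_def ..
    also have "\<dots> = cscale (complex_of_real (m * m)) x - Rs (Rs x)"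
      by (simp add: cscale_add_right cscale_cscale blin_add[OF Rs_blin] blin_scale[OF Rs_blin])
    finally show ?thesis unfolding Q_def mm by simp
  qed
  have notboth: "\<not> ((\<exists>c1>0. \<forall>y. c1 * hnorm y \<le> hnorm (Mm y)) \<and> (\<exists>c2>0. \<forall>y. c2 * hnorm y \<le> hnorm (Mp y)))"
  proof
    assume "(\<exists>c1>0. \<forall>y. c1 * hnorm y \<le> hnorm (Mm y)) \<and> (\<exists>c2>0. \<forall>y. c2 * hnorm y \<le> hnorm (Mp y))"
    then obtain c1 c2 where c: "c1 > 0" "c2 > 0" "\<And>y. c1 * hnorm y \<le> hnorm (Mm y)" "\<And>y. c2 * hnorm y \<le> hnorm (Mp y)" by blast
    define c where "c = c1 * c2"
    have cp: "c > 0" unfolding c_def using c by simp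
    have cQ: "c * hnorm x \<le> hnorm (Q x)" for x
    proof -
      have "c * hnorm x = c1 * (c2 * hnorm x)" unfolding c_def by simp
      also have "\<dots> \<le> c1 * hnorm (Mp x)" using c(1) c(4) by (simp add: mult_left_mono)
      also have "\<dots> \<le> hnorm (Mm (Mp x))" by (rule c(3))
      finally show ?thesis unfolding factor .
    qed
    define e where "e = min (m2 / 2) (c^2 / (4 * L))"
    have ep: "e > 0" unfolding e_def using m2_pos cp L_pos by simp
    obtain x where x: "hnorm x \<le> 1" "m2 - e < (hnorm (Rs x))^2" using approx[OF ep] by blast
    have Qx_small: "Re (hinner x (Q x)) < e"
    proof -
      have "Re (hinner x (Q x)) = m2 * (hnorm x)^2 - (hnorm (Rs x))^2" unfolding Q_form by simp
      also have "\<dots> \<le> m2 - (hnorm (Rs x))^2"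
      proof -
        have "(hnorm x)^2 \<le> 1" using x(1) by (simp add: power_le_one)
        then show ?thesis using m2_pos by (simp add: mult_left_le)
      qed
      finally show ?thesis using x(2) by linarith
    qed
    have Qsq: "(hnorm (Q x))^2 \<le> e * L"
    proof -
      have e1: "hinner x (Q (Q x)) = complex_of_real ((hnorm (Q x))^2)"
      proof -
        have "hinner x (Q (Q x)) = hinner (Q x) (Q x)" using Q_sadj by (simp add: sadj_def)
        then show ?thesis by (simp only: hinner_self_hnorm)
      qed
      have "((hnorm (Q x))^2)^2 \<le> Re (hinner x (Q x)) * Re (hinner (Q x) (Q (Q x)))"
        using pos_cs[OF Q_blin Q_sadj Q_pos, of x "Q x"] unfolding e1 norm_of_real by simp
      also have "\<dots> \<le> e * (L * (hnorm (Q x))^2)"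
      proof (rule mult_mono)
        show "Re (hinner x (Q x)) \<le> e" using Qx_small by simp
        have "Re (hinner (Q x) (Q (Q x))) \<le> hnorm (Q x) * hnorm (Q (Q x))" by (rule Re_le_norms)
        also have "\<dots> \<le> hnorm (Q x) * (L * hnorm (Q x))" using Q_bd by (simp add: mult_left_mono)
        finally show "Re (hinner (Q x) (Q (Q x))) \<le> L * (hnorm (Q x))^2" by (simp add: power2_eq_square algebra_simps)
        show "0 \<le> e" using ep by simp
        show "0 \<le> Re (hinner (Q x) (Q (Q x)))" using Q_pos by (simp add: pos_def)
      qed
      finally have h: "(hnorm (Q x))^2 * (hnorm (Q x))^2 \<le> (e * L) * (hnorm (Q x))^2" by (simp add: power2_eq_square algebra_simps)
      show ?thesis
      proof (cases "hnorm (Q x) = 0")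
        case True then show ?thesis using ep L_pos by simp
      next
        case False then have p: "(hnorm (Q x))^2 > 0" by simp
        show ?thesis using mult_right_le_imp_le[OF h p] .
      qed
    qed
    have xbig: "1/2 < (hnorm x)^2"
    proof -
      have "m2 - e < m2 * (hnorm x)^2" using x(2) ub[of x] by linarith
      moreover have "e \<le> m2 / 2" unfolding e_def by simp
      ultimately have "m2 * (1/2) < m2 * (hnorm x)^2" by linarith
      then show ?thesis using m2_pos by (simp add: mult_less_cancel_left_pos)
    qed
    have "(c * hnorm x)^2 \<le> (hnorm (Q x))^2" using cQ[of x] cp by (intro power_mono) auto
    then have "c^2 * (hnorm x)^2 \<le> (hnorm (Q x))^2" by (simp add: power_mult_distrib)
    also have "\<dots> \<le> e * L" by (rule Qsq)
    also have "\<dots> \<le> c^2 / 4"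
    proof -
      have "e \<le> c^2 / (4 * L)" unfolding e_def by simp
      then have "e * L \<le> c^2 / (4 * L) * L" using L_pos by (intro mult_right_mono) auto
      also have "\<dots> = c^2 / 4" using L_pos by simp
      finally show ?thesis .
    qed
    finally have "c^2 * (hnorm x)^2 \<le> c^2 / 4" .
    moreover have "c^2 * (1/2) < c^2 * (hnorm x)^2" using xbig cp by (simp add: mult_less_cancel_left_pos)
    ultimately show False using cp by (simp add: field_simps)
  qed
  obtain t where t: "\<bar>t\<bar> = m" "\<And>c. c > 0 \<Longrightarrow> \<exists>y. hnorm (cscale (complex_of_real t) y - Rs y) < c * hnorm y"
  proof -
    consider "\<not> (\<exists>c1>0. \<forall>y. c1 * hnorm y \<le> hnorm (Mm y))" | "\<not> (\<exists>c2>0. \<forall>y. c2 * hnorm y \<le> hnorm (Mp y))"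
      using notboth by blast
    then show ?thesis
    proof cases
      case 1
      have "\<exists>y. hnorm (cscale (complex_of_real m) y - Rs y) < c * hnorm y" if cpos: "c > 0" for c
        using 1 cpos unfolding Mm_def by (auto simp: not_le)
      then show ?thesis using that[of m] m_pos by simp
    next
      case 2
      have "\<exists>y. hnorm (cscale (complex_of_real (- m)) y - Rs y) < c * hnorm y" if cpos: "c > 0" for c
      proof -
        have "\<exists>y. hnorm (Mp y) < c * hnorm y" using 2 cpos by (auto simp: not_le)
        then obtain y where "hnorm (Mp y) < c * hnorm y" by blast
        moreover have "cscale (complex_of_real (- m)) y - Rs y = - Mp y" unfolding Mp_def by (simp add: cscale_minus_left)
        ultimately show ?thesis by (metis hnorm_minus)
      qed
      then show ?thesis using that[of "- m"] m_pos by simp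
    qed
  qed
  have t0: "t \<noteq> 0" using t(1) m_pos by auto
  define s where "s = r + 1 / t"
  have sr: "\<bar>s - r\<bar> = 1 / m" unfolding s_def using t(1) by simp
  have s_spec: "complex_of_real s \<in> spectrum_op D T"
  proof (rule ccontr)
    assume "complex_of_real s \<notin> spectrum_op D T"
    then have "complex_of_real s \<in> resolvent_set D T" unfolding spectrum_op_def by simp
    then obtain K' where K': "K' > 0" "\<And>z. z \<in> D \<Longrightarrow> hnorm z \<le> K' * hnorm (T z - cscale (complex_of_real s) z)"
      using res_K by blast
    define c where "c = min (m / 2) (m * m / (4 * K'))"
    have cp: "c > 0" unfolding c_def using m_pos K' by simp
    obtain y where y: "hnorm (cscale (complex_of_real t) y - Rs y) < c * hnorm y" using t(2)[OF cp] by blast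
    have ny: "hnorm y > 0"
    proof (rule ccontr)
      assume "\<not> hnorm y > 0"
      then have "hnorm y = 0" using hnorm_nonneg[of y] by linarith
      then have "c * hnorm y = 0" by simp
      then show False using y hnorm_nonneg[of "cscale (complex_of_real t) y - Rs y"] by linarith
    qed
    define z where "z = Rs y"
    have zD: "z \<in> D" unfolding z_def by (rule Rs_D)
    have e: "T z - cscale (complex_of_real s) z = cscale (complex_of_real (1 / t)) (cscale (complex_of_real t) y - Rs y)"
    proof -
      have "T z - cscale (complex_of_real s) z = f z - cscale (complex_of_real (1 / t)) z"
        unfolding f_def cr_def s_def by (simp add: cscale_add_left algebra_simps)
      also have "\<dots> = y - cscale (complex_of_real (1 / t)) (Rs y)" unfolding z_def Rs_eq ..
      also have "\<dots> = cscale (complex_of_real (1 / t)) (cscale (complex_of_real t) y - Rs y)"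
        using t0 by (simp add: cscale_diff_right cscale_cscale cscale_one)
      finally show ?thesis .
    qed
    have n1: "hnorm (T z - cscale (complex_of_real s) z) < c * hnorm y / m"
    proof -
      have "hnorm (T z - cscale (complex_of_real s) z) = hnorm (cscale (complex_of_real t) y - Rs y) / m"
        unfolding e hnorm_scale norm_of_real using t(1) by simp
      then show ?thesis using y m_pos by (simp add: divide_strict_right_mono)
    qed
    have n2: "(m / 2) * hnorm y \<le> hnorm z"
    proof -
      have "hnorm (cscale (complex_of_real t) y) \<le> hnorm (cscale (complex_of_real t) y - Rs y) + hnorm (Rs y)"
        using hnorm_triangle[of "cscale (complex_of_real t) y - Rs y" "Rs y"] by simp
      moreover have "hnorm (cscale (complex_of_real t) y) = m * hnorm y" using t(1) by (simp add: hnorm_scale)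
      moreover have "c \<le> m / 2" unfolding c_def by simp
      moreover have "c * hnorm y \<le> (m / 2) * hnorm y" using \<open>c \<le> m / 2\<close> by (intro mult_right_mono) auto
      ultimately have "m * hnorm y \<le> (m / 2) * hnorm y + hnorm z" unfolding z_def using y by linarith
      then show ?thesis by simp
    qed
    have "hnorm z \<le> K' * hnorm (T z - cscale (complex_of_real s) z)" using K'(2)[OF zD] .
    also have "\<dots> \<le> K' * (c * hnorm y / m)" using n1 K'(1) by (intro mult_left_mono) auto
    also have "\<dots> \<le> K' * ((m * m / (4 * K')) * hnorm y / m)"
    proof -
      have "c \<le> m * m / (4 * K')" unfolding c_def by simp
      then have "c * hnorm y \<le> (m * m / (4 * K')) * hnorm y" by (intro mult_right_mono) auto
      then have "c * hnorm y / m \<le> (m * m / (4 * K')) * hnorm y / m" using m_pos by (intro divide_right_mono) auto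
      then show ?thesis using K'(1) by (intro mult_left_mono) auto
    qed
    also have "\<dots> = (m / 4) * hnorm y" using K'(1) m_pos by (simp add: field_simps)
    finally have "hnorm z \<le> (m / 4) * hnorm y" .
    with n2 have "(m / 2) * hnorm y \<le> (m / 4) * hnorm y" by simp
    then show False using m_pos ny by (simp add: mult_le_cancel_right_pos)
  qed
  have bound: "\<bar>s - r\<bar> * hnorm z \<le> hnorm (T z - cscale (complex_of_real r) z)" if z: "z \<in> D" for z
  proof -
    have "Rs (f z) = z" by (rule Rs_inv[OF z refl])
    then have "hnorm z \<le> m * hnorm (f z)" using Rs_m[of "f z"] by simp
    then have "hnorm z / m \<le> hnorm (f z)" using m_pos by (simp add: divide_le_eq mult.commute)
    then show ?thesis unfolding sr f_def cr_def by simp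
  qed
  show ?thesis using s_spec bound by blast
qed

end


context nsa begin

lemma spec_nonempty: "(x0::'a) \<noteq> 0 \<Longrightarrow> spectrum_op D T \<noteq> {}"
proof -
  assume nt: "x0 \<noteq> 0"
  have "complex_of_real (-1) \<in> resolvent_set D T" by (rule ball_m1) simp
  then obtain s where "complex_of_real s \<in> spectrum_op D T" using real_spec[OF _ nt] by blast
  then show ?thesis by blast
qed

lemma cmod_sq_real: "(cmod (lam - complex_of_real s))^2 = (Re lam - s)^2 + (Im lam)^2"
  by (simp add: cmod_power2)

lemma dist_bound:
  assumes lam: "lam \<in> resolvent_set D T" and nt: "(x0::'a) \<noteq> 0" and z: "z \<in> D"
  shows "infdist lam (spectrum_op D T) * hnorm z \<le> hnorm (T z - cscale lam z)"
proof -
  define d where "d = infdist lam (spectrum_op D T)"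
  have d0: "0 \<le> d" unfolding d_def by (rule infdist_nonneg)
  have sp: "(hnorm (T z - cscale lam z))^2 = (hnorm (T z - cscale (complex_of_real (Re lam)) z))^2 + (Im lam)^2 * (hnorm z)^2"
    by (rule norm_split[OF z])
  have "(d * hnorm z)^2 \<le> (hnorm (T z - cscale lam z))^2"
  proof (cases "complex_of_real (Re lam) \<in> resolvent_set D T")
    case True
    obtain s where s: "complex_of_real s \<in> spectrum_op D T"
      "\<forall>z\<in>D. \<bar>s - Re lam\<bar> * hnorm z \<le> hnorm (T z - cscale (complex_of_real (Re lam)) z)"
      using real_spec[OF True nt] by blast
    have "d \<le> dist lam (complex_of_real s)" unfolding d_def by (rule infdist_le[OF s(1)])
    then have "d^2 \<le> (cmod (lam - complex_of_real s))^2" using d0 by (simp add: dist_norm power_mono)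
    also have "\<dots> = (Re lam - s)^2 + (Im lam)^2" by (rule cmod_sq_real)
    finally have dd: "d^2 \<le> (s - Re lam)^2 + (Im lam)^2" by (simp add: power2_commute)
    have "(\<bar>s - Re lam\<bar> * hnorm z)^2 \<le> (hnorm (T z - cscale (complex_of_real (Re lam)) z))^2"
      using s(2) z by (intro power_mono) auto
    then have "(s - Re lam)^2 * (hnorm z)^2 \<le> (hnorm (T z - cscale (complex_of_real (Re lam)) z))^2"
      by (simp add: power_mult_distrib)
    moreover have "d^2 * (hnorm z)^2 \<le> ((s - Re lam)^2 + (Im lam)^2) * (hnorm z)^2"
      using dd by (intro mult_right_mono) auto
    ultimately show ?thesis unfolding sp by (simp add: power_mult_distrib algebra_simps)
  next
    case False
    then have "complex_of_real (Re lam) \<in> spectrum_op D T" unfolding spectrum_op_def by simp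
    then have "d \<le> dist lam (complex_of_real (Re lam))" unfolding d_def by (rule infdist_le)
    also have "dist lam (complex_of_real (Re lam)) = \<bar>Im lam\<bar>"
      by (simp add: dist_norm cmod_def)
    finally have "d^2 \<le> (Im lam)^2" using d0 by (metis abs_le_square_iff abs_of_nonneg)
    then have "d^2 * (hnorm z)^2 \<le> (Im lam)^2 * (hnorm z)^2" by (intro mult_right_mono) auto
    then show ?thesis unfolding sp power_mult_distrib using zero_le_power2[of "hnorm (T z - cscale (complex_of_real (Re lam)) z)"] by linarith
  qed
  then show ?thesis unfolding d_def using d0 by (meson power2_le_imp_le hnorm_nonneg)
qed

lemma d_pos:
  assumes lam: "lam \<in> resolvent_set D T" and ne: "spectrum_op D T \<noteq> {}"
  shows "0 < infdist lam (spectrum_op D T)"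
proof -
  obtain K where K: "K > 0" "\<forall>z\<in>D. hnorm z \<le> K * hnorm (T z - cscale lam z)" using res_K[OF lam] by blast
  have "1 / K \<le> dist lam s" if s: "s \<in> spectrum_op D T" for s
  proof (rule ccontr)
    assume "\<not> 1 / K \<le> dist lam s"
    then have "cmod (s - lam) < 1 / K" by (simp add: dist_norm norm_minus_commute)
    then have "s \<in> resolvent_set D T" using res_open[OF K(1)] K(2) by blast
    then show False using s unfolding spectrum_op_def by simp
  qed
  then have "1 / K \<le> infdist lam (spectrum_op D T)" by (rule infdist_ge[OF ne])
  moreover have "0 < 1 / K" using K(1) by simp
  ultimately show ?thesis by linarith
qed

lemma dist_far:
  assumes ne: "spectrum_op D T \<noteq> {}"
  shows "cmod lam + 1 \<le> 5 * max (infdist lam (spectrum_op D T)) (cmod (lam + 1))"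
proof -
  have tri: "cmod lam \<le> cmod (lam + 1) + 1" using norm_triangle_ineq4[of "lam + 1" 1] by simp
  show ?thesis
  proof (cases "1/2 \<le> cmod (lam + 1)")
    case True
    then show ?thesis using tri by (simp add: max_def)
  next
    case False
    have "1/2 \<le> dist lam s" if s: "s \<in> spectrum_op D T" for s
    proof -
      have "1 \<le> cmod (s + 1)" by (rule spec_far[OF s])
      also have "cmod (s + 1) \<le> cmod (s - lam) + cmod (lam + 1)" using norm_triangle_ineq[of "s - lam" "lam + 1"] by simp
      finally show ?thesis using False by (simp add: dist_norm norm_minus_commute)
    qed
    then have "1/2 \<le> infdist lam (spectrum_op D T)" by (rule infdist_ge[OF ne])
    then show ?thesis using tri False by (simp add: max_def)
  qed
qed

lemma Sq_scale_all: "Sq (cscale c v) = cscale c (Sq v)"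
proof (cases "v \<in> R")
  case True then show ?thesis by (rule Sq_scale)
next
  case False
  show ?thesis
  proof (cases "c = 0")
    case True
    have "Sq 0 = 0" using Sq_C[of 0] blin_zero[OF C_blin] blin_zero[OF E_blin] by simp
    then show ?thesis using True by simp
  next
    case c: False
    have "cscale c v \<notin> R"
    proof
      assume "cscale c v \<in> R"
      then have "cscale (1 / c) (cscale c v) \<in> R" using csub_scale[OF R_sub] by blast
      then show False using False c by (simp add: cscale_cscale cscale_one)
    qed
    then show ?thesis using False Sq_out by simp
  qed
qed

end


lemma norm_add_sq_le: "(hnorm (p + q))^2 \<le> 2 * (hnorm p)^2 + 2 * (hnorm q)^2"
  using parallelogram[of p q] zero_le_power2[of "hnorm (p - q)"] by linarith

context fset begin

interpretation A: sform X a by (rule closed_form_sform[OF cf])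

lemma Xn_eq: "Xnorm D T v = hnorm (Sq v + v)" by (rule Xnorm_eq)

lemma Xn_scale: "Xnorm D T (cscale c v) = cmod c * Xnorm D T v"
  unfolding Xn_eq Sq_scale_all cscale_add_right[symmetric] hnorm_scale ..

lemma Xn_zero: "Xnorm D T 0 = 0"
  using Xn_scale[of 0 0] by simp

lemma Xn_nonneg: "0 \<le> Xnorm D T v" unfolding Xn_eq by simp

lemma Xn_bd:
  assumes v: "v \<in> X"
  shows "(Xnorm D T v)^2 \<le> 2 * (Re (a v v) + (hnorm v)^2)"
proof -
  have h1: "(hnorm (Sq v + v))^2 \<le> 2 * (hnorm (Sq v))^2 + 2 * (hnorm v)^2" by (rule norm_add_sq_le)
  have h2: "(hnorm (Sq v))^2 \<le> Re (a v v)" by (rule X_bound[OF v])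
  have "(hnorm (Sq v + v))^2 \<le> 2 * Re (a v v) + 2 * (hnorm v)^2" using h1 h2 by linarith
  then show ?thesis unfolding Xn_eq by (simp add: distrib_left)
qed

lemma dual_facts:
  assumes bl: "bdd_lin_fun X (Xnorm D T) Rf"
  shows "0 \<le> dual_norm X (Xnorm D T) Rf" "\<And>v. v \<in> X \<Longrightarrow> cmod (Rf v) \<le> dual_norm X (Xnorm D T) Rf * Xnorm D T v"
proof -
  define N where "N = dual_norm X (Xnorm D T) Rf"
  define S where "S = {cmod (Rf v) | v. v \<in> X \<and> Xnorm D T v \<le> 1}"
  have N_def': "N = Sup S" unfolding N_def S_def dual_norm_def ..
  have Rsc: "\<And>c v. v \<in> X \<Longrightarrow> Rf (cscale c v) = c * Rf v" using bl unfolding bdd_lin_fun_def by blast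
  obtain K where K: "\<And>v. v \<in> X \<Longrightarrow> cmod (Rf v) \<le> K * Xnorm D T v" using bl unfolding bdd_lin_fun_def by blast
  have X0: "0 \<in> X" using A.X0 .
  have R0: "Rf 0 = 0" using Rsc[OF X0, of 0] by simp
  have S0: "0 \<in> S" unfolding S_def using X0 Xn_zero R0 by force
  have Sbdd: "bdd_above S"
  proof (rule bdd_aboveI[of _ "\<bar>K\<bar>"])
    fix s assume "s \<in> S"
    then obtain v where v: "s = cmod (Rf v)" "v \<in> X" "Xnorm D T v \<le> 1" unfolding S_def by auto
    have "cmod (Rf v) \<le> K * Xnorm D T v" using K[OF v(2)] .
    also have "\<dots> \<le> \<bar>K\<bar> * Xnorm D T v" using Xn_nonneg by (intro mult_right_mono) auto
    also have "\<dots> \<le> \<bar>K\<bar> * 1" using v(3) by (intro mult_left_mono) auto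
    finally show "s \<le> \<bar>K\<bar>" using v(1) by simp
  qed
  have inS: "cmod (Rf v) \<le> N" if "v \<in> X" "Xnorm D T v \<le> 1" for v
    unfolding N_def' using that Sbdd by (intro cSup_upper) (auto simp: S_def)
  show N0: "0 \<le> dual_norm X (Xnorm D T) Rf" unfolding N_def[symmetric] N_def' using S0 Sbdd by (rule cSup_upper)
  show "cmod (Rf v) \<le> dual_norm X (Xnorm D T) Rf * Xnorm D T v" if v: "v \<in> X" for v
  proof (cases "Xnorm D T v = 0")
    case True
    have "cmod (Rf v) = 0"
    proof (rule ccontr)
      assume ne: "cmod (Rf v) \<noteq> 0"
      then have pos: "cmod (Rf v) > 0" by simp
      define t where "t = (N + 1) / cmod (Rf v)"
      have "cscale (complex_of_real t) v \<in> X" using A.Xscale[OF v] .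
      moreover have "Xnorm D T (cscale (complex_of_real t) v) \<le> 1" using True by (simp add: Xn_scale)
      ultimately have "cmod (Rf (cscale (complex_of_real t) v)) \<le> N" by (rule inS)
      moreover have "cmod (Rf (cscale (complex_of_real t) v)) = N + 1"
      proof -
        have "cmod (Rf (cscale (complex_of_real t) v)) = \<bar>t\<bar> * cmod (Rf v)" using Rsc[OF v] by (simp add: norm_mult)
        also have "\<bar>t\<bar> = t" unfolding t_def using N0[folded N_def] pos by simp
        finally show ?thesis unfolding t_def using pos by simp
      qed
      ultimately show False by simp
    qed
    then show ?thesis using True by simp
  next
    case False
    then have p: "Xnorm D T v > 0" using Xn_nonneg[of v] by linarith
    define v' where "v' = cscale (complex_of_real (1 / Xnorm D T v)) v"
    have "v' \<in> X" unfolding v'_def using A.Xscale[OF v] .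
    moreover have "Xnorm D T v' = 1" unfolding v'_def Xn_scale norm_of_real using p by simp
    ultimately have "cmod (Rf v') \<le> N" using inS by simp
    moreover have "cmod (Rf v') = cmod (Rf v) / Xnorm D T v" unfolding v'_def using Rsc[OF v] p by (simp add: norm_mult norm_divide)
    ultimately have "cmod (Rf v) / Xnorm D T v \<le> N" by simp
    then show ?thesis unfolding N_def using p by (simp add: divide_le_eq mult.commute)
  qed
qed

lemma main:
  assumes lam: "lam \<in> resolvent_set D T" and bl: "bdd_lin_fun X (Xnorm D T) Rf" and uX: "u \<in> X"
    and eq: "\<forall>v\<in>X. a u v - lam * hinner u v = Rf v"
  shows "Xnorm D T u \<le> 8 * max 1 (cmod (lam + 1) / infdist lam (spectrum_op D T)) * dual_norm X (Xnorm D T) Rf"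
proof -
  define N where "N = dual_norm X (Xnorm D T) Rf"
  define d where "d = infdist lam (spectrum_op D T)"
  define P where "P = max 1 (cmod (lam + 1) / d)"
  have N0: "0 \<le> N" unfolding N_def by (rule dual_facts(1)[OF bl])
  have NB: "\<And>v. v \<in> X \<Longrightarrow> cmod (Rf v) \<le> N * Xnorm D T v" unfolding N_def by (rule dual_facts(2)[OF bl])
  have P1: "1 \<le> P" unfolding P_def by simp
  show ?thesis
  proof (cases "\<exists>x0::'a. x0 \<noteq> 0")
    case False
    then have "Sq u + u = 0" by blast
    then have "Xnorm D T u = 0" unfolding Xn_eq by simp
    moreover have "0 \<le> 8 * P * N" using P1 N0 by simp
    ultimately show ?thesis unfolding P_def d_def N_def by simp
  next
    case True
    then obtain x0 :: 'a where nt: "x0 \<noteq> 0" by blast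
    have ne: "spectrum_op D T \<noteq> {}" by (rule spec_nonempty[OF nt])
    have dp: "0 < d" unfolding d_def by (rule d_pos[OF lam ne])
    obtain z where z: "z \<in> D" "T z - cscale lam z = u" using res_bij[OF lam] by blast
    have zX: "z \<in> X" using z(1) D_X by blast
    have uu: "hinner u u = cnj (Rf z)"
    proof -
      have "hinner u u = hinner (T z) u - cnj lam * hinner z u"
        using z(2)[symmetric] by (simp add: hinner_diff_left hinner_scale_left)
      also have "hinner (T z) u = a z u" using aT[OF z(1) uX] by simp
      also have "a z u = cnj (a u z)" using A.bsym[OF uX zX] .
      also have "hinner z u = cnj (hinner u z)" by (rule hinner_cnj)
      finally have "hinner u u = cnj (a u z - lam * hinner u z)" by simp
      then show ?thesis using eq zX by simp
    qed
    have u_sq: "(hnorm u)^2 \<le> N * Xnorm D T z"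
    proof -
      have "(hnorm u)^2 = cmod (hinner u u)" unfolding hinner_self_hnorm norm_of_real by simp
      also have "\<dots> = cmod (Rf z)" unfolding uu by simp
      also have "\<dots> \<le> N * Xnorm D T z" by (rule NB[OF zX])
      finally show ?thesis .
    qed
    have zu: "d * hnorm z \<le> hnorm u" using dist_bound[OF lam nt z(1)] z(2) unfolding d_def by simp
    have zu': "hnorm z \<le> hnorm u / d" using zu dp by (simp add: field_simps)
    define Phi where "Phi = 1 / d + (cmod lam + 1) / d^2"
    have q_z: "Re (a z z) + (hnorm z)^2 \<le> (hnorm u)^2 * Phi"
    proof -
      have "a z z = hinner (T z) z" using aT[OF z(1) zX] .
      also have "T z = u + cscale lam z" using z(2) by (simp add: algebra_simps)
      finally have "a z z = hinner u z + cnj lam * hinner z z" by (simp add: hinner_add_left hinner_scale_left)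
      then have "Re (a z z) = Re (hinner u z) + Re lam * (hnorm z)^2" by (simp add: hinner_self_hnorm)
      also have "\<dots> \<le> hnorm u * hnorm z + cmod lam * (hnorm z)^2"
      proof -
        have "Re (hinner u z) \<le> hnorm u * hnorm z" by (rule Re_le_norms)
        moreover have "Re lam * (hnorm z)^2 \<le> cmod lam * (hnorm z)^2" using complex_Re_le_cmod[of lam] by (intro mult_right_mono) auto
        ultimately show ?thesis by linarith
      qed
      finally have "Re (a z z) + (hnorm z)^2 \<le> hnorm u * hnorm z + (cmod lam + 1) * (hnorm z)^2" by (simp add: algebra_simps)
      also have "\<dots> \<le> hnorm u * (hnorm u / d) + (cmod lam + 1) * (hnorm u / d)^2"
      proof (rule add_mono)
        show "hnorm u * hnorm z \<le> hnorm u * (hnorm u / d)" using zu' by (intro mult_left_mono) auto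
        show "(cmod lam + 1) * (hnorm z)^2 \<le> (cmod lam + 1) * (hnorm u / d)^2" using zu' by (intro mult_left_mono power_mono) auto
      qed
      also have "\<dots> = (hnorm u)^2 * Phi" unfolding Phi_def using dp by (simp add: power2_eq_square field_simps)
      finally show ?thesis .
    qed
    have Phi0: "0 \<le> Phi" unfolding Phi_def using dp by simp
    have u_bound: "(hnorm u)^2 \<le> 2 * N^2 * Phi"
    proof -
      have "2 * (Re (a z z) + (hnorm z)^2) \<le> 2 * ((hnorm u)^2 * Phi)" using q_z by simp
      then have "(Xnorm D T z)^2 \<le> 2 * ((hnorm u)^2 * Phi)" using Xn_bd[OF zX] by (rule order_trans[rotated])
      have "((hnorm u)^2)^2 \<le> (N * Xnorm D T z)^2" using u_sq by (intro power_mono) auto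
      also have "\<dots> = N^2 * (Xnorm D T z)^2" by (simp add: power_mult_distrib)
      also have "\<dots> \<le> N^2 * (2 * ((hnorm u)^2 * Phi))" using \<open>(Xnorm D T z)^2 \<le> 2 * ((hnorm u)^2 * Phi)\<close> by (intro mult_left_mono) auto
      finally have h: "(hnorm u)^2 * (hnorm u)^2 \<le> (2 * N^2 * Phi) * (hnorm u)^2" by (simp add: power2_eq_square algebra_simps)
      show ?thesis
      proof (cases "hnorm u = 0")
        case True then show ?thesis using Phi0 by simp
      next
        case False then have p: "(hnorm u)^2 > 0" by simp
        show ?thesis using mult_right_le_imp_le[OF h p] .
      qed
    qed
    have far: "cmod lam + 1 \<le> 5 * max d (cmod (lam + 1))" unfolding d_def by (rule dist_far[OF ne])
    have f5: "(cmod lam + 1) / d \<le> 5 * P"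
    proof -
      have "(cmod lam + 1) / d \<le> 5 * max d (cmod (lam + 1)) / d" using far dp by (intro divide_right_mono) auto
      also have "\<dots> = 5 * max 1 (cmod (lam + 1) / d)" using dp by (simp add: max_def field_simps)
      finally show ?thesis unfolding P_def .
    qed
    have fP: "cmod (lam + 1) / d \<le> P" unfolding P_def by simp
    have Phi_b: "cmod (lam + 1) * Phi \<le> 6 * P^2"
    proof -
      have "cmod (lam + 1) * Phi = cmod (lam + 1) / d + (cmod (lam + 1) / d) * ((cmod lam + 1) / d)"
        unfolding Phi_def using dp by (simp add: power2_eq_square field_simps)
      also have "\<dots> \<le> P + P * (5 * P)"
      proof (rule add_mono)
        show "cmod (lam + 1) / d \<le> P" by (rule fP)
        show "(cmod (lam + 1) / d) * ((cmod lam + 1) / d) \<le> P * (5 * P)"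
          using fP f5 dp P1 by (intro mult_mono) auto
      qed
      also have "\<dots> \<le> 6 * P^2" using P1 by (simp add: power2_eq_square algebra_simps)
      finally show ?thesis .
    qed
    define t where "t = Xnorm D T u"
    have t0: "0 \<le> t" unfolding t_def by (rule Xn_nonneg)
    have q_u: "Re (a u u) + (hnorm u)^2 \<le> N * t + cmod (lam + 1) * (hnorm u)^2"
    proof -
      have "Rf u = a u u - lam * hinner u u" using eq uX by simp
      then have "a u u + hinner u u = Rf u + (lam + 1) * hinner u u" by (simp add: algebra_simps)
      then have "Re (a u u) + (hnorm u)^2 = Re (Rf u) + Re ((lam + 1) * complex_of_real ((hnorm u)^2))"
        by (metis Re_complex_of_real hinner_self_hnorm plus_complex.simps(1))
      also have "\<dots> \<le> cmod (Rf u) + cmod (lam + 1) * (hnorm u)^2"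
      proof (rule add_mono)
        show "Re (Rf u) \<le> cmod (Rf u)" by (rule complex_Re_le_cmod)
        have "Re ((lam + 1) * complex_of_real ((hnorm u)^2)) = Re (lam + 1) * (hnorm u)^2" by simp
        also have "\<dots> \<le> cmod (lam + 1) * (hnorm u)^2" using complex_Re_le_cmod[of "lam + 1"] by (intro mult_right_mono) auto
        finally show "Re ((lam + 1) * complex_of_real ((hnorm u)^2)) \<le> cmod (lam + 1) * (hnorm u)^2" .
      qed
      also have "cmod (Rf u) \<le> N * t" unfolding t_def by (rule NB[OF uX])
      finally show ?thesis by simp
    qed
    have t_sq: "t^2 \<le> 2 * N * t + 24 * (N * P)^2"
    proof -
      have "t^2 \<le> 2 * (Re (a u u) + (hnorm u)^2)" unfolding t_def by (rule Xn_bd[OF uX])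
      also have "\<dots> \<le> 2 * (N * t + cmod (lam + 1) * (hnorm u)^2)" using q_u by simp
      also have "cmod (lam + 1) * (hnorm u)^2 \<le> cmod (lam + 1) * (2 * N^2 * Phi)" using u_bound by (intro mult_left_mono) auto
      also have "\<dots> = 2 * N^2 * (cmod (lam + 1) * Phi)" by simp
      also have "\<dots> \<le> 2 * N^2 * (6 * P^2)" using Phi_b by (intro mult_left_mono) auto
      finally show ?thesis by (simp add: power_mult_distrib algebra_simps)
    qed
    have NP: "0 \<le> N * P" using N0 P1 by simp
    have NNP: "N \<le> N * P" using mult_left_mono[OF P1 N0] by simp
    have "t \<le> 8 * (N * P)"
    proof (rule ccontr)
      assume "\<not> t \<le> 8 * (N * P)"
      then have lt: "8 * (N * P) < t" by simp
      then have tp: "0 < t" using NP by linarith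
      have a1: "2 * N * t \<le> 2 * (N * P) * t" using NNP t0 by (intro mult_right_mono) auto
      have a2: "2 * (N * P) * t \<le> t * t / 4" using lt tp by (simp add: field_simps)
      have a3: "(N * P)^2 \<le> (t / 8)^2" using lt NP by (intro power_mono) auto
      have "t^2 \<le> t * t / 4 + 24 * (t / 8)^2" using t_sq a1 a2 a3 by linarith
      then have "t * t \<le> (5 / 8) * (t * t)" by (simp add: power2_eq_square field_simps)
      then show False using tp by (simp add: mult_le_cancel_right_pos)
    qed
    then show ?thesis unfolding t_def P_def d_def N_def by (simp add: mult.assoc mult.commute)
  qed
qed

end

theorem propositionD2:
  shows "\<exists>C>0. \<forall>X a D T lam R (u::'a::chilbert).
    closed_form X a \<and> assoc_op X a D T \<and> self_adjoint D T \<and> nonneg_op D T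
    \<and> lam \<in> resolvent_set D T \<and> bdd_lin_fun X (Xnorm D T) R \<and> u \<in> X
    \<and> (\<forall>v\<in>X. a u v - lam * hinner u v = R v)
    \<longrightarrow> Xnorm D T u \<le> C * max 1 (cmod (lam + 1) / infdist lam (spectrum_op D T)) * dual_norm X (Xnorm D T) R"
proof (intro exI[of _ 8] conjI allI impI)
  show "(0::real) < 8" by simp
  fix X a D T lam R and u :: 'a
  assume h: "closed_form X a \<and> assoc_op X a D T \<and> self_adjoint D T \<and> nonneg_op D T
    \<and> lam \<in> resolvent_set D T \<and> bdd_lin_fun X (Xnorm D T) R \<and> u \<in> X
    \<and> (\<forall>v\<in>X. a u v - lam * hinner u v = R v)"
  then have f: "fset D T X a" by unfold_locales auto
  show "Xnorm D T u \<le> 8 * max 1 (cmod (lam + 1) / infdist lam (spectrum_op D T)) * dual_norm X (Xnorm D T) R"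
    using fset.main[OF f] h by blast
qed


end
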